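(* Any sentence provable in $\mathit{HT}_{\#}$ can be derived in $\mathit{HT}_{\#2}^{\omega}$ from the axioms $D_0$.
   Context: $\sigma_2$ is the two-sorted signature (general, integer) with numerals, other precomputed terms (totally ordered, numerals contiguous), integer arithmetic, predicates $p/n$, comparisons, and predicate constants $\mathit{Atleast}^{\mathbf{X};\mathbf{V}}_F$, $\mathit{Atmost}^{\mathbf{X};\mathbf{V}}_F$, $\mathit{Start}^{\mathbf{X};\mathbf{V}}_F$. $D_0$: $\forall\mathbf{X}\mathbf{V}N(N\leq\overline 0\to\mathit{Start}^{\mathbf{X};\mathbf{V}}_F(\mathbf{X},\mathbf{V},N))$, $\forall\mathbf{X}\mathbf{V}(\mathit{Start}^{\mathbf{X};\mathbf{V}}_F(\mathbf{X},\mathbf{V},\overline 1)\leftrightarrow F)$, $\forall\mathbf{X}\mathbf{V}N(N>\overline 0\to(\mathit{Start}^{\mathbf{X};\mathbf{V}}_F(\mathbf{X},\mathbf{V},N+\overline 1)\leftrightarrow F\land\exists\mathbf{U}(\mathbf{X}<\mathbf{U}\land\mathit{Start}^{\mathbf{X};\mathbf{V}}_F(\mathbf{U},\mathbf{V},N))))$ ($<$ lexicographic). $D_1$: universal closures of $\mathit{Atleast}^{\mathbf{X};\mathbf{V}}_F(\mathbf{V},Y)\leftrightarrow\exists\mathbf{X}N(\mathit{Start}^{\mathbf{X};\mathbf{V}}_F(\mathbf{X},\mathbf{V},N)\land N\geq Y)$ and $\mathit{Atmost}^{\mathbf{X};\mathbf{V}}_F(\mathbf{V},Y)\leftrightarrow\forall\mathbf{X}N(\mathit{Start}^{\mathbf{X};\mathbf{V}}_F(\mathbf{X},\mathbf{V},N)\to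 N\leq Y)$. $\mathit{HT}_{\#}$ is first-order intuitionistic logic over $\sigma_2$ plus $F\lor(F\to G)\lor\neg G$, $\exists X(F\to\forall XF)$, Std (sentences without $p/n$ and without Atleast/Atmost/Start true in the standard interpretation), Ind (induction over nonnegative integers), $D_0$, $D_1$. $\mathit{HT}_{\#2}^{\omega}$ is intuitionistic natural deduction over $\sigma_2$ extended by $F\lor(F\to G)\lor\neg G$, $\exists X(F\to\forall XF)$, Std, Defs (the sentences $\forall\mathbf{V}(\mathit{Atleast}^{\mathbf{X};\mathbf{V}}_F(\mathbf{V},r)\leftrightarrow\exists_{\geq r}\mathbf{X}F)$, $\forall\mathbf{V}(\mathit{Atmost}^{\mathbf{X};\mathbf{V}}_F(\mathbf{V},r)\leftrightarrow\exists_{\leq r}\mathbf{X}F)$ for each precomputed term $r$, with $\exists_{\geq r}$/$\exists_{\leq r}$ the first-order "at least/at most $r$ values" expansions) and the $\omega$-rules (infer $\Gamma\Rightarrow\forall XF$ from $\Gamma\Rightarrow F^X_t$ for all precomputed $t$; infer $\Gamma\Rightarrow\forall NF$ from $\Gamma\Rightarrow F^N_{\overline n}$ for all integers $n$). *)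

theory Defs
  imports Main
begin

datatype sort = General | Integer

datatype var = Vr sort nat

fun sortof :: "var \<Rightarrow> sort" where
  "sortof (Vr s n) = s"

text \<open>Precomputed terms: inf, numerals, symbolic constants, sup.
  Total order: Inf < numerals (by value) < symbolic constants (by index) < Sup.\<close>
datatype pc = Inf | Num int | Sym nat | Sup

fun pc_rank :: "pc \<Rightarrow> nat" where
  "pc_rank Inf = 0" | "pc_rank (Num n) = 1" | "pc_rank (Sym n) = 2" | "pc_rank Sup = 3"

fun pc_less :: "pc \<Rightarrow> pc \<Rightarrow> bool" where
  "pc_less (Num m) (Num n) = (m < n)"
| "pc_less (Sym m) (Sym n) = (m < n)"
| "pc_less a b = (pc_rank a < pc_rank b)"

datatype tm = Var var | Pc pc | Add tm tm | Sub tm tm | Mul tm tm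

datatype cmp = Eq | Ne | Lt | Gt | Le | Ge

datatype aggk = Atleast | Atmost | Start

text \<open>\<open>Agg k X V F ts\<close> is the predicate constant \<open>k^{X;V}_F\<close> applied to the
  argument tuple \<open>ts\<close>.\<close>
datatype fm =
    Bot
  | Pred string "tm list"
  | Cmp cmp tm tm
  | And fm fm
  | Or fm fm
  | Imp fm fm
  | Ex var fm
  | All var fm
  | Agg aggk "var list" "var list" fm "tm list"

definition Neg :: "fm \<Rightarrow> fm" where "Neg F = Imp F Bot"
definition Top :: fm where "Top = Imp Bot Bot"
definition Iff :: "fm \<Rightarrow> fm \<Rightarrow> fm" where "Iff F G = And (Imp F G) (Imp G F)"

definition AllL :: "var list \<Rightarrow> fm \<Rightarrow> fm" where "AllL xs F = foldr All xs F"
definition ExL :: "var list \<Rightarrow> fm \<Rightarrow> fm" where "ExL xs F = foldr Ex xs F"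
definition Conj :: "fm list \<Rightarrow> fm" where "Conj Fs = foldr And Fs Top"
definition Disj :: "fm list \<Rightarrow> fm" where "Disj Fs = foldr Or Fs Bot"

section \<open>Variables, substitution, well-formedness\<close>

fun fvt :: "tm \<Rightarrow> var set" where
  "fvt (Var x) = {x}"
| "fvt (Pc p) = {}"
| "fvt (Add a b) = fvt a \<union> fvt b"
| "fvt (Sub a b) = fvt a \<union> fvt b"
| "fvt (Mul a b) = fvt a \<union> fvt b"

text \<open>Free variables; a predicate constant \<open>k^{X;V}_F\<close> is a symbol, so only its
  arguments contribute.\<close>
fun fv :: "fm \<Rightarrow> var set" where
  "fv Bot = {}"
| "fv (Pred p ts) = (\<Union>t\<in>set ts. fvt t)"
| "fv (Cmp c a b) = fvt a \<union> fvt b"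
| "fv (And F G) = fv F \<union> fv G"
| "fv (Or F G) = fv F \<union> fv G"
| "fv (Imp F G) = fv F \<union> fv G"
| "fv (Ex x F) = fv F - {x}"
| "fv (All x F) = fv F - {x}"
| "fv (Agg k X V F ts) = (\<Union>t\<in>set ts. fvt t)"

text \<open>All variables occurring (free or bound) in a formula, outside subscripts.\<close>
fun allvars :: "fm \<Rightarrow> var set" where
  "allvars Bot = {}"
| "allvars (Pred p ts) = (\<Union>t\<in>set ts. fvt t)"
| "allvars (Cmp c a b) = fvt a \<union> fvt b"
| "allvars (And F G) = allvars F \<union> allvars G"
| "allvars (Or F G) = allvars F \<union> allvars G"
| "allvars (Imp F G) = allvars F \<union> allvars G"
| "allvars (Ex x F) = insert x (allvars F)"
| "allvars (All x F) = insert x (allvars F)"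
| "allvars (Agg k X V F ts) = (\<Union>t\<in>set ts. fvt t)"

fun substt :: "var \<Rightarrow> tm \<Rightarrow> tm \<Rightarrow> tm" where
  "substt x t (Var y) = (if y = x then t else Var y)"
| "substt x t (Pc p) = Pc p"
| "substt x t (Add a b) = Add (substt x t a) (substt x t b)"
| "substt x t (Sub a b) = Sub (substt x t a) (substt x t b)"
| "substt x t (Mul a b) = Mul (substt x t a) (substt x t b)"

text \<open>\<open>subst x t F\<close> is \<open>F^x_t\<close> (replacing free occurrences; used only when
  \<open>t\<close> is free for \<open>x\<close> in \<open>F\<close>).\<close>
fun subst :: "var \<Rightarrow> tm \<Rightarrow> fm \<Rightarrow> fm" where
  "subst x t Bot = Bot"
| "subst x t (Pred p ts) = Pred p (map (substt x t) ts)"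
| "subst x t (Cmp c a b) = Cmp c (substt x t a) (substt x t b)"
| "subst x t (And F G) = And (subst x t F) (subst x t G)"
| "subst x t (Or F G) = Or (subst x t F) (subst x t G)"
| "subst x t (Imp F G) = Imp (subst x t F) (subst x t G)"
| "subst x t (Ex y F) = (if y = x then Ex y F else Ex y (subst x t F))"
| "subst x t (All y F) = (if y = x then All y F else All y (subst x t F))"
| "subst x t (Agg k X V F ts) = Agg k X V F (map (substt x t) ts)"

fun free_for :: "tm \<Rightarrow> var \<Rightarrow> fm \<Rightarrow> bool" where
  "free_for t x (And F G) = (free_for t x F \<and> free_for t x G)"
| "free_for t x (Or F G) = (free_for t x F \<and> free_for t x G)"
| "free_for t x (Imp F G) = (free_for t x F \<and> free_for t x G)"
| "free_for t x (Ex y F) = (x \<notin> fv (Ex y F) \<or> (y \<notin> fvt t \<and> free_for t x F))"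
| "free_for t x (All y F) = (x \<notin> fv (All y F) \<or> (y \<notin> fvt t \<and> free_for t x F))"
| "free_for t x _ = True"

definition rename :: "var list \<Rightarrow> var list \<Rightarrow> fm \<Rightarrow> fm" where
  "rename xs ys F = foldl (\<lambda>G (x, y). subst x (Var y) G) F (zip xs ys)"

fun int_tm :: "tm \<Rightarrow> bool" where
  "int_tm (Var x) = (sortof x = Integer)"
| "int_tm (Pc p) = (\<exists>n. p = Num n)"
| "int_tm (Add a b) = (int_tm a \<and> int_tm b)"
| "int_tm (Sub a b) = (int_tm a \<and> int_tm b)"
| "int_tm (Mul a b) = (int_tm a \<and> int_tm b)"

fun gen_tm :: "tm \<Rightarrow> bool" where
  "gen_tm (Var x) = True"
| "gen_tm (Pc p) = True"
| "gen_tm t = int_tm t"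

fun has_sort :: "tm \<Rightarrow> sort \<Rightarrow> bool" where
  "has_sort t General = gen_tm t"
| "has_sort t Integer = int_tm t"

fun arg_sorts :: "aggk \<Rightarrow> var list \<Rightarrow> var list \<Rightarrow> sort list" where
  "arg_sorts Start X V = map sortof (X @ V) @ [Integer]"
| "arg_sorts k X V = map sortof V @ [General]"

fun wf :: "fm \<Rightarrow> bool" where
  "wf Bot = True"
| "wf (Pred p ts) = (\<forall>t\<in>set ts. gen_tm t)"
| "wf (Cmp c a b) = (gen_tm a \<and> gen_tm b)"
| "wf (And F G) = (wf F \<and> wf G)"
| "wf (Or F G) = (wf F \<and> wf G)"
| "wf (Imp F G) = (wf F \<and> wf G)"
| "wf (Ex x F) = wf F"
| "wf (All x F) = wf F"
| "wf (Agg k X V F ts) = (distinct (X @ V) \<and> wf F \<and> fv F \<subseteq> set (X @ V)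
      \<and> list_all2 has_sort ts (arg_sorts k X V))"

definition agg_ok :: "var list \<Rightarrow> var list \<Rightarrow> fm \<Rightarrow> bool" where
  "agg_ok X V F = (distinct (X @ V) \<and> wf F \<and> fv F \<subseteq> set (X @ V))"

section \<open>Standard interpretation\<close>

fun ev :: "(var \<Rightarrow> pc) \<Rightarrow> tm \<Rightarrow> pc" where
  "ev e (Var x) = e x"
| "ev e (Pc p) = p"
| "ev e (Add a b) = (case (ev e a, ev e b) of (Num m, Num n) \<Rightarrow> Num (m + n) | _ \<Rightarrow> Inf)"
| "ev e (Sub a b) = (case (ev e a, ev e b) of (Num m, Num n) \<Rightarrow> Num (m - n) | _ \<Rightarrow> Inf)"
| "ev e (Mul a b) = (case (ev e a, ev e b) of (Num m, Num n) \<Rightarrow> Num (m * n) | _ \<Rightarrow> Inf)"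

fun cmp_sem :: "cmp \<Rightarrow> pc \<Rightarrow> pc \<Rightarrow> bool" where
  "cmp_sem Eq a b = (a = b)"
| "cmp_sem Ne a b = (a \<noteq> b)"
| "cmp_sem Lt a b = pc_less a b"
| "cmp_sem Gt a b = pc_less b a"
| "cmp_sem Le a b = (pc_less a b \<or> a = b)"
| "cmp_sem Ge a b = (pc_less b a \<or> a = b)"

fun dom_of :: "sort \<Rightarrow> pc set" where
  "dom_of General = UNIV"
| "dom_of Integer = range Num"

text \<open>Truth in the standard interpretation (used only for formulas without
  p/n and without predicate constants).\<close>
fun holds :: "(var \<Rightarrow> pc) \<Rightarrow> fm \<Rightarrow> bool" where
  "holds e Bot = False"
| "holds e (Pred p ts) = False"
| "holds e (Cmp c a b) = cmp_sem c (ev e a) (ev e b)"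
| "holds e (And F G) = (holds e F \<and> holds e G)"
| "holds e (Or F G) = (holds e F \<or> holds e G)"
| "holds e (Imp F G) = (holds e F \<longrightarrow> holds e G)"
| "holds e (Ex x F) = (\<exists>d\<in>dom_of (sortof x). holds (e(x := d)) F)"
| "holds e (All x F) = (\<forall>d\<in>dom_of (sortof x). holds (e(x := d)) F)"
| "holds e (Agg k X V F ts) = False"

fun arith_only :: "fm \<Rightarrow> bool" where
  "arith_only Bot = True"
| "arith_only (Pred p ts) = False"
| "arith_only (Cmp c a b) = True"
| "arith_only (And F G) = (arith_only F \<and> arith_only G)"
| "arith_only (Or F G) = (arith_only F \<and> arith_only G)"
| "arith_only (Imp F G) = (arith_only F \<and> arith_only G)"
| "arith_only (Ex x F) = arith_only F"
| "arith_only (All x F) = arith_only F"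
| "arith_only (Agg k X V F ts) = False"

section \<open>Axiom sets\<close>

definition HTax :: "fm set" where
  "HTax = {Or F (Or (Imp F G) (Neg G)) | F G. wf F \<and> wf G}
        \<union> {Ex x (Imp F (All x F)) | x F. wf F}"

definition Std :: "fm set" where
  "Std = {F. wf F \<and> fv F = {} \<and> arith_only F \<and> holds (\<lambda>_. Num 0) F}"

definition Ind :: "fm set" where
  "Ind = {Imp (And (subst N (Pc (Num 0)) F)
                   (All N (Imp (And (Cmp Ge (Var N) (Pc (Num 0))) F)
                               (subst N (Add (Var N) (Pc (Num 1))) F))))
              (All N (Imp (Cmp Ge (Var N) (Pc (Num 0))) F))
          | N F. sortof N = Integer \<and> wf F}"

fun lexless :: "var list \<Rightarrow> var list \<Rightarrow> fm" where
  "lexless (x # xs) (u # us) =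
     Or (Cmp Lt (Var x) (Var u)) (And (Cmp Eq (Var x) (Var u)) (lexless xs us))"
| "lexless _ _ = Bot"

definition StartA :: "var list \<Rightarrow> var list \<Rightarrow> fm \<Rightarrow> var list \<Rightarrow> tm \<Rightarrow> fm" where
  "StartA X V F Us n = Agg Start X V F (map Var Us @ map Var V @ [n])"

definition D0_ok :: "var list \<Rightarrow> var list \<Rightarrow> fm \<Rightarrow> var \<Rightarrow> var list \<Rightarrow> bool" where
  "D0_ok X V F N U = (agg_ok X V F \<and> sortof N = Integer \<and> N \<notin> set (X @ V)
     \<and> map sortof U = map sortof X \<and> distinct U \<and> set U \<inter> set (X @ V @ [N]) = {})"

definition D0 :: "fm set" where
  "D0 = {AllL (X @ V @ [N]) (Imp (Cmp Le (Var N) (Pc (Num 0))) (StartA X V F X (Var N)))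
          | X V F N U. D0_ok X V F N U}
      \<union> {AllL (X @ V) (Iff (StartA X V F X (Pc (Num 1))) F) | X V F N U. D0_ok X V F N U}
      \<union> {AllL (X @ V @ [N]) (Imp (Cmp Gt (Var N) (Pc (Num 0)))
            (Iff (StartA X V F X (Add (Var N) (Pc (Num 1))))
                 (And F (ExL U (And (lexless X U) (StartA X V F U (Var N)))))))
          | X V F N U. D0_ok X V F N U}"

definition D1_ok :: "var list \<Rightarrow> var list \<Rightarrow> fm \<Rightarrow> var \<Rightarrow> var \<Rightarrow> bool" where
  "D1_ok X V F Y N = (agg_ok X V F \<and> sortof Y = General \<and> Y \<notin> set (X @ V)
     \<and> sortof N = Integer \<and> N \<notin> set (X @ V @ [Y]))"

definition D1 :: "fm set" where
  "D1 = {AllL (V @ [Y]) (Iff (Agg Atleast X V F (map Var (V @ [Y])))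
            (ExL (X @ [N]) (And (StartA X V F X (Var N)) (Cmp Ge (Var N) (Var Y)))))
          | X V F Y N. D1_ok X V F Y N}
      \<union> {AllL (V @ [Y]) (Iff (Agg Atmost X V F (map Var (V @ [Y])))
            (AllL (X @ [N]) (Imp (StartA X V F X (Var N)) (Cmp Le (Var N) (Var Y)))))
          | X V F Y N. D1_ok X V F Y N}"

text \<open>Counting expansions \<open>\<exists>_{\<ge> r} X F\<close> and \<open>\<exists>_{\<le> r} X F\<close>, using a list \<open>Ys\<close>
  of fresh copies of the tuple \<open>X\<close>.\<close>
definition pairs :: "'a list \<Rightarrow> ('a \<times> 'a) list" where
  "pairs xs = [(xs ! i, xs ! j). i \<leftarrow> [0..<length xs], j \<leftarrow> [Suc i..<length xs]]"

definition tup_eq :: "var list \<Rightarrow> var list \<Rightarrow> fm" where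
  "tup_eq ys zs = Conj (map (\<lambda>(y, z). Cmp Eq (Var y) (Var z)) (zip ys zs))"

definition tup_ne :: "var list \<Rightarrow> var list \<Rightarrow> fm" where
  "tup_ne ys zs = Disj (map (\<lambda>(y, z). Cmp Ne (Var y) (Var z)) (zip ys zs))"

definition copies_ok :: "var list \<Rightarrow> var list \<Rightarrow> fm \<Rightarrow> var list list \<Rightarrow> nat \<Rightarrow> bool" where
  "copies_ok X V F Ys n = (length Ys = n \<and> (\<forall>Y\<in>set Ys. map sortof Y = map sortof X)
     \<and> distinct (concat Ys) \<and> set (concat Ys) \<inter> (set X \<union> set V \<union> allvars F) = {})"

fun cnt_ge :: "pc \<Rightarrow> nat" where
  "cnt_ge (Num n) = nat n" | "cnt_ge _ = 0"

fun cnt_le :: "pc \<Rightarrow> nat" where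
  "cnt_le (Num n) = nat (n + 1)" | "cnt_le _ = 0"

fun exists_ge :: "var list \<Rightarrow> fm \<Rightarrow> var list list \<Rightarrow> pc \<Rightarrow> fm" where
  "exists_ge X F Ys (Num n) =
     (if n \<le> 0 then Top
      else ExL (concat Ys) (And (Conj (map (\<lambda>Y. rename X Y F) Ys))
                                (Conj (map (\<lambda>(Y, Z). tup_ne Y Z) (pairs Ys)))))"
| "exists_ge X F Ys Inf = Top"
| "exists_ge X F Ys (Sym c) = Bot"
| "exists_ge X F Ys Sup = Bot"

fun exists_le :: "var list \<Rightarrow> fm \<Rightarrow> var list list \<Rightarrow> pc \<Rightarrow> fm" where
  "exists_le X F Ys (Num n) =
     (if n < 0 then Bot
      else AllL (concat Ys) (Imp (Conj (map (\<lambda>Y. rename X Y F) Ys))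
                                 (Disj (map (\<lambda>(Y, Z). tup_eq Y Z) (pairs Ys)))))"
| "exists_le X F Ys Inf = Bot"
| "exists_le X F Ys (Sym c) = Top"
| "exists_le X F Ys Sup = Top"

definition Defs_ax :: "fm set" where
  "Defs_ax = {AllL V (Iff (Agg Atleast X V F (map Var V @ [Pc r])) (exists_ge X F Ys r))
              | X V F r Ys. agg_ok X V F \<and> copies_ok X V F Ys (cnt_ge r)}
           \<union> {AllL V (Iff (Agg Atmost X V F (map Var V @ [Pc r])) (exists_le X F Ys r))
              | X V F r Ys. agg_ok X V F \<and> copies_ok X V F Ys (cnt_le r)}"

section \<open>Intuitionistic natural deduction, optionally with omega-rules\<close>

inductive nd :: "bool \<Rightarrow> fm set \<Rightarrow> fm set \<Rightarrow> fm \<Rightarrow> bool" for om :: bool and Ax :: "fm set" where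
  axiom: "F \<in> Ax \<Longrightarrow> nd om Ax \<Gamma> F"
| hyp: "F \<in> \<Gamma> \<Longrightarrow> nd om Ax \<Gamma> F"
| andI: "nd om Ax \<Gamma> F \<Longrightarrow> nd om Ax \<Gamma> G \<Longrightarrow> nd om Ax \<Gamma> (And F G)"
| andE1: "nd om Ax \<Gamma> (And F G) \<Longrightarrow> nd om Ax \<Gamma> F"
| andE2: "nd om Ax \<Gamma> (And F G) \<Longrightarrow> nd om Ax \<Gamma> G"
| orI1: "nd om Ax \<Gamma> F \<Longrightarrow> wf G \<Longrightarrow> nd om Ax \<Gamma> (Or F G)"
| orI2: "nd om Ax \<Gamma> G \<Longrightarrow> wf F \<Longrightarrow> nd om Ax \<Gamma> (Or F G)"
| orE: "nd om Ax \<Gamma> (Or F G) \<Longrightarrow> nd om Ax (insert F \<Gamma>) H \<Longrightarrow> nd om Ax (insert G \<Gamma>) H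
        \<Longrightarrow> nd om Ax \<Gamma> H"
| impI: "nd om Ax (insert F \<Gamma>) G \<Longrightarrow> wf F \<Longrightarrow> nd om Ax \<Gamma> (Imp F G)"
| impE: "nd om Ax \<Gamma> (Imp F G) \<Longrightarrow> nd om Ax \<Gamma> F \<Longrightarrow> nd om Ax \<Gamma> G"
| botE: "nd om Ax \<Gamma> Bot \<Longrightarrow> wf F \<Longrightarrow> nd om Ax \<Gamma> F"
| allI: "nd om Ax \<Gamma> F \<Longrightarrow> x \<notin> (\<Union>G\<in>\<Gamma>. fv G) \<Longrightarrow> nd om Ax \<Gamma> (All x F)"
| allE: "nd om Ax \<Gamma> (All x F) \<Longrightarrow> has_sort t (sortof x) \<Longrightarrow> free_for t x F
        \<Longrightarrow> nd om Ax \<Gamma> (subst x t F)"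
| exI: "nd om Ax \<Gamma> (subst x t F) \<Longrightarrow> has_sort t (sortof x) \<Longrightarrow> free_for t x F \<Longrightarrow> wf F
        \<Longrightarrow> nd om Ax \<Gamma> (Ex x F)"
| exE: "nd om Ax \<Gamma> (Ex x F) \<Longrightarrow> nd om Ax (insert F \<Gamma>) G \<Longrightarrow> x \<notin> fv G
        \<Longrightarrow> x \<notin> (\<Union>H\<in>\<Gamma>. fv H) \<Longrightarrow> nd om Ax \<Gamma> G"
| eqI: "gen_tm t \<Longrightarrow> nd om Ax \<Gamma> (Cmp Eq t t)"
| eqE: "nd om Ax \<Gamma> (Cmp Eq s t) \<Longrightarrow> nd om Ax \<Gamma> (subst x s F)
        \<Longrightarrow> has_sort s (sortof x) \<Longrightarrow> has_sort t (sortof x)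
        \<Longrightarrow> free_for s x F \<Longrightarrow> free_for t x F \<Longrightarrow> nd om Ax \<Gamma> (subst x t F)"
| omega: "om \<Longrightarrow> wf F \<Longrightarrow> (\<And>p. p \<in> dom_of (sortof x) \<Longrightarrow> nd om Ax \<Gamma> (subst x (Pc p) F))
        \<Longrightarrow> nd om Ax \<Gamma> (All x F)"

definition HT_sharp :: "fm \<Rightarrow> bool" where
  "HT_sharp F = nd False (HTax \<union> Std \<union> Ind \<union> D0 \<union> D1) {} F"

definition HT_sharp2_omega_from :: "fm set \<Rightarrow> fm \<Rightarrow> bool" where
  "HT_sharp2_omega_from Hs F = nd True (HTax \<union> Std \<union> Defs_ax \<union> Hs) {} F"

definition sentence :: "fm \<Rightarrow> bool" where
  "sentence F = (wf F \<and> fv F = {})"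

end

theory Submission
  imports Defs
begin

fun tsub :: "(var \<Rightarrow> tm) \<Rightarrow> tm \<Rightarrow> tm" where
  "tsub s (Var x) = s x"
| "tsub s (Pc p) = Pc p"
| "tsub s (Add a b) = Add (tsub s a) (tsub s b)"
| "tsub s (Sub a b) = Sub (tsub s a) (tsub s b)"
| "tsub s (Mul a b) = Mul (tsub s a) (tsub s b)"

fun fsub :: "(var \<Rightarrow> tm) \<Rightarrow> fm \<Rightarrow> fm" where
  "fsub s Bot = Bot"
| "fsub s (Pred p ts) = Pred p (map (tsub s) ts)"
| "fsub s (Cmp c a b) = Cmp c (tsub s a) (tsub s b)"
| "fsub s (And F G) = And (fsub s F) (fsub s G)"
| "fsub s (Or F G) = Or (fsub s F) (fsub s G)"
| "fsub s (Imp F G) = Imp (fsub s F) (fsub s G)"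
| "fsub s (Ex x F) = Ex x (fsub (s(x := Var x)) F)"
| "fsub s (All x F) = All x (fsub (s(x := Var x)) F)"
| "fsub s (Agg k X V F ts) = Agg k X V F (map (tsub s) ts)"

definition good :: "(var \<Rightarrow> tm) \<Rightarrow> bool" where
  "good s = (\<forall>z. s z = Var z \<or> fvt (s z) = {})"

definition sgood :: "(var \<Rightarrow> tm) \<Rightarrow> bool" where
  "sgood s = (\<forall>z. has_sort (s z) (sortof z))"

definition gnd :: "(var \<Rightarrow> tm) \<Rightarrow> bool" where
  "gnd s = (\<forall>z. fvt (s z) = {} \<and> has_sort (s z) (sortof z))"

lemma tsub_cong: "(\<And>z. z \<in> fvt t \<Longrightarrow> s z = s' z) \<Longrightarrow> tsub s t = tsub s' t"
  by (induction t) auto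

lemma fsub_cong: "(\<And>z. z \<in> fv F \<Longrightarrow> s z = s' z) \<Longrightarrow> fsub s F = fsub s' F"
proof (induction F arbitrary: s s')
  case (Pred p ts)
  have "map (tsub s) ts = map (tsub s') ts"
    by (rule map_cong[OF refl], rule tsub_cong) (use Pred in auto)
  then show ?case by simp
next
  case (Cmp c a b)
  have "tsub s a = tsub s' a" "tsub s b = tsub s' b"
    by (rule tsub_cong; use Cmp in auto)+
  then show ?case by simp
next
  case (Ex x F)
  have "fsub (s(x := Var x)) F = fsub (s'(x := Var x)) F"
    by (rule Ex.IH) (use Ex.prems in auto)
  then show ?case by simp
next
  case (All x F)
  have "fsub (s(x := Var x)) F = fsub (s'(x := Var x)) F"
    by (rule All.IH) (use All.prems in auto)
  then show ?case by simp
next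
  case (Agg k X V F ts)
  have "map (tsub s) ts = map (tsub s') ts"
    by (rule map_cong[OF refl], rule tsub_cong) (use Agg in auto)
  then show ?case by simp
next
  case (And F G)
  have "fsub s F = fsub s' F" by (rule And.IH(1)) (use And.prems in auto)
  moreover have "fsub s G = fsub s' G" by (rule And.IH(2)) (use And.prems in auto)
  ultimately show ?case by simp
next
  case (Or F G)
  have "fsub s F = fsub s' F" by (rule Or.IH(1)) (use Or.prems in auto)
  moreover have "fsub s G = fsub s' G" by (rule Or.IH(2)) (use Or.prems in auto)
  ultimately show ?case by simp
next
  case (Imp F G)
  have "fsub s F = fsub s' F" by (rule Imp.IH(1)) (use Imp.prems in auto)
  moreover have "fsub s G = fsub s' G" by (rule Imp.IH(2)) (use Imp.prems in auto)
  ultimately show ?case by simp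
qed simp

lemma tsub_Var: "tsub Var t = t" by (induction t) auto

lemma fsub_Var: "fsub Var F = F"
proof (induction F)
qed (auto simp: tsub_Var map_idI fun_upd_idem)

lemma fsub_id: "(\<And>z. z \<in> fv F \<Longrightarrow> s z = Var z) \<Longrightarrow> fsub s F = F"
  using fsub_cong[of F s Var] fsub_Var by metis

lemma substt_tsub: "substt x t u = tsub (Var(x := t)) u"
  by (induction u) auto

lemma substt_fun: "substt x t = tsub (Var(x := t))"
  by (rule ext) (rule substt_tsub)

lemma upd_lem1: "(Var(x := t))(x := Var x) = Var"
  by (rule ext) auto

lemma upd_lem2: "y \<noteq> x \<Longrightarrow> (Var(x := t))(y := Var y) = Var(x := t)"
  by (rule ext) auto

lemma subst_fsub: "subst x t F = fsub (Var(x := t)) F"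
proof (induction F)
  case (Ex y F) show ?case
  proof (cases "y = x")
    case True
    have "fsub (Var(x := t)) (Ex x F) = Ex x (fsub ((Var(x := t))(x := Var x)) F)"
      by (simp only: fsub.simps)
    also have "... = Ex x F" by (simp only: upd_lem1 fsub_Var)
    finally have calc: "fsub (Var(x := t)) (Ex x F) = Ex x F" .
    show ?thesis unfolding True by (simp only: subst.simps if_True simp_thms(6) calc)
  next
    case False
    have "fsub (Var(x := t)) (Ex y F) = Ex y (fsub ((Var(x := t))(y := Var y)) F)"
      by (simp only: fsub.simps)
    also have "... = Ex y (fsub (Var(x := t)) F)" by (simp only: upd_lem2[OF False])
    finally have calc2: "fsub (Var(x := t)) (Ex y F) = Ex y (fsub (Var(x := t)) F)" .
    show ?thesis by (simp only: subst.simps False if_False calc2 Ex.IH)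
  qed
next
  case (All y F) show ?case
  proof (cases "y = x")
    case True
    have "fsub (Var(x := t)) (All x F) = All x (fsub ((Var(x := t))(x := Var x)) F)"
      by (simp only: fsub.simps)
    also have "... = All x F" by (simp only: upd_lem1 fsub_Var)
    finally have calc: "fsub (Var(x := t)) (All x F) = All x F" .
    show ?thesis unfolding True by (simp only: subst.simps if_True simp_thms(6) calc)
  next
    case False
    have "fsub (Var(x := t)) (All y F) = All y (fsub ((Var(x := t))(y := Var y)) F)"
      by (simp only: fsub.simps)
    also have "... = All y (fsub (Var(x := t)) F)" by (simp only: upd_lem2[OF False])
    finally have calc2: "fsub (Var(x := t)) (All y F) = All y (fsub (Var(x := t)) F)" .
    show ?thesis by (simp only: subst.simps False if_False calc2 All.IH)
  qed
qed (simp_all only: subst.simps fsub.simps substt_fun)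

lemma fvt_tsub: "fvt (tsub s t) = (\<Union>z\<in>fvt t. fvt (s z))"
  by (induction t) auto

lemma fv_fsub: "fv (fsub s F) \<subseteq> (\<Union>z\<in>fv F. fvt (s z))"
proof (induction F arbitrary: s)
  case (Ex x F)
  have "fv (fsub s (Ex x F)) = fv (fsub (s(x := Var x)) F) - {x}" by simp
  also have "... \<subseteq> (\<Union>z\<in>fv F. fvt ((s(x := Var x)) z)) - {x}" using Ex.IH by blast
  also have "... \<subseteq> (\<Union>z\<in>fv (Ex x F). fvt (s z))"
  proof
    fix w assume "w \<in> (\<Union>z\<in>fv F. fvt ((s(x := Var x)) z)) - {x}"
    then obtain z where z: "z \<in> fv F" "w \<in> fvt ((s(x := Var x)) z)" "w \<noteq> x" by blast
    then have "z \<noteq> x" by (cases "z = x") auto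
    then show "w \<in> (\<Union>z\<in>fv (Ex x F). fvt (s z))" using z by auto
  qed
  finally show ?case .
next
  case (All x F)
  have "fv (fsub s (All x F)) = fv (fsub (s(x := Var x)) F) - {x}" by simp
  also have "... \<subseteq> (\<Union>z\<in>fv F. fvt ((s(x := Var x)) z)) - {x}" using All.IH by blast
  also have "... \<subseteq> (\<Union>z\<in>fv (All x F). fvt (s z))"
  proof
    fix w assume "w \<in> (\<Union>z\<in>fv F. fvt ((s(x := Var x)) z)) - {x}"
    then obtain z where z: "z \<in> fv F" "w \<in> fvt ((s(x := Var x)) z)" "w \<noteq> x" by blast
    then have "z \<noteq> x" by (cases "z = x") auto
    then show "w \<in> (\<Union>z\<in>fv (All x F). fvt (s z))" using z by auto
  qed
  finally show ?case .
next
  case (And F G)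
  have "fv (fsub s F) \<subseteq> (\<Union>z\<in>fv F. fvt (s z))" "fv (fsub s G) \<subseteq> (\<Union>z\<in>fv G. fvt (s z))"
    by (rule And.IH)+
  then show ?case by auto
next
  case (Or F G)
  have "fv (fsub s F) \<subseteq> (\<Union>z\<in>fv F. fvt (s z))" "fv (fsub s G) \<subseteq> (\<Union>z\<in>fv G. fvt (s z))"
    by (rule Or.IH)+
  then show ?case by auto
next
  case (Imp F G)
  have "fv (fsub s F) \<subseteq> (\<Union>z\<in>fv F. fvt (s z))" "fv (fsub s G) \<subseteq> (\<Union>z\<in>fv G. fvt (s z))"
    by (rule Imp.IH)+
  then show ?case by auto
qed (auto simp: fvt_tsub)

lemma tsub_comp: "tsub s1 (tsub s2 t) = tsub (\<lambda>z. tsub s1 (s2 z)) t"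
  by (induction t) auto

lemma tsub_closed: "fvt t = {} \<Longrightarrow> tsub s t = t"
  by (induction t) auto

lemma fsub_comp: "good s2 \<Longrightarrow> fsub s1 (fsub s2 F) = fsub (\<lambda>z. tsub s1 (s2 z)) F"
proof (induction F arbitrary: s1 s2)
  case (Pred p ts) then show ?case by (auto simp: tsub_comp)
next
  case (Cmp c a b) then show ?case by (auto simp: tsub_comp)
next
  case (Ex x F)
  have g: "good (s2(x := Var x))" using Ex.prems by (auto simp: good_def)
  have "(\<lambda>z. tsub (s1(x := Var x)) ((s2(x := Var x)) z)) = (\<lambda>z. tsub s1 (s2 z))(x := Var x)"
  proof
    fix z show "tsub (s1(x := Var x)) ((s2(x := Var x)) z) = ((\<lambda>z. tsub s1 (s2 z))(x := Var x)) z"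
      using Ex.prems unfolding good_def
      by (cases "z = x"; cases "s2 z = Var z") (auto simp: tsub_closed)
  qed
  note e = this
  show ?case by (simp only: fsub.simps Ex.IH[OF g] e)
next
  case (All x F)
  have g: "good (s2(x := Var x))" using All.prems by (auto simp: good_def)
  have "(\<lambda>z. tsub (s1(x := Var x)) ((s2(x := Var x)) z)) = (\<lambda>z. tsub s1 (s2 z))(x := Var x)"
  proof
    fix z show "tsub (s1(x := Var x)) ((s2(x := Var x)) z) = ((\<lambda>z. tsub s1 (s2 z))(x := Var x)) z"
      using All.prems unfolding good_def
      by (cases "z = x"; cases "s2 z = Var z") (auto simp: tsub_closed)
  qed
  note e = this
  show ?case by (simp only: fsub.simps All.IH[OF g] e)
next
  case (Agg k X V F ts) then show ?case by (auto simp: tsub_comp)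
qed auto

lemma int_gen: "int_tm t \<Longrightarrow> gen_tm t"
  by (cases t) auto

lemma has_sort_gen: "has_sort t s \<Longrightarrow> gen_tm t"
  by (cases s) (auto simp: int_gen)

lemma tsub_int: "sgood s \<Longrightarrow> int_tm t \<Longrightarrow> int_tm (tsub s t)"
  unfolding sgood_def
  by (induction t) (auto, metis has_sort.simps(2))

lemma tsub_gen: "sgood s \<Longrightarrow> gen_tm t \<Longrightarrow> gen_tm (tsub s t)"
  apply (cases t)
  using tsub_int[of s] has_sort_gen unfolding sgood_def by auto

lemma tsub_has_sort: "sgood s \<Longrightarrow> has_sort t k \<Longrightarrow> has_sort (tsub s t) k"
  by (cases k) (auto simp: tsub_int tsub_gen)

lemma sgood_upd: "sgood s \<Longrightarrow> has_sort t (sortof x) \<Longrightarrow> sgood (s(x := t))"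
  unfolding sgood_def by auto

lemma has_sort_Var: "has_sort (Var x) (sortof x)"
  by (cases "sortof x") auto

lemma sgood_Var: "sgood Var"
  unfolding sgood_def by (simp add: has_sort_Var)

lemma wf_fsub: "sgood s \<Longrightarrow> wf F \<Longrightarrow> wf (fsub s F)"
proof (induction F arbitrary: s)
  case (Ex x F) then show ?case by (auto intro: sgood_upd has_sort_Var)
next
  case (All x F) then show ?case by (auto intro: sgood_upd has_sort_Var)
next
  case (Agg k X V F ts)
  then show ?case by (auto simp: list_all2_conv_all_nth tsub_has_sort)
qed (auto simp: tsub_gen)

lemma wf_subst: "has_sort t (sortof x) \<Longrightarrow> wf F \<Longrightarrow> wf (subst x t F)"
  unfolding subst_fsub by (rule wf_fsub) (auto intro: sgood_upd sgood_Var)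

lemma free_for_closed: "fvt t \<subseteq> {x} \<Longrightarrow> free_for t x F"
  by (induction t x F rule: free_for.induct) auto

lemma substt_substt: "substt x s (substt x t u) = substt x (substt x s t) u"
  by (induction u) auto

lemma subst_subst: "subst x s (subst x t F) = subst x (substt x s t) F"
proof (induction F)
  case (Pred p ts) then show ?case by (simp add: substt_substt)
next
  case (Cmp c a b) then show ?case by (simp add: substt_substt)
next
  case (Agg k X V F ts) then show ?case by (simp add: substt_substt)
qed auto

lemma substt_closed: "fvt u = {} \<Longrightarrow> substt x t u = u"
  by (induction u) auto

lemma tsub_substt: "good s \<Longrightarrow> tsub s (substt x t u) = substt x (tsub s t) (tsub (s(x := Var x)) u)"
proof (induction u)
  case (Var z) then show ?case
    by (cases "z = x") (auto simp: good_def substt_closed split: if_splits, metis substt.simps(1) substt_closed)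
qed auto

lemma fsub_subst:
  assumes "free_for t x F" "good s"
  shows "fsub s (subst x t F) = subst x (tsub s t) (fsub (s(x := Var x)) F)"
  using assms
proof (induction F arbitrary: s)
  case (Pred p ts) then show ?case
    by (induction ts) (simp_all add: tsub_substt fun_upd_def)
next
  case (Cmp c a b) then show ?case
    by (simp add: tsub_substt fun_upd_def)
next
  case (Agg k X V F ts) then show ?case
    by (induction ts) (simp_all add: tsub_substt fun_upd_def)
next
  case (Ex y F)
  show ?case
  proof (cases "y = x")
    case True then show ?thesis by (simp add: fun_upd_def cong: if_cong)
  next
    case False
    show ?thesis
    proof (cases "x \<in> fv (Ex y F)")
      case True
      then have h: "y \<notin> fvt t" "free_for t x F" using Ex.prems False by auto
      have g: "good (s(y := Var y))" using Ex.prems by (auto simp: good_def)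
      have teq: "tsub (s(y := Var y)) t = tsub s t" using h by (auto intro!: tsub_cong)
      have ih: "fsub (s(y := Var y)) (subst x t F) = subst x (tsub (s(y := Var y)) t) (fsub ((s(y := Var y))(x := Var x)) F)"
        by (rule Ex.IH[OF h(2) g])
      have tw: "(s(y := Var y))(x := Var x) = (s(x := Var x))(y := Var y)" using False by (rule fun_upd_twist)
      show ?thesis by (simp only: subst.simps fsub.simps False if_False ih tw teq)
    next
      case nf: False
      have e1: "subst x t (Ex y F) = Ex y F"
        using nf unfolding subst_fsub by (intro fsub_id) auto
      have nf2: "x \<notin> fv (fsub (s(x := Var x)) (Ex y F))"
        using fv_fsub[of "s(x := Var x)" "Ex y F"] nf Ex.prems unfolding good_def
        by (smt (verit, best) UN_iff empty_iff fun_upd_apply fvt.simps(1) insertE subsetD)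
      have e2: "subst x (tsub s t) (fsub (s(x := Var x)) (Ex y F)) = fsub (s(x := Var x)) (Ex y F)"
        using nf2 unfolding subst_fsub by (intro fsub_id) auto
      have e3: "fsub (s(x := Var x)) (Ex y F) = fsub s (Ex y F)"
        using nf by (intro fsub_cong) auto
      show ?thesis by (subst e1, subst e2, subst e3, rule refl)
    qed
  qed
next
  case (All y F)
  show ?case
  proof (cases "y = x")
    case True then show ?thesis by (simp add: fun_upd_def cong: if_cong)
  next
    case False
    show ?thesis
    proof (cases "x \<in> fv (All y F)")
      case True
      then have h: "y \<notin> fvt t" "free_for t x F" using All.prems False by auto
      have g: "good (s(y := Var y))" using All.prems by (auto simp: good_def)
      have teq: "tsub (s(y := Var y)) t = tsub s t" using h by (auto intro!: tsub_cong)
      have ih: "fsub (s(y := Var y)) (subst x t F) = subst x (tsub (s(y := Var y)) t) (fsub ((s(y := Var y))(x := Var x)) F)"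
        by (rule All.IH[OF h(2) g])
      have tw: "(s(y := Var y))(x := Var x) = (s(x := Var x))(y := Var y)" using False by (rule fun_upd_twist)
      show ?thesis by (simp only: subst.simps fsub.simps False if_False ih tw teq)
    next
      case nf: False
      have e1: "subst x t (All y F) = All y F"
        using nf unfolding subst_fsub by (intro fsub_id) auto
      have nf2: "x \<notin> fv (fsub (s(x := Var x)) (All y F))"
        using fv_fsub[of "s(x := Var x)" "All y F"] nf All.prems unfolding good_def
        by (smt (verit, best) UN_iff empty_iff fun_upd_apply fvt.simps(1) insertE subsetD)
      have e2: "subst x (tsub s t) (fsub (s(x := Var x)) (All y F)) = fsub (s(x := Var x)) (All y F)"
        using nf2 unfolding subst_fsub by (intro fsub_id) auto
      have e3: "fsub (s(x := Var x)) (All y F) = fsub s (All y F)"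
        using nf by (intro fsub_cong) auto
      show ?thesis by (subst e1, subst e2, subst e3, rule refl)
    qed
  qed
qed auto



definition closedS :: "fm set \<Rightarrow> bool" where
  "closedS G = (\<forall>B\<in>G. fv B = {})"

lemma nd_weaken:
  "nd om Ax \<Gamma> F \<Longrightarrow> \<Gamma> \<subseteq> \<Gamma>' \<Longrightarrow> (\<forall>B\<in>\<Gamma>'. B \<notin> \<Gamma> \<longrightarrow> fv B = {}) \<Longrightarrow> nd om Ax \<Gamma>' F"
proof (induction arbitrary: \<Gamma>' rule: nd.induct)
  case (axiom F \<Gamma>) show ?case by (rule nd.axiom) (rule axiom.hyps)
next
  case (hyp F \<Gamma>) show ?case by (rule nd.hyp) (use hyp in blast)
next
  case (andI \<Gamma> F G) show ?case by (rule nd.andI[OF andI.IH(1)[OF andI.prems] andI.IH(2)[OF andI.prems]])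
next
  case (andE1 \<Gamma> F G) show ?case by (rule nd.andE1[OF andE1.IH[OF andE1.prems]])
next
  case (andE2 \<Gamma> F G) show ?case by (rule nd.andE2[OF andE2.IH[OF andE2.prems]])
next
  case (orI1 \<Gamma> F G) show ?case by (rule nd.orI1[OF orI1.IH[OF orI1.prems] orI1.hyps(2)])
next
  case (orI2 \<Gamma> G F) show ?case by (rule nd.orI2[OF orI2.IH[OF orI2.prems] orI2.hyps(2)])
next
  case (orE \<Gamma> F G H)
  have a: "nd om Ax \<Gamma>' (Or F G)" by (rule orE.IH(1)[OF orE.prems])
  have b: "nd om Ax (insert F \<Gamma>') H" by (rule orE.IH(2)) (use orE.prems in blast)+
  have c: "nd om Ax (insert G \<Gamma>') H" by (rule orE.IH(3)) (use orE.prems in blast)+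
  show ?case by (rule nd.orE[OF a b c])
next
  case (impI F \<Gamma> G)
  have b: "nd om Ax (insert F \<Gamma>') G" by (rule impI.IH) (use impI.prems in blast)+
  show ?case by (rule nd.impI[OF b impI.hyps(2)])
next
  case (impE \<Gamma> F G) show ?case by (rule nd.impE[OF impE.IH(1)[OF impE.prems] impE.IH(2)[OF impE.prems]])
next
  case (botE \<Gamma> F) show ?case by (rule nd.botE[OF botE.IH[OF botE.prems] botE.hyps(2)])
next
  case (allI \<Gamma> F x)
  have a: "nd om Ax \<Gamma>' F" by (rule allI.IH[OF allI.prems])
  have "x \<notin> (\<Union>G\<in>\<Gamma>'. fv G)" using allI.hyps(2) allI.prems by blast
  then show ?case by (rule nd.allI[OF a])
next
  case (allE \<Gamma> x F t) show ?case by (rule nd.allE[OF allE.IH[OF allE.prems] allE.hyps(2,3)])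
next
  case (exI \<Gamma> x t F) show ?case by (rule nd.exI[OF exI.IH[OF exI.prems] exI.hyps(2-4)])
next
  case (exE \<Gamma> x F G)
  have a: "nd om Ax \<Gamma>' (Ex x F)" by (rule exE.IH(1)[OF exE.prems])
  have b: "nd om Ax (insert F \<Gamma>') G" by (rule exE.IH(2)) (use exE.prems in blast)+
  have "x \<notin> (\<Union>H\<in>\<Gamma>'. fv H)" using exE.hyps(4) exE.prems by blast
  then show ?case by (rule nd.exE[OF a b exE.hyps(3)])
next
  case (eqI t \<Gamma>) show ?case by (rule nd.eqI[OF eqI.hyps])
next
  case (eqE \<Gamma> s t x F) show ?case
    by (rule nd.eqE[OF eqE.IH(1)[OF eqE.prems] eqE.IH(2)[OF eqE.prems] eqE.hyps(3-6)])
next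
  case (omega F x \<Gamma>) show ?case
    by (rule nd.omega[OF omega.hyps(1,2)]) (rule omega.IH, assumption, (rule omega.prems)+)
qed

lemma nd_weaken_closed: "nd om Ax \<Gamma> F \<Longrightarrow> closedS \<Delta> \<Longrightarrow> nd om Ax (\<Gamma> \<union> \<Delta>) F"
  by (erule nd_weaken) (auto simp: closedS_def)

lemma nd_weaken1: "nd om Ax \<Gamma> F \<Longrightarrow> fv B = {} \<Longrightarrow> nd om Ax (insert B \<Gamma>) F"
  by (erule nd_weaken) auto

lemma nd_cut: "nd om Ax (insert A \<Gamma>) G \<Longrightarrow> nd om Ax \<Gamma> A \<Longrightarrow> wf A \<Longrightarrow> nd om Ax \<Gamma> G"
  by (rule nd.impE[OF nd.impI]) 

lemma nd_top: "nd om Ax \<Gamma> Top"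
  unfolding Top_def by (rule nd.impI) (auto intro: nd.hyp)

lemma nd_iffD1: "nd om Ax \<Gamma> (Iff A B) \<Longrightarrow> nd om Ax \<Gamma> A \<Longrightarrow> nd om Ax \<Gamma> B"
  unfolding Iff_def by (meson nd.andE1 nd.impE)

lemma nd_iffD2: "nd om Ax \<Gamma> (Iff A B) \<Longrightarrow> nd om Ax \<Gamma> B \<Longrightarrow> nd om Ax \<Gamma> A"
  unfolding Iff_def by (meson nd.andE2 nd.impE)

lemma nd_iffI: "nd om Ax (insert A \<Gamma>) B \<Longrightarrow> nd om Ax (insert B \<Gamma>) A \<Longrightarrow> wf A \<Longrightarrow> wf B
  \<Longrightarrow> nd om Ax \<Gamma> (Iff A B)"
  unfolding Iff_def by (intro nd.andI nd.impI)

lemma nd_conjE: "nd om Ax \<Gamma> (Conj Fs) \<Longrightarrow> A \<in> set Fs \<Longrightarrow> nd om Ax \<Gamma> A"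
proof (induction Fs)
  case Nil then show ?case by simp
next
  case (Cons B Fs)
  then show ?case unfolding Conj_def by (auto intro: nd.andE1 nd.andE2)
qed

lemma nd_conjI: "(\<And>A. A \<in> set Fs \<Longrightarrow> nd om Ax \<Gamma> A) \<Longrightarrow> nd om Ax \<Gamma> (Conj Fs)"
proof (induction Fs)
  case Nil then show ?case by (simp add: Conj_def nd_top)
next
  case (Cons B Fs)
  then show ?case unfolding Conj_def by (auto intro: nd.andI)
qed

lemma wf_Disj: "(\<And>A. A \<in> set Fs \<Longrightarrow> wf A) \<Longrightarrow> wf (Disj Fs)"
  by (induction Fs) (auto simp: Disj_def)

lemma wf_Conj: "(\<And>A. A \<in> set Fs \<Longrightarrow> wf A) \<Longrightarrow> wf (Conj Fs)"
  by (induction Fs) (auto simp: Conj_def Top_def)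

lemma nd_disjI: "A \<in> set Fs \<Longrightarrow> nd om Ax \<Gamma> A \<Longrightarrow> (\<And>B. B \<in> set Fs \<Longrightarrow> wf B) \<Longrightarrow> nd om Ax \<Gamma> (Disj Fs)"
proof (induction Fs)
  case Nil then show ?case by simp
next
  case (Cons B Fs)
  show ?case
  proof (cases "A = B")
    case True
    then show ?thesis using Cons.prems unfolding Disj_def
      by (simp, intro nd.orI1) (auto intro: wf_Disj[unfolded Disj_def])
  next
    case False
    then have "nd om Ax \<Gamma> (Disj Fs)" using Cons by auto
    then show ?thesis using Cons.prems unfolding Disj_def by (simp, intro nd.orI2) auto
  qed
qed

lemma fv_Disj: "(\<And>A. A \<in> set Fs \<Longrightarrow> fv A = {}) \<Longrightarrow> fv (Disj Fs) = {}"
  by (induction Fs) (auto simp: Disj_def)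

lemma nd_disjE_bot: "nd om Ax \<Gamma> (Disj Fs) \<Longrightarrow> (\<And>A. A \<in> set Fs \<Longrightarrow> nd om Ax (insert A \<Gamma>) Bot)
  \<Longrightarrow> (\<And>A. A \<in> set Fs \<Longrightarrow> fv A = {}) \<Longrightarrow> nd om Ax \<Gamma> Bot"
proof (induction Fs arbitrary: \<Gamma>)
  case Nil then show ?case by (simp add: Disj_def)
next
  case (Cons B Fs)
  have a: "nd om Ax \<Gamma> (Or B (Disj Fs))" using Cons.prems(1) by (simp add: Disj_def)
  have b: "nd om Ax (insert B \<Gamma>) Bot" using Cons.prems(2) by simp
  have c: "nd om Ax (insert (Disj Fs) \<Gamma>) Bot"
  proof (rule Cons.IH)
    show "nd om Ax (insert (Disj Fs) \<Gamma>) (Disj Fs)" by (rule nd.hyp) simp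
    have fvD: "fv (Disj Fs) = {}" using Cons.prems(3) by (intro fv_Disj) auto
    fix A assume "A \<in> set Fs"
    then have "nd om Ax (insert A \<Gamma>) Bot" using Cons.prems(2) by simp
    then show "nd om Ax (insert A (insert (Disj Fs) \<Gamma>)) Bot"
      by (rule nd_weaken) (use fvD in auto)
  next
    fix A assume "A \<in> set Fs" then show "fv A = {}" using Cons.prems(3) by simp
  qed
  show ?case by (rule nd.orE[OF a b c])
qed

definition inst :: "var list \<Rightarrow> pc list \<Rightarrow> var \<Rightarrow> tm" where
  "inst xs ps z = (case map_of (zip xs ps) z of Some p \<Rightarrow> Pc p | None \<Rightarrow> Var z)"

definition oksorts :: "var list \<Rightarrow> pc list \<Rightarrow> bool" where
  "oksorts xs ps = (length ps = length xs \<and> (\<forall>i<length xs. ps ! i \<in> dom_of (sortof (xs ! i))))"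

lemma inst_Nil: "inst [] ps = Var"
  by (rule ext) (simp add: inst_def)

lemma inst_Cons_eq: "inst (x # xs) (p # ps) x = Pc p"
  by (simp add: inst_def)

lemma inst_Cons_ne: "z \<noteq> x \<Longrightarrow> inst (x # xs) (p # ps) z = inst xs ps z"
  by (simp add: inst_def)

lemma good_inst: "good (inst xs ps)"
  unfolding good_def inst_def by (auto split: option.splits)

lemma good_upd_Pc: "good (Var(x := Pc p))"
  unfolding good_def by auto

lemma subst_inst: "fsub (inst xs ps) (subst x (Pc p) B) = fsub (inst (x # xs) (p # ps)) B"
proof -
  have "fsub (inst xs ps) (subst x (Pc p) B) = fsub (\<lambda>z. tsub (inst xs ps) ((Var(x := Pc p)) z)) B"
    unfolding subst_fsub by (rule fsub_comp[OF good_upd_Pc])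
  also have "(\<lambda>z. tsub (inst xs ps) ((Var(x := Pc p)) z)) = inst (x # xs) (p # ps)"
  proof
    fix z show "tsub (inst xs ps) ((Var(x := Pc p)) z) = inst (x # xs) (p # ps) z"
      by (cases "z = x") (simp_all add: inst_Cons_eq inst_Cons_ne)
  qed
  finally show ?thesis .
qed

lemma subst_AllL: "x \<notin> set xs \<Longrightarrow> subst x t (AllL xs B) = AllL xs (subst x t B)"
  by (induction xs) (auto simp: AllL_def)

lemma subst_ExL: "x \<notin> set xs \<Longrightarrow> subst x t (ExL xs B) = ExL xs (subst x t B)"
  by (induction xs) (auto simp: ExL_def)

lemma fv_AllL: "fv (AllL xs B) = fv B - set xs"
  by (induction xs) (auto simp: AllL_def)

lemma fv_ExL: "fv (ExL xs B) = fv B - set xs"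
  by (induction xs) (auto simp: ExL_def)

lemma wf_AllL: "wf (AllL xs B) = wf B"
  by (induction xs) (auto simp: AllL_def)

lemma wf_ExL: "wf (ExL xs B) = wf B"
  by (induction xs) (auto simp: ExL_def)

lemma AllL_Cons: "AllL (x # xs) B = All x (AllL xs B)"
  by (simp add: AllL_def)

lemma ExL_Cons: "ExL (x # xs) B = Ex x (ExL xs B)"
  by (simp add: ExL_def)

lemma oksorts_Cons: "oksorts (x # xs) (p # ps) = (p \<in> dom_of (sortof x) \<and> oksorts xs ps)"
  unfolding oksorts_def by (auto simp: less_Suc_eq_0_disj)

lemma oksorts_Nil: "oksorts [] ps = (ps = [])"
  unfolding oksorts_def by auto

lemma oksorts_ConsE: "oksorts (x # xs) qs \<Longrightarrow> \<exists>p ps. qs = p # ps \<and> p \<in> dom_of (sortof x) \<and> oksorts xs ps"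
  by (cases qs) (auto simp: oksorts_Cons, auto simp: oksorts_def)

lemma has_sort_Pc: "p \<in> dom_of (sortof x) \<Longrightarrow> has_sort (Pc p) (sortof x)"
  by (cases "sortof x") auto

lemma fvt_Pc: "fvt (Pc p) = {}" by simp

lemma fv_subst_Pc: "fv (subst x (Pc p) B) \<subseteq> fv B - {x}"
proof -
  have "fv (subst x (Pc p) B) \<subseteq> (\<Union>z\<in>fv B. fvt ((Var(x := Pc p)) z))"
    unfolding subst_fsub by (rule fv_fsub)
  also have "... \<subseteq> fv B - {x}"
  proof
    fix w assume "w \<in> (\<Union>z\<in>fv B. fvt ((Var(x := Pc p)) z))"
    then obtain z where "z \<in> fv B" "w \<in> fvt ((Var(x := Pc p)) z)" by blast
    then show "w \<in> fv B - {x}" by (cases "z = x") auto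
  qed
  finally show ?thesis .
qed

lemma AllL_E:
  "nd om Ax \<Gamma> (AllL xs B) \<Longrightarrow> distinct xs \<Longrightarrow> oksorts xs ps \<Longrightarrow> nd om Ax \<Gamma> (fsub (inst xs ps) B)"
proof (induction xs arbitrary: B ps)
  case Nil then show ?case by (simp add: oksorts_Nil inst_Nil fsub_Var AllL_def)
next
  case (Cons x xs)
  obtain p ps' where ps: "ps = p # ps'" "p \<in> dom_of (sortof x)" "oksorts xs ps'"
    using oksorts_ConsE[OF Cons.prems(3)] by blast
  have "nd om Ax \<Gamma> (subst x (Pc p) (AllL xs B))"
    using Cons.prems(1) unfolding AllL_Cons
    by (rule nd.allE) (auto intro: has_sort_Pc[OF ps(2)] free_for_closed)
  then have "nd om Ax \<Gamma> (AllL xs (subst x (Pc p) B))"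
    using Cons.prems(2) by (simp add: subst_AllL)
  then have "nd om Ax \<Gamma> (fsub (inst xs ps') (subst x (Pc p) B))"
    using Cons.IH Cons.prems(2) ps(3) by simp
  then show ?case unfolding subst_inst ps(1) .
qed

lemma AllL_I:
  "wf B \<Longrightarrow> distinct xs \<Longrightarrow> (\<And>ps. oksorts xs ps \<Longrightarrow> nd True Ax \<Gamma> (fsub (inst xs ps) B))
   \<Longrightarrow> nd True Ax \<Gamma> (AllL xs B)"
proof (induction xs arbitrary: B)
  case Nil
  have "nd True Ax \<Gamma> (fsub (inst [] []) B)" by (rule Nil.prems(3)) (simp add: oksorts_Nil)
  then show ?case by (simp add: inst_Nil fsub_Var AllL_def)
next
  case (Cons x xs)
  show ?case unfolding AllL_Cons
  proof (rule nd.omega)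
    show "wf (AllL xs B)" using Cons.prems(1) by (simp add: wf_AllL)
    fix p assume p: "p \<in> dom_of (sortof x)"
    have "nd True Ax \<Gamma> (AllL xs (subst x (Pc p) B))"
    proof (rule Cons.IH)
      show "wf (subst x (Pc p) B)" by (rule wf_subst[OF has_sort_Pc[OF p] Cons.prems(1)])
      show "distinct xs" using Cons.prems(2) by simp
      fix ps assume "oksorts xs ps"
      then have "oksorts (x # xs) (p # ps)" using p by (simp add: oksorts_Cons)
      then show "nd True Ax \<Gamma> (fsub (inst xs ps) (subst x (Pc p) B))"
        unfolding subst_inst by (rule Cons.prems(3))
    qed
    then show "nd True Ax \<Gamma> (subst x (Pc p) (AllL xs B))"
      using Cons.prems(2) by (simp add: subst_AllL)
  qed simp
qed

lemma ExL_I: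
  "wf B \<Longrightarrow> distinct xs \<Longrightarrow> oksorts xs ps \<Longrightarrow> nd om Ax \<Gamma> (fsub (inst xs ps) B)
   \<Longrightarrow> nd om Ax \<Gamma> (ExL xs B)"
proof (induction xs arbitrary: B ps)
  case Nil then show ?case by (simp add: oksorts_Nil inst_Nil fsub_Var ExL_def)
next
  case (Cons x xs)
  obtain p ps' where ps: "ps = p # ps'" "p \<in> dom_of (sortof x)" "oksorts xs ps'"
    using oksorts_ConsE[OF Cons.prems(3)] by blast
  have "nd om Ax \<Gamma> (ExL xs (subst x (Pc p) B))"
  proof (rule Cons.IH)
    show "wf (subst x (Pc p) B)" by (rule wf_subst[OF has_sort_Pc[OF ps(2)] Cons.prems(1)])
    show "distinct xs" using Cons.prems(2) by simp
    show "oksorts xs ps'" by (rule ps(3))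
    show "nd om Ax \<Gamma> (fsub (inst xs ps') (subst x (Pc p) B))"
      unfolding subst_inst using Cons.prems(4) ps(1) by simp
  qed
  then have "nd om Ax \<Gamma> (subst x (Pc p) (ExL xs B))"
    using Cons.prems(2) by (simp add: subst_ExL)
  then show ?case unfolding ExL_Cons
    by (rule nd.exI) (auto intro: has_sort_Pc[OF ps(2)] free_for_closed simp: wf_ExL Cons.prems(1))
qed

lemma subst_self: "subst x (Var x) F = F"
proof -
  have "Var(x := Var x) = Var" by (rule ext) simp
  then show ?thesis unfolding subst_fsub by (simp add: fsub_Var)
qed

lemma subst_closed_fm: "x \<notin> fv F \<Longrightarrow> subst x t F = F"
  unfolding subst_fsub by (rule fsub_id) auto

lemma omega_exE:
  assumes C: "closedS C" and E: "nd True Ax C (Ex x Q)" and fQ: "fv Q \<subseteq> {x}" and wQ: "wf Q"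
    and wG: "wf G" and fG: "fv G = {}"
    and H: "\<And>p. p \<in> dom_of (sortof x) \<Longrightarrow> nd True Ax (insert (subst x (Pc p) Q) C) G"
  shows "nd True Ax C G"
proof -
  let ?A = "All x (Imp Q G)"
  have fA: "fv ?A = {}" using fQ fG by auto
  have wA: "wf ?A" using wQ wG by simp
  have A: "nd True Ax C ?A"
  proof (rule nd.omega)
    show "wf (Imp Q G)" using wQ wG by simp
    fix p assume p: "p \<in> dom_of (sortof x)"
    have "nd True Ax C (Imp (subst x (Pc p) Q) G)"
      by (rule nd.impI[OF H[OF p]]) (rule wf_subst[OF has_sort_Pc[OF p] wQ])
    then show "nd True Ax C (subst x (Pc p) (Imp Q G))"
      using fG by (simp add: subst_closed_fm)
  qed simp
  have E': "nd True Ax (insert ?A C) (Ex x Q)" by (rule nd_weaken1[OF E fA])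
  have "nd True Ax (insert Q (insert ?A C)) (subst x (Var x) (Imp Q G))"
    by (rule nd.allE[OF nd.hyp]) (auto intro: has_sort_Var free_for_closed)
  then have I: "nd True Ax (insert Q (insert ?A C)) (Imp Q G)" by (simp only: subst_self)
  have "nd True Ax (insert Q (insert ?A C)) G"
    by (rule nd.impE[OF I nd.hyp]) simp
  then have "nd True Ax (insert ?A C) G"
    by (rule nd.exE[OF E']) (use fG fA C in \<open>auto simp: closedS_def\<close>)
  then show ?thesis by (rule nd_cut[OF _ A wA])
qed

lemma closedS_insert: "closedS (insert A C) = (fv A = {} \<and> closedS C)"
  by (simp add: closedS_def)

lemma ExL_E:
  "closedS C \<Longrightarrow> nd True Ax C (ExL xs B) \<Longrightarrow> distinct xs \<Longrightarrow> fv B \<subseteq> set xs \<Longrightarrow> wf B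
   \<Longrightarrow> wf G \<Longrightarrow> fv G = {}
   \<Longrightarrow> (\<And>ps. oksorts xs ps \<Longrightarrow> nd True Ax (insert (fsub (inst xs ps) B) C) G)
   \<Longrightarrow> nd True Ax C G"
proof (induction xs arbitrary: B C)
  case Nil
  have "nd True Ax (insert (fsub (inst [] []) B) C) G" by (rule Nil.prems(8)) (simp add: oksorts_Nil)
  then have "nd True Ax (insert B C) G" by (simp add: inst_Nil fsub_Var)
  moreover have "nd True Ax C B" using Nil.prems(2) by (simp add: ExL_def)
  ultimately show ?case using Nil.prems(5) by (rule nd_cut)
next
  case (Cons x xs)
  show ?case
  proof (rule omega_exE[OF Cons.prems(1)])
    show "nd True Ax C (Ex x (ExL xs B))" using Cons.prems(2) by (simp add: ExL_Cons)
    show "fv (ExL xs B) \<subseteq> {x}" using Cons.prems(4) by (auto simp: fv_ExL)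
    show "wf (ExL xs B)" using Cons.prems(5) by (simp add: wf_ExL)
    show "wf G" "fv G = {}" by (rule Cons.prems)+
    fix p assume p: "p \<in> dom_of (sortof x)"
    let ?B = "subst x (Pc p) B"
    have xn: "x \<notin> set xs" using Cons.prems(3) by simp
    have fB: "fv ?B \<subseteq> set xs" using fv_subst_Pc[of x p B] Cons.prems(4) by auto
    have fE: "fv (ExL xs ?B) = {}" using fB by (auto simp: fv_ExL)
    have "nd True Ax (insert (ExL xs ?B) C) G"
    proof (rule Cons.IH)
      show "closedS (insert (ExL xs ?B) C)" using fE Cons.prems(1) by (simp add: closedS_insert)
      show "nd True Ax (insert (ExL xs ?B) C) (ExL xs ?B)" by (rule nd.hyp) simp
      show "distinct xs" using Cons.prems(3) by simp
      show "fv ?B \<subseteq> set xs" by (rule fB)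
      show "wf ?B" by (rule wf_subst[OF has_sort_Pc[OF p] Cons.prems(5)])
      show "wf G" "fv G = {}" by (rule Cons.prems)+
      fix ps assume "oksorts xs ps"
      then have "oksorts (x # xs) (p # ps)" using p by (simp add: oksorts_Cons)
      then have "nd True Ax (insert (fsub (inst (x # xs) (p # ps)) B) C) G" by (rule Cons.prems(8))
      then have "nd True Ax (insert (ExL xs ?B) (insert (fsub (inst xs ps) ?B) C)) G"
        unfolding subst_inst by (rule nd_weaken1[OF _ fE])
      then show "nd True Ax (insert (fsub (inst xs ps) ?B) (insert (ExL xs ?B) C)) G"
        by (simp add: insert_commute)
    qed
    then show "nd True Ax (insert (subst x (Pc p) (ExL xs B)) C) G"
      using xn by (simp add: subst_ExL)
  qed
qed



lemma inst_append:
  "length ps = length xs \<Longrightarrow> inst (xs @ ys) (ps @ qs) z = (if z \<in> set xs then inst xs ps z else inst ys qs z)"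
proof -
  assume l: "length ps = length xs"
  have z: "zip (xs @ ys) (ps @ qs) = zip xs ps @ zip ys qs" using l by simp
  show ?thesis
  proof (cases "z \<in> set xs")
    case True
    then obtain p where p: "map_of (zip xs ps) z = Some p"
      using map_of_zip_is_None[of xs ps z] l by (cases "map_of (zip xs ps) z") auto
    then show ?thesis using True unfolding inst_def z by simp
  next
    case False
    then have "map_of (zip xs ps) z = None" using map_of_zip_is_None[of xs ps z] l by simp
    then show ?thesis using False unfolding inst_def z by (simp add: map_add_def)
  qed
qed

lemma inst_notin: "z \<notin> set xs \<Longrightarrow> inst xs ps z = Var z"
proof -
  assume a: "z \<notin> set xs"
  have "map_of (zip xs ps) z = None"
    using a by (metis map_of_SomeD not_None_eq set_zip_leftD)
  then show ?thesis by (simp add: inst_def)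
qed

lemma inst_nth: "distinct xs \<Longrightarrow> length ps = length xs \<Longrightarrow> i < length xs \<Longrightarrow> inst xs ps (xs ! i) = Pc (ps ! i)"
  unfolding inst_def by (simp add: map_of_zip_nth)

lemma map_inst: "distinct xs \<Longrightarrow> length ps = length xs \<Longrightarrow> map (inst xs ps) xs = map Pc ps"
  by (rule nth_equalityI) (auto simp: inst_nth)

lemma inst_in: "length ps = length xs \<Longrightarrow> z \<in> set xs \<Longrightarrow> \<exists>p. inst xs ps z = Pc p"
  unfolding inst_def by (auto split: option.splits)

lemma fsub_ExL_fix: "(\<And>z. z \<in> set xs \<Longrightarrow> s z = Var z) \<Longrightarrow> fsub s (ExL xs B) = ExL xs (fsub s B)"
proof (induction xs arbitrary: s)
  case Nil then show ?case by (simp add: ExL_def)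
next
  case (Cons x xs)
  have "s(x := Var x) = s" using Cons.prems by (intro ext) auto
  then show ?case using Cons by (simp add: ExL_def)
qed

lemma fsub_AllL_fix: "(\<And>z. z \<in> set xs \<Longrightarrow> s z = Var z) \<Longrightarrow> fsub s (AllL xs B) = AllL xs (fsub s B)"
proof (induction xs arbitrary: s)
  case Nil then show ?case by (simp add: AllL_def)
next
  case (Cons x xs)
  have "s(x := Var x) = s" using Cons.prems by (intro ext) auto
  then show ?case using Cons by (simp add: AllL_def)
qed

lemma fsub_Iff: "fsub s (Iff A B) = Iff (fsub s A) (fsub s B)"
  by (simp add: Iff_def)

lemma fsub_Conj: "fsub s (Conj Fs) = Conj (map (fsub s) Fs)"
  by (induction Fs) (auto simp: Conj_def Top_def)

lemma fsub_Disj: "fsub s (Disj Fs) = Disj (map (fsub s) Fs)"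
  by (induction Fs) (auto simp: Disj_def)

lemma fresh_var: "finite A \<Longrightarrow> \<exists>n. Vr s n \<notin> A"
proof -
  assume "finite A"
  then have "finite (Vr s -` A)" by (rule finite_vimageI) (simp add: inj_def)
  then show ?thesis using ex_new_if_finite[of "Vr s -` A"] by auto
qed

lemma fresh_vars: "finite A \<Longrightarrow> \<exists>us. map sortof us = ss \<and> distinct us \<and> set us \<inter> A = {}"
proof (induction ss arbitrary: A)
  case Nil then show ?case by simp
next
  case (Cons s ss)
  obtain n where n: "Vr s n \<notin> A" using fresh_var[OF Cons.prems] by blast
  obtain us where us: "map sortof us = ss" "distinct us" "set us \<inter> insert (Vr s n) A = {}"
    using Cons.IH[of "insert (Vr s n) A"] Cons.prems by blast
  show ?case using n us by (intro HOL.exI[of _ "Vr s n # us"]) auto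
qed

lemma fresh_copies: "finite A \<Longrightarrow> \<exists>Ys. length Ys = n \<and> (\<forall>Y\<in>set Ys. map sortof Y = ss)
   \<and> distinct (concat Ys) \<and> set (concat Ys) \<inter> A = {}"
proof (induction n arbitrary: A)
  case 0 then show ?case by simp
next
  case (Suc n)
  obtain us where us: "map sortof us = ss" "distinct us" "set us \<inter> A = {}"
    using fresh_vars[OF Suc.prems] by blast
  obtain Ys where Ys: "length Ys = n" "\<forall>Y\<in>set Ys. map sortof Y = ss" "distinct (concat Ys)"
    "set (concat Ys) \<inter> (A \<union> set us) = {}"
    using Suc.IH[of "A \<union> set us"] Suc.prems by blast
  show ?case using us Ys by (intro HOL.exI[of _ "us # Ys"]) auto
qed

lemma finite_allvars: "finite (allvars F)"
proof -
  have t: "finite (fvt t)" for t by (induction t) auto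
  show ?thesis by (induction F) (auto simp: t)
qed

fun lexT :: "tm list \<Rightarrow> tm list \<Rightarrow> fm" where
  "lexT (a # as) (b # bs) = Or (Cmp Lt a b) (And (Cmp Eq a b) (lexT as bs))"
| "lexT _ _ = Bot"

lemma fsub_lexless: "fsub s (lexless xs us) = lexT (map s xs) (map s us)"
  by (induction xs us rule: lexless.induct) auto

fun lexlt :: "pc list \<Rightarrow> pc list \<Rightarrow> bool" where
  "lexlt (a # as) (b # bs) = (pc_less a b \<or> (a = b \<and> lexlt as bs))"
| "lexlt _ _ = False"

lemma lexT_props: "wf (lexT (map Pc t) (map Pc u)) \<and> fv (lexT (map Pc t) (map Pc u)) = {}
   \<and> arith_only (lexT (map Pc t) (map Pc u)) \<and> (holds e (lexT (map Pc t) (map Pc u)) = lexlt t u)"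
  by (induction t u rule: lexlt.induct) auto

lemma pc_less_irrefl: "\<not> pc_less a a"
  by (cases a) auto

lemma pc_less_trans: "pc_less a b \<Longrightarrow> pc_less b c \<Longrightarrow> pc_less a c"
  by (cases a; cases b; cases c) auto

lemma pc_less_total: "a \<noteq> b \<Longrightarrow> pc_less a b \<or> pc_less b a"
  by (cases a; cases b) auto

lemma lexlt_irrefl: "\<not> lexlt t t"
  by (induction t) (auto simp: pc_less_irrefl)

lemma lexlt_trans: "lexlt t u \<Longrightarrow> lexlt u w \<Longrightarrow> lexlt t w"
proof (induction t u arbitrary: w rule: lexlt.induct)
  case (1 a as b bs)
  then obtain c cs where w: "w = c # cs" by (cases w) auto
  show ?case using 1 unfolding w by (auto intro: pc_less_trans)
qed auto

lemma lexlt_total: "length t = length u \<Longrightarrow> t \<noteq> u \<Longrightarrow> lexlt t u \<or> lexlt u t"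
proof (induction t u rule: lexlt.induct)
  case (1 a as b bs) then show ?case using pc_less_total by auto
qed auto

lemma lexlt_neq: "lexlt t u \<Longrightarrow> t \<noteq> u"
  using lexlt_irrefl by auto

lemma map_inst_app1: "distinct (xs @ ys) \<Longrightarrow> length ps = length xs \<Longrightarrow> map (inst (xs @ ys) (ps @ qs)) xs = map Pc ps"
proof -
  assume d: "distinct (xs @ ys)" and l: "length ps = length xs"
  have "map (inst (xs @ ys) (ps @ qs)) xs = map (inst xs ps) xs"
    by (rule map_cong[OF refl]) (simp add: inst_append[OF l])
  also have "... = map Pc ps" using d l by (simp add: map_inst)
  finally show ?thesis .
qed

lemma map_inst_app2: "distinct (xs @ ys) \<Longrightarrow> length ps = length xs \<Longrightarrow> length qs = length ys
  \<Longrightarrow> map (inst (xs @ ys) (ps @ qs)) ys = map Pc qs"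
proof -
  assume d: "distinct (xs @ ys)" and l: "length ps = length xs" and l2: "length qs = length ys"
  have "map (inst (xs @ ys) (ps @ qs)) ys = map (inst ys qs) ys"
    by (rule map_cong[OF refl]) (use d in \<open>auto simp: inst_append[OF l]\<close>)
  also have "... = map Pc qs" using d l2 by (simp add: map_inst)
  finally show ?thesis .
qed

lemma oksorts_append: "oksorts xs ps \<Longrightarrow> oksorts ys qs \<Longrightarrow> oksorts (xs @ ys) (ps @ qs)"
  unfolding oksorts_def by (auto simp: nth_append)

lemma oksorts_len: "oksorts xs ps \<Longrightarrow> length ps = length xs"
  by (simp add: oksorts_def)

lemma oksorts_la2: "oksorts xs ps \<Longrightarrow> list_all2 has_sort (map Pc ps) (map sortof xs)"
  unfolding oksorts_def list_all2_conv_all_nth by (auto simp: has_sort_Pc)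

lemma sgood_inst: "oksorts xs ps \<Longrightarrow> sgood (inst xs ps)"
  unfolding sgood_def
proof
  fix z assume o: "oksorts xs ps"
  show "has_sort (inst xs ps z) (sortof z)"
  proof (cases "map_of (zip xs ps) z")
    case None then show ?thesis by (simp add: inst_def has_sort_Var)
  next
    case (Some p)
    then have "(z, p) \<in> set (zip xs ps)" by (rule map_of_SomeD)
    then obtain i where i: "i < length xs" "xs ! i = z" "ps ! i = p" using o
      by (auto simp: set_zip oksorts_def)
    then have "p \<in> dom_of (sortof z)" using o by (auto simp: oksorts_def)
    then show ?thesis using Some by (simp add: inst_def has_sort_Pc)
  qed
qed

lemma fv_fsub_inst: "fv B \<subseteq> set xs \<Longrightarrow> length ps = length xs \<Longrightarrow> fv (fsub (inst xs ps) B) = {}"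
proof -
  assume a: "fv B \<subseteq> set xs" "length ps = length xs"
  have "fv (fsub (inst xs ps) B) \<subseteq> (\<Union>z\<in>fv B. fvt (inst xs ps z))" by (rule fv_fsub)
  also have "... = {}"
  proof -
    have "fvt (inst xs ps z) = {}" if "z \<in> fv B" for z
      using inst_in[OF a(2)] that a(1) by fastforce
    then show ?thesis by auto
  qed
  finally show ?thesis by blast
qed

definition Ax2 :: "fm set" where "Ax2 = HTax \<union> Std \<union> Defs_ax \<union> D0"

lemma Std_Ax2: "Std \<subseteq> Ax2" by (auto simp: Ax2_def)
lemma D0_Ax2: "D0 \<subseteq> Ax2" by (auto simp: Ax2_def)
lemma Defs_Ax2: "Defs_ax \<subseteq> Ax2" by (auto simp: Ax2_def)

lemma std_ax2: "wf A \<Longrightarrow> fv A = {} \<Longrightarrow> arith_only A \<Longrightarrow> holds (\<lambda>_. Num 0) A \<Longrightarrow> nd om Ax2 \<Gamma> A"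
  by (rule nd.axiom) (auto simp: Std_def Ax2_def)

lemma std_bot: "wf A \<Longrightarrow> fv A = {} \<Longrightarrow> arith_only A \<Longrightarrow> \<not> holds (\<lambda>_. Num 0) A
  \<Longrightarrow> nd om Ax2 \<Gamma> A \<Longrightarrow> nd om Ax2 \<Gamma> Bot"
proof -
  assume a: "wf A" "fv A = {}" "arith_only A" "\<not> holds (\<lambda>_. Num 0) A" "nd om Ax2 \<Gamma> A"
  have "nd om Ax2 \<Gamma> (Imp A Bot)" by (rule std_ax2) (use a in auto)
  then show ?thesis using a(5) by (rule nd.impE)
qed

fun ins :: "pc list \<Rightarrow> pc list list \<Rightarrow> pc list list" where
  "ins t [] = [t]"
| "ins t (u # us) = (if lexlt t u then t # u # us else u # ins t us)"

lemma ins_props: "sorted_wrt lexlt us \<Longrightarrow> (\<forall>u\<in>set us. length u = k) \<Longrightarrow> length t = k \<Longrightarrow> t \<notin> set us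
  \<Longrightarrow> sorted_wrt lexlt (ins t us) \<and> set (ins t us) = insert t (set us)"
proof (induction us)
  case Nil then show ?case by simp
next
  case (Cons u us)
  show ?case
  proof (cases "lexlt t u")
    case True
    then show ?thesis using Cons.prems(1) lexlt_trans by auto
  next
    case False
    have "t \<noteq> u" using Cons.prems(4) by simp
    then have ut: "lexlt u t" using False lexlt_total[of t u] Cons.prems(2,3) by auto
    have ih: "sorted_wrt lexlt (ins t us) \<and> set (ins t us) = insert t (set us)"
      by (rule Cons.IH) (use Cons.prems in auto)
    then show ?thesis using False ut Cons.prems(1) by auto
  qed
qed

definition isort :: "pc list list \<Rightarrow> pc list list" where
  "isort ts = foldr ins ts []"

lemma isort_props: "distinct ts \<Longrightarrow> (\<forall>u\<in>set ts. length u = k)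
  \<Longrightarrow> sorted_wrt lexlt (isort ts) \<and> set (isort ts) = set ts"
proof (induction ts)
  case Nil then show ?case by (simp add: isort_def)
next
  case (Cons t ts)
  have ih: "sorted_wrt lexlt (isort ts) \<and> set (isort ts) = set ts" using Cons by auto
  have "sorted_wrt lexlt (ins t (isort ts)) \<and> set (ins t (isort ts)) = insert t (set (isort ts))"
    by (rule ins_props[where k = k]) (use ih Cons.prems in auto)
  then show ?case using ih by (simp add: isort_def)
qed

lemma sorted_distinct_lex: "sorted_wrt lexlt ts \<Longrightarrow> distinct ts"
  by (induction ts) (auto simp: lexlt_irrefl)

lemma isort_len: "distinct ts \<Longrightarrow> (\<forall>u\<in>set ts. length u = k) \<Longrightarrow> length (isort ts) = length ts"
  using isort_props[of ts k] sorted_distinct_lex distinct_card by metis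

fun split_like :: "'b list list \<Rightarrow> 'a list \<Rightarrow> 'a list list" where
  "split_like [] ps = []"
| "split_like (Y # Ys) ps = take (length Y) ps # split_like Ys (drop (length Y) ps)"

lemma split_like_concat: "map length ts = map length Ys \<Longrightarrow> split_like Ys (concat ts) = ts"
proof (induction Ys arbitrary: ts)
  case Nil then show ?case by simp
next
  case (Cons Y Ys)
  then obtain t ts' where "ts = t # ts'" "length t = length Y" "map length ts' = map length Ys" by (cases ts) auto
  then show ?case using Cons.IH by simp
qed

lemma length_split_like: "length (split_like Ys ps) = length Ys"
  by (induction Ys arbitrary: ps) auto

lemma oksorts_split_app: "oksorts (xs @ ys) qs \<Longrightarrow> oksorts xs (take (length xs) qs) \<and> oksorts ys (drop (length xs) qs)"
proof -
  assume a: "oksorts (xs @ ys) qs"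
  have l: "length qs = length xs + length ys" using a by (simp add: oksorts_def)
  have s: "\<And>i. i < length xs + length ys \<Longrightarrow> qs ! i \<in> dom_of (sortof ((xs @ ys) ! i))" using a by (simp add: oksorts_def)
  have 1: "oksorts xs (take (length xs) qs)"
  proof -
    have "\<forall>i<length xs. take (length xs) qs ! i \<in> dom_of (sortof (xs ! i))"
    proof (intro HOL.allI HOL.impI)
      fix i assume i: "i < length xs"
      then show "take (length xs) qs ! i \<in> dom_of (sortof (xs ! i))" using s[of i] by (simp add: nth_append)
    qed
    then show ?thesis using l by (simp add: oksorts_def)
  qed
  have 2: "oksorts ys (drop (length xs) qs)"
  proof -
    have "\<forall>i<length ys. drop (length xs) qs ! i \<in> dom_of (sortof (ys ! i))"
    proof (intro HOL.allI HOL.impI)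
      fix i assume i: "i < length ys"
      then show "drop (length xs) qs ! i \<in> dom_of (sortof (ys ! i))" using s[of "length xs + i"] l by (simp add: nth_append)
    qed
    then show ?thesis using l by (simp add: oksorts_def)
  qed
  show ?thesis using 1 2 by simp
qed

lemma oksorts_split_like: "oksorts (concat Ys) ps \<Longrightarrow> i < length Ys \<Longrightarrow> oksorts (Ys ! i) (split_like Ys ps ! i)"
proof (induction Ys arbitrary: ps i)
  case Nil then show ?case by simp
next
  case (Cons Y Ys)
  have a: "oksorts Y (take (length Y) ps)" "oksorts (concat Ys) (drop (length Y) ps)"
    using oksorts_split_app[of Y "concat Ys" ps] Cons.prems(1) by auto
  show ?case
  proof (cases i)
    case 0 then show ?thesis using a by simp
  next
    case (Suc j) then show ?thesis using Cons.IH[OF a(2), of j] Cons.prems(2) by simp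
  qed
qed

lemma oksorts_concat: "length ts = length Ys \<Longrightarrow> (\<And>i. i < length Ys \<Longrightarrow> oksorts (Ys ! i) (ts ! i))
  \<Longrightarrow> oksorts (concat Ys) (concat ts)"
proof (induction Ys arbitrary: ts)
  case Nil then show ?case by (simp add: oksorts_def)
next
  case (Cons Y Ys)
  then obtain t ts' where ts: "ts = t # ts'" by (cases ts) auto
  have "oksorts Y t" using Cons.prems(2)[of 0] ts by simp
  moreover have "oksorts (concat Ys) (concat ts')"
  proof (rule Cons.IH)
    show "length ts' = length Ys" using Cons.prems(1) ts by simp
    fix i assume "i < length Ys"
    then show "oksorts (Ys ! i) (ts' ! i)" using Cons.prems(2)[of "Suc i"] ts by simp
  qed
  ultimately show ?case using ts by (simp add: oksorts_append)
qed

lemma oksorts_same: "map sortof Y = map sortof X \<Longrightarrow> oksorts Y t = oksorts X t"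
proof -
  assume a: "map sortof Y = map sortof X"
  have l: "length Y = length X" using a by (metis length_map)
  have "\<And>i. i < length X \<Longrightarrow> sortof (Y ! i) = sortof (X ! i)" using a l by (metis nth_map)
  then show ?thesis unfolding oksorts_def using l by auto
qed

lemma map_inst_concat: "distinct (concat Ys) \<Longrightarrow> length ps = length (concat Ys)
  \<Longrightarrow> map (map (inst (concat Ys) ps)) Ys = map (map Pc) (split_like Ys ps)"
proof (induction Ys arbitrary: ps)
  case Nil then show ?case by simp
next
  case (Cons Y Ys)
  let ?p1 = "take (length Y) ps" and ?p2 = "drop (length Y) ps"
  have ps: "ps = ?p1 @ ?p2" by simp
  have l1: "length ?p1 = length Y" using Cons.prems(2) by simp
  have d: "distinct (Y @ concat Ys)" using Cons.prems(1) by simp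
  have "map (inst (concat (Y # Ys)) ps) Y = map Pc ?p1"
    using map_inst_app1[OF d l1, of ?p2] ps by simp
  moreover have "map (map (inst (concat (Y # Ys)) ps)) Ys = map (map (inst (concat Ys) ?p2)) Ys"
  proof -
    have "\<And>z. z \<in> set (concat Ys) \<Longrightarrow> inst (concat (Y # Ys)) ps z = inst (concat Ys) ?p2 z"
      using d inst_append[OF l1, of "concat Ys" ?p2] ps by (auto simp del: append_take_drop_id)
    then show ?thesis by (auto intro!: map_cong)
  qed
  moreover have "map (map (inst (concat Ys) ?p2)) Ys = map (map Pc) (split_like Ys ?p2)"
    by (rule Cons.IH) (use Cons.prems in auto)
  ultimately show ?case by simp
qed

lemma allvars_subst_Var: "allvars (subst x (Var y) F) \<subseteq> allvars F \<union> {y}"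
proof -
  have t: "fvt (substt x (Var y) u) \<subseteq> fvt u \<union> {y}" for u by (induction u) auto
  show ?thesis
  proof (induction F)
    case (Pred p ts) then show ?case using t by fastforce
  next
    case (Cmp c a b) then show ?case using t[of a] t[of b] by auto
  next
    case (Agg k X V F ts) then show ?case using t by fastforce
  qed auto
qed

lemma tsub_substt_Var: "y \<noteq> x \<Longrightarrow> tsub s (substt x (Var y) u) = tsub (s(x := s y)) u"
  by (induction u) auto

lemma fsub_subst_Var: "y \<noteq> x \<Longrightarrow> y \<notin> allvars F \<Longrightarrow> fsub s (subst x (Var y) F) = fsub (s(x := s y)) F"
proof (induction F arbitrary: s)
  case (Ex z G)
  show ?case
  proof (cases "z = x")
    case True then show ?thesis unfolding True by (simp only: subst.simps fsub.simps if_True fun_upd_upd simp_thms(6))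
  next
    case False
    have zy: "z \<noteq> y" "y \<notin> allvars G" using Ex.prems by auto
    have "fsub (s(z := Var z)) (subst x (Var y) G) = fsub ((s(z := Var z))(x := (s(z := Var z)) y)) G"
      by (rule Ex.IH) (use Ex.prems zy in auto)
    also have "(s(z := Var z))(x := (s(z := Var z)) y) = (s(x := s y))(z := Var z)"
      using zy False by (auto simp: fun_upd_twist)
    finally have c: "fsub (s(z := Var z)) (subst x (Var y) G) = fsub ((s(x := s y))(z := Var z)) G" .
    show ?thesis by (simp only: subst.simps fsub.simps False if_False c)
  qed
next
  case (All z G)
  show ?case
  proof (cases "z = x")
    case True then show ?thesis unfolding True by (simp only: subst.simps fsub.simps if_True fun_upd_upd simp_thms(6))
  next
    case False
    have zy: "z \<noteq> y" "y \<notin> allvars G" using All.prems by auto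
    have "fsub (s(z := Var z)) (subst x (Var y) G) = fsub ((s(z := Var z))(x := (s(z := Var z)) y)) G"
      by (rule All.IH) (use All.prems zy in auto)
    also have "(s(z := Var z))(x := (s(z := Var z)) y) = (s(x := s y))(z := Var z)"
      using zy False by (auto simp: fun_upd_twist)
    finally have c: "fsub (s(z := Var z)) (subst x (Var y) G) = fsub ((s(x := s y))(z := Var z)) G" .
    show ?thesis by (simp only: subst.simps fsub.simps False if_False c)
  qed
next
  case (And F G)
  have a: "fsub s (subst x (Var y) F) = fsub (s(x := s y)) F" by (rule And.IH(1)) (use And.prems in auto)
  have b: "fsub s (subst x (Var y) G) = fsub (s(x := s y)) G" by (rule And.IH(2)) (use And.prems in auto)
  show ?case by (simp only: subst.simps fsub.simps a b)
next
  case (Or F G)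
  have a: "fsub s (subst x (Var y) F) = fsub (s(x := s y)) F" by (rule Or.IH(1)) (use Or.prems in auto)
  have b: "fsub s (subst x (Var y) G) = fsub (s(x := s y)) G" by (rule Or.IH(2)) (use Or.prems in auto)
  show ?case by (simp only: subst.simps fsub.simps a b)
next
  case (Imp F G)
  have a: "fsub s (subst x (Var y) F) = fsub (s(x := s y)) F" by (rule Imp.IH(1)) (use Imp.prems in auto)
  have b: "fsub s (subst x (Var y) G) = fsub (s(x := s y)) G" by (rule Imp.IH(2)) (use Imp.prems in auto)
  show ?case by (simp only: subst.simps fsub.simps a b)
qed (simp_all add: tsub_substt_Var)

lemma fsub_foldl_rename:
  "distinct (map fst ps) \<Longrightarrow> distinct (map snd ps) \<Longrightarrow> set (map snd ps) \<inter> (set (map fst ps) \<union> allvars F) = {}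
   \<Longrightarrow> fsub s (foldl (\<lambda>G (x, y). subst x (Var y) G) F ps)
       = fsub (\<lambda>z. case map_of ps z of Some y \<Rightarrow> s y | None \<Rightarrow> s z) F"
proof (induction ps arbitrary: F)
  case Nil then show ?case by simp
next
  case (Cons p ps)
  obtain x y where p: "p = (x, y)" by (cases p)
  let ?F = "subst x (Var y) F"
  let ?s1 = "\<lambda>z. case map_of ps z of Some y \<Rightarrow> s y | None \<Rightarrow> s z"
  have av: "allvars ?F \<subseteq> allvars F \<union> {y}" by (rule allvars_subst_Var)
  have c3: "set (map snd ps) \<inter> (set (map fst ps) \<union> allvars ?F) = {}"
  proof -
    have "b \<notin> allvars ?F" if "b \<in> set (map snd ps)" for b
    proof -
      have "b \<noteq> y" using that Cons.prems(2) p by auto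
      moreover have "b \<notin> allvars F" using that Cons.prems(3) by auto
      ultimately show ?thesis using av by blast
    qed
    then show ?thesis using Cons.prems(3) by auto
  qed
  have "fsub s (foldl (\<lambda>G (x, y). subst x (Var y) G) ?F ps) = fsub ?s1 ?F"
    by (rule Cons.IH) (use Cons.prems c3 in auto)
  also have "... = fsub (?s1(x := ?s1 y)) F"
    by (rule fsub_subst_Var) (use Cons.prems p in auto)
  also have "?s1(x := ?s1 y) = (\<lambda>z. case map_of (p # ps) z of Some y \<Rightarrow> s y | None \<Rightarrow> s z)"
  proof -
    have "map_of ps y = None" using Cons.prems(3) p by (auto simp: map_of_eq_None_iff)
    then show ?thesis using p by (auto simp: fun_eq_iff)
  qed
  finally show ?case using p by simp
qed

lemma holds_Conj: "holds e (Conj Fs) = (\<forall>A\<in>set Fs. holds e A)"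
  by (induction Fs) (auto simp: Conj_def Top_def)

lemma holds_Disj: "holds e (Disj Fs) = (\<exists>A\<in>set Fs. holds e A)"
  by (induction Fs) (auto simp: Disj_def)

lemma fv_Conj: "(\<And>A. A \<in> set Fs \<Longrightarrow> fv A = {}) \<Longrightarrow> fv (Conj Fs) = {}"
  by (induction Fs) (auto simp: Conj_def Top_def)

lemma arith_Conj: "(\<And>A. A \<in> set Fs \<Longrightarrow> arith_only A) \<Longrightarrow> arith_only (Conj Fs)"
  by (induction Fs) (auto simp: Conj_def Top_def)

lemma arith_Disj: "(\<And>A. A \<in> set Fs \<Longrightarrow> arith_only A) \<Longrightarrow> arith_only (Disj Fs)"
  by (induction Fs) (auto simp: Disj_def)

definition eqTm :: "tm list \<Rightarrow> tm list \<Rightarrow> fm" where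
  "eqTm as bs = Conj (map (\<lambda>(a, b). Cmp Eq a b) (zip as bs))"

definition neTm :: "tm list \<Rightarrow> tm list \<Rightarrow> fm" where
  "neTm as bs = Disj (map (\<lambda>(a, b). Cmp Ne a b) (zip as bs))"

lemma fsub_tup_eq: "fsub s (tup_eq Y Z) = eqTm (map s Y) (map s Z)"
  unfolding tup_eq_def eqTm_def fsub_Conj by (simp add: zip_map_map case_prod_beta comp_def)

lemma fsub_tup_ne: "fsub s (tup_ne Y Z) = neTm (map s Y) (map s Z)"
  unfolding tup_ne_def neTm_def fsub_Disj by (simp add: zip_map_map case_prod_beta comp_def)

lemma eqTm_props: "length a = length b \<Longrightarrow> wf (eqTm (map Pc a) (map Pc b)) \<and> fv (eqTm (map Pc a) (map Pc b)) = {}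
  \<and> arith_only (eqTm (map Pc a) (map Pc b)) \<and> (holds e (eqTm (map Pc a) (map Pc b)) = (a = b))"
proof (induction a b rule: list_induct2)
  case Nil then show ?case by (simp add: eqTm_def Conj_def Top_def)
next
  case (Cons x xs y ys) then show ?case by (simp add: eqTm_def Conj_def)
qed

lemma neTm_props: "length a = length b \<Longrightarrow> wf (neTm (map Pc a) (map Pc b)) \<and> fv (neTm (map Pc a) (map Pc b)) = {}
  \<and> arith_only (neTm (map Pc a) (map Pc b)) \<and> (holds e (neTm (map Pc a) (map Pc b)) = (a \<noteq> b))"
proof (induction a b rule: list_induct2)
  case Nil then show ?case by (simp add: neTm_def Disj_def)
next
  case (Cons x xs y ys) then show ?case by (simp add: neTm_def Disj_def)
qed

lemma in_pairs: "i < j \<Longrightarrow> j < length xs \<Longrightarrow> (xs ! i, xs ! j) \<in> set (pairs xs)"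
  unfolding pairs_def by (auto intro!: bexI[of _ i] image_eqI[of _ _ j])

lemma pairs_in: "p \<in> set (pairs xs) \<Longrightarrow> \<exists>i j. i < j \<and> j < length xs \<and> p = (xs ! i, xs ! j)"
proof -
  assume "p \<in> set (pairs xs)"
  then obtain i j where "i < length xs" "Suc i \<le> j" "j < length xs" "p = (xs ! i, xs ! j)"
    unfolding pairs_def by auto
  then show ?thesis by (intro HOL.exI[of _ i] HOL.exI[of _ j]) auto
qed

locale d1 =
  fixes X V :: "var list" and F :: fm and Y N :: var
  assumes ok: "D1_ok X V F Y N"
begin

lemma okX: "distinct (X @ V)" "wf F" "fv F \<subseteq> set (X @ V)" "sortof Y = General" "Y \<notin> set (X @ V)"
  "sortof N = Integer" "N \<notin> set (X @ V @ [Y])" "agg_ok X V F"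
  using ok by (auto simp: D1_ok_def agg_ok_def)

definition U :: "var list" where
  "U = (SOME us. map sortof us = map sortof X \<and> distinct us \<and> set us \<inter> set (X @ V @ [N]) = {})"

lemma U_props: "map sortof U = map sortof X" "distinct U" "set U \<inter> set (X @ V @ [N]) = {}"
proof -
  have "\<exists>us. map sortof us = map sortof X \<and> distinct us \<and> set us \<inter> set (X @ V @ [N]) = {}"
    by (rule fresh_vars) simp
  then have "map sortof U = map sortof X \<and> distinct U \<and> set U \<inter> set (X @ V @ [N]) = {}"
    unfolding U_def by (rule someI_ex)
  then show "map sortof U = map sortof X" "distinct U" "set U \<inter> set (X @ V @ [N]) = {}" by auto
qed

lemma D0_ok_U: "D0_ok X V F N U"
  using okX U_props by (auto simp: D0_ok_def)

lemma lenU: "length U = length X" using U_props(1) by (metis length_map)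

lemma oksorts_U: "oksorts U u = oksorts X u"
proof -
  have l: "length U = length X" using U_props(1) by (metis length_map)
  have "\<And>i. i < length X \<Longrightarrow> sortof (U ! i) = sortof (X ! i)"
    using U_props(1) l by (metis nth_map)
  then show ?thesis unfolding oksorts_def using l by auto
qed

definition FF :: "pc list \<Rightarrow> pc list \<Rightarrow> fm" where
  "FF t v = fsub (inst (X @ V) (t @ v)) F"

definition SS :: "pc list \<Rightarrow> pc list \<Rightarrow> tm \<Rightarrow> fm" where
  "SS t v m = Agg Start X V F (map Pc t @ map Pc v @ [m])"

lemma FF_props: "oksorts X t \<Longrightarrow> oksorts V v \<Longrightarrow> fv (FF t v) = {} \<and> wf (FF t v)"
proof -
  assume a: "oksorts X t" "oksorts V v"
  have o: "oksorts (X @ V) (t @ v)" by (rule oksorts_append[OF a])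
  show ?thesis unfolding FF_def
    using fv_fsub_inst[OF okX(3) oksorts_len[OF o]] wf_fsub[OF sgood_inst[OF o] okX(2)] by simp
qed

lemma SS_props: "oksorts X t \<Longrightarrow> oksorts V v \<Longrightarrow> fv (SS t v (Pc (Num m))) = {} \<and> wf (SS t v (Pc (Num m)))"
proof -
  assume a: "oksorts X t" "oksorts V v"
  have "list_all2 has_sort (map Pc t @ map Pc v @ [Pc (Num m)]) (map sortof (X @ V) @ [Integer])"
  proof -
    have "list_all2 has_sort (map Pc (t @ v)) (map sortof (X @ V))"
      by (rule oksorts_la2[OF oksorts_append[OF a]])
    moreover have "list_all2 has_sort [Pc (Num m)] [Integer]" by simp
    ultimately have "list_all2 has_sort (map Pc (t @ v) @ [Pc (Num m)]) (map sortof (X @ V) @ [Integer])"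
      by (rule list_all2_appendI)
    then show ?thesis by simp
  qed
  then show ?thesis unfolding SS_def using okX by auto
qed

lemma lenX: "oksorts X t \<Longrightarrow> length t = length X" by (simp add: oksorts_def)

lemma s0_vals:
  assumes "oksorts X t" "oksorts V v"
  shows "map (inst (X @ V @ [N]) (t @ v @ [p])) X = map Pc t"
    "map (inst (X @ V @ [N]) (t @ v @ [p])) V = map Pc v"
    "inst (X @ V @ [N]) (t @ v @ [p]) N = Pc p"
    "\<And>z. z \<in> set (X @ V) \<Longrightarrow> inst (X @ V @ [N]) (t @ v @ [p]) z = inst (X @ V) (t @ v) z"
    "\<And>z. z \<in> set U \<Longrightarrow> inst (X @ V @ [N]) (t @ v @ [p]) z = Var z"
proof -
  have lt: "length t = length X" "length v = length V" using assms by (auto simp: oksorts_def)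
  have d: "distinct (X @ V @ [N])" using okX by auto
  show "map (inst (X @ V @ [N]) (t @ v @ [p])) X = map Pc t"
    by (rule map_inst_app1) (use d lt in auto)
  have e: "inst (X @ V @ [N]) (t @ v @ [p]) = inst ((X @ V) @ [N]) ((t @ v) @ [p])" by simp
  show "map (inst (X @ V @ [N]) (t @ v @ [p])) V = map Pc v"
  proof -
    have "map (inst (X @ V @ [N]) (t @ v @ [p])) V = map (inst (X @ V) (t @ v)) V"
      unfolding e by (rule map_cong[OF refl]) (simp add: inst_append lt)
    also have "... = map Pc v" by (rule map_inst_app2) (use okX lt in auto)
    finally show ?thesis .
  qed
  show "inst (X @ V @ [N]) (t @ v @ [p]) N = Pc p"
  proof -
    have "N \<notin> set (X @ V)" using okX(7) by simp
    then have "inst ((X @ V) @ [N]) ((t @ v) @ [p]) N = inst [N] [p] N" by (simp add: inst_append lt)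
    also have "... = Pc p" by (simp add: inst_def)
    finally show ?thesis by simp
  qed
  show "\<And>z. z \<in> set (X @ V) \<Longrightarrow> inst (X @ V @ [N]) (t @ v @ [p]) z = inst (X @ V) (t @ v) z"
  proof -
    fix z assume z: "z \<in> set (X @ V)"
    have "length (t @ v) = length (X @ V)" using lt by simp
    then show "inst (X @ V @ [N]) (t @ v @ [p]) z = inst (X @ V) (t @ v) z"
      using inst_append[of "t @ v" "X @ V" "[N]" "[p]" z] z by simp
  qed
  show "\<And>z. z \<in> set U \<Longrightarrow> inst (X @ V @ [N]) (t @ v @ [p]) z = Var z"
    by (rule inst_notin) (use U_props(3) in auto)
qed

lemma ok_XVN: "oksorts X t \<Longrightarrow> oksorts V v \<Longrightarrow> oksorts (X @ V @ [N]) (t @ v @ [Num m])"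
  by (intro oksorts_append) (auto simp: oksorts_def okX)

lemma d0a:
  assumes "oksorts X t" "oksorts V v" "m \<le> 0"
  shows "nd True Ax2 \<Gamma> (SS t v (Pc (Num m)))"
proof -
  let ?A = "AllL (X @ V @ [N]) (Imp (Cmp Le (Var N) (Pc (Num 0))) (StartA X V F X (Var N)))"
  have "?A \<in> D0" unfolding D0_def using D0_ok_U by blast
  then have "nd True Ax2 \<Gamma> ?A" using D0_Ax2 by (auto intro: nd.axiom)
  then have "nd True Ax2 \<Gamma> (fsub (inst (X @ V @ [N]) (t @ v @ [Num m])) (Imp (Cmp Le (Var N) (Pc (Num 0))) (StartA X V F X (Var N))))"
    by (rule AllL_E) (use okX ok_XVN[OF assms(1,2)] in auto)
  then have i: "nd True Ax2 \<Gamma> (Imp (Cmp Le (Pc (Num m)) (Pc (Num 0))) (SS t v (Pc (Num m))))"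
    using s0_vals[OF assms(1,2), where p="Num m"] by (simp add: StartA_def SS_def comp_def)
  have "nd True Ax2 \<Gamma> (Cmp Le (Pc (Num m)) (Pc (Num 0)))" by (rule std_ax2) (use assms(3) in auto)
  then show ?thesis by (rule nd.impE[OF i])
qed

lemma d0b:
  assumes "oksorts X t" "oksorts V v"
  shows "nd True Ax2 \<Gamma> (Iff (SS t v (Pc (Num 1))) (FF t v))"
proof -
  let ?A = "AllL (X @ V) (Iff (StartA X V F X (Pc (Num 1))) F)"
  have "?A \<in> D0" unfolding D0_def using D0_ok_U by blast
  then have "nd True Ax2 \<Gamma> ?A" using D0_Ax2 by (auto intro: nd.axiom)
  then have "nd True Ax2 \<Gamma> (fsub (inst (X @ V) (t @ v)) (Iff (StartA X V F X (Pc (Num 1))) F))"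
    by (rule AllL_E) (use okX oksorts_append[OF assms] in auto)
  moreover have "map (inst (X @ V) (t @ v)) X = map Pc t" "map (inst (X @ V) (t @ v)) V = map Pc v"
    by (rule map_inst_app1, use okX lenX[OF assms(1)] in auto)
       (rule map_inst_app2, use okX assms in \<open>auto simp: oksorts_def\<close>)
  ultimately show ?thesis by (simp add: StartA_def SS_def FF_def Iff_def comp_def)
qed

definition BU :: "pc list \<Rightarrow> pc list \<Rightarrow> int \<Rightarrow> fm" where
  "BU t v m = And (lexT (map Pc t) (map Var U)) (Agg Start X V F (map Var U @ map Pc v @ [Pc (Num m)]))"

lemma d0c:
  assumes "oksorts X t" "oksorts V v" "m > 0"
  shows "nd True Ax2 \<Gamma> (Iff (SS t v (Add (Pc (Num m)) (Pc (Num 1)))) (And (FF t v) (ExL U (BU t v m))))"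
proof -
  let ?B = "Imp (Cmp Gt (Var N) (Pc (Num 0)))
            (Iff (StartA X V F X (Add (Var N) (Pc (Num 1))))
                 (And F (ExL U (And (lexless X U) (StartA X V F U (Var N))))))"
  let ?s = "inst (X @ V @ [N]) (t @ v @ [Num m])"
  have "AllL (X @ V @ [N]) ?B \<in> D0" unfolding D0_def using D0_ok_U by blast
  then have "nd True Ax2 \<Gamma> (AllL (X @ V @ [N]) ?B)" using D0_Ax2 by (auto intro: nd.axiom)
  then have h: "nd True Ax2 \<Gamma> (fsub ?s ?B)"
    by (rule AllL_E) (use okX ok_XVN[OF assms(1,2)] in auto)
  have sv: "map ?s X = map Pc t" "map ?s V = map Pc v" "?s N = Pc (Num m)"
    "\<And>z. z \<in> set U \<Longrightarrow> ?s z = Var z"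
    using s0_vals[OF assms(1,2), where p="Num m"] by auto
  have mU: "map ?s U = map Var U" using sv(4) by (induction U) auto
  have fF: "fsub ?s F = FF t v" unfolding FF_def
    by (rule fsub_cong) (use okX(3) s0_vals(4)[OF assms(1,2)] in auto)
  have ex: "fsub ?s (ExL U (And (lexless X U) (StartA X V F U (Var N)))) = ExL U (BU t v m)"
  proof -
    have "fsub ?s (ExL U (And (lexless X U) (StartA X V F U (Var N))))
       = ExL U (fsub ?s (And (lexless X U) (StartA X V F U (Var N))))"
      by (rule fsub_ExL_fix) (rule sv(4))
    also have "... = ExL U (BU t v m)"
      unfolding BU_def by (simp add: fsub_lexless StartA_def comp_def sv(1,2,3) mU)
    finally show ?thesis .
  qed
  have "fsub ?s ?B = Imp (Cmp Gt (Pc (Num m)) (Pc (Num 0)))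
     (Iff (SS t v (Add (Pc (Num m)) (Pc (Num 1)))) (And (FF t v) (ExL U (BU t v m))))"
    using sv fF ex by (simp add: fsub_Iff StartA_def SS_def comp_def)
  then have i: "nd True Ax2 \<Gamma> (Imp (Cmp Gt (Pc (Num m)) (Pc (Num 0)))
     (Iff (SS t v (Add (Pc (Num m)) (Pc (Num 1)))) (And (FF t v) (ExL U (BU t v m)))))"
    using h by simp
  have "nd True Ax2 \<Gamma> (Cmp Gt (Pc (Num m)) (Pc (Num 0)))" by (rule std_ax2) (use assms(3) in auto)
  then show ?thesis by (rule nd.impE[OF i])
qed

lemma BU_inst: "oksorts X u \<Longrightarrow> fsub (inst U u) (BU t v m) = And (lexT (map Pc t) (map Pc u)) (SS u v (Pc (Num m)))"
proof -
  assume a: "oksorts X u"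
  have l: "length u = length U" using a lenU by (simp add: oksorts_def)
  have m: "map (inst U u) U = map Pc u" using map_inst[OF U_props(2) l] .
  have lt: "map (tsub (inst U u)) (lexT_args) = lexT_args" if "lexT_args = map Pc t" for lexT_args
    using that by simp
  have q: "fsub (inst U u) (lexT (map Pc t) (map Var U)) = lexT (map Pc t) (map Pc u)"
  proof -
    have "\<And>us. length us = length t \<or> True \<Longrightarrow> fsub (inst U u) (lexT (map Pc t) us) = lexT (map Pc t) (map (tsub (inst U u)) us)"
    proof -
      fix us :: "tm list"
      show "fsub (inst U u) (lexT (map Pc t) us) = lexT (map Pc t) (map (tsub (inst U u)) us)"
        by (induction "map Pc t" us arbitrary: t rule: lexT.induct) auto
    qed
    then show ?thesis using m by (simp add: comp_def)
  qed
  show ?thesis unfolding BU_def SS_def using q m by (simp add: comp_def)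
qed

lemma lexT_wf_fv: "(\<And>a. a \<in> set as \<Longrightarrow> gen_tm a) \<Longrightarrow> (\<And>b. b \<in> set bs \<Longrightarrow> gen_tm b)
  \<Longrightarrow> wf (lexT as bs) \<and> fv (lexT as bs) \<subseteq> (\<Union>a\<in>set as. fvt a) \<union> (\<Union>b\<in>set bs. fvt b)"
proof (induction as bs rule: lexT.induct)
  case (1 a as b bs)
  have "wf (lexT as bs) \<and> fv (lexT as bs) \<subseteq> (\<Union>a\<in>set as. fvt a) \<union> (\<Union>b\<in>set bs. fvt b)"
    by (rule "1.IH") (use "1.prems" in auto)
  then show ?case using "1.prems" by auto
qed auto

lemma BU_props: "oksorts V v \<Longrightarrow> wf (BU t v m) \<and> fv (BU t v m) \<subseteq> set U"
proof -
  assume a: "oksorts V v"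
  have "wf (lexT (map Pc t) (map Var U)) \<and> fv (lexT (map Pc t) (map Var U)) \<subseteq>
     (\<Union>a\<in>set (map Pc t). fvt a) \<union> (\<Union>b\<in>set (map Var U). fvt b)"
    by (rule lexT_wf_fv) auto
  then have l: "wf (lexT (map Pc t) (map Var U)) \<and> fv (lexT (map Pc t) (map Var U)) \<subseteq> set U"
    by auto
  have "list_all2 has_sort (map Var U) (map sortof U)"
    by (auto simp: list_all2_conv_all_nth has_sort_Var)
  then have "list_all2 has_sort (map Var U) (map sortof X)" using U_props(1) by simp
  moreover have "list_all2 has_sort (map Pc v) (map sortof V)" by (rule oksorts_la2[OF a])
  ultimately have "list_all2 has_sort (map Var U @ map Pc v @ [Pc (Num m)]) (map sortof X @ map sortof V @ [Integer])"
    by (intro list_all2_appendI) auto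
  then show ?thesis using l okX unfolding BU_def by auto
qed

lemma ss_add: "oksorts X t \<Longrightarrow> oksorts V v \<Longrightarrow> nd True Ax2 \<Gamma> (SS t v (Add (Pc (Num m)) (Pc (Num 1))))
  \<Longrightarrow> nd True Ax2 \<Gamma> (SS t v (Pc (Num (m + 1))))"
proof -
  assume a: "nd True Ax2 \<Gamma> (SS t v (Add (Pc (Num m)) (Pc (Num 1))))"
  let ?G = "Agg Start X V F (map Pc t @ map Pc v @ [Var N])"
  have e: "nd True Ax2 \<Gamma> (Cmp Eq (Add (Pc (Num m)) (Pc (Num 1))) (Pc (Num (m + 1))))"
    by (rule std_ax2) auto
  have sub: "\<And>r. subst N r ?G = SS t v r" by (simp add: SS_def comp_def)
  have a': "nd True Ax2 \<Gamma> (subst N (Add (Pc (Num m)) (Pc (Num 1))) ?G)" using a by (simp only: sub)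
  have "nd True Ax2 \<Gamma> (subst N (Pc (Num (m + 1))) ?G)"
    by (rule nd.eqE[OF e a']) (use okX(6) in simp_all)
  then show ?thesis by (simp only: sub)
qed

lemma ss_add_rev: "oksorts X t \<Longrightarrow> oksorts V v \<Longrightarrow> nd True Ax2 \<Gamma> (SS t v (Pc (Num (m + 1))))
  \<Longrightarrow> nd True Ax2 \<Gamma> (SS t v (Add (Pc (Num m)) (Pc (Num 1))))"
proof -
  assume a: "nd True Ax2 \<Gamma> (SS t v (Pc (Num (m + 1))))"
  let ?G = "Agg Start X V F (map Pc t @ map Pc v @ [Var N])"
  have e: "nd True Ax2 \<Gamma> (Cmp Eq (Pc (Num (m + 1))) (Add (Pc (Num m)) (Pc (Num 1))))"
    by (rule std_ax2) auto
  have sub: "\<And>r. subst N r ?G = SS t v r" by (simp add: SS_def comp_def)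
  have a': "nd True Ax2 \<Gamma> (subst N (Pc (Num (m + 1))) ?G)" using a by (simp only: sub)
  have "nd True Ax2 \<Gamma> (subst N (Add (Pc (Num m)) (Pc (Num 1))) ?G)"
    by (rule nd.eqE[OF e a']) (use okX(6) in simp_all)
  then show ?thesis by (simp only: sub)
qed

lemma chain_build:
  "sorted_wrt lexlt ts \<Longrightarrow> ts \<noteq> [] \<Longrightarrow> (\<forall>t\<in>set ts. oksorts X t) \<Longrightarrow> oksorts V v
   \<Longrightarrow> (\<forall>t\<in>set ts. nd True Ax2 \<Gamma> (FF t v))
   \<Longrightarrow> nd True Ax2 \<Gamma> (SS (hd ts) v (Pc (Num (int (length ts)))))"
proof (induction ts)
  case Nil then show ?case by simp
next
  case (Cons t ts')
  have ot: "oksorts X t" using Cons.prems(3) by simp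
  have ft: "nd True Ax2 \<Gamma> (FF t v)" using Cons.prems(5) by simp
  show ?case
  proof (cases ts')
    case Nil
    then show ?thesis using nd_iffD2[OF d0b[OF ot Cons.prems(4)] ft] by simp
  next
    case (Cons u rest)
    have ou: "oksorts X u" using Cons.prems(3) \<open>ts' = u # rest\<close> by simp
    have ih0: "nd True Ax2 \<Gamma> (SS (hd ts') v (Pc (Num (int (length ts')))))"
    proof (rule Cons.IH)
      show "sorted_wrt lexlt ts'" using Cons.prems(1) by simp
      show "ts' \<noteq> []" using \<open>ts' = u # rest\<close> by simp
      show "\<forall>t\<in>set ts'. oksorts X t" using Cons.prems(3) by simp
      show "oksorts V v" by (rule Cons.prems(4))
      show "\<forall>t\<in>set ts'. nd True Ax2 \<Gamma> (FF t v)" using Cons.prems(5) by simp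
    qed
    then have ih: "nd True Ax2 \<Gamma> (SS u v (Pc (Num (int (length ts')))))"
      using \<open>ts' = u # rest\<close> by simp
    define m where "m = int (length ts')"
    have mpos: "m > 0" unfolding m_def using \<open>ts' = u # rest\<close> by simp
    have ltu: "lexlt t u" using Cons.prems(1) \<open>ts' = u # rest\<close> by simp
    have lt: "nd True Ax2 \<Gamma> (lexT (map Pc t) (map Pc u))"
      by (rule std_ax2) (use lexT_props[of t u] ltu in auto)
    have "nd True Ax2 \<Gamma> (ExL U (BU t v m))"
    proof (rule ExL_I)
      show "wf (BU t v m)" using BU_props[OF Cons.prems(4)] by simp
      show "distinct U" by (rule U_props)
      show "oksorts U u" using ou oksorts_U by simp
      show "nd True Ax2 \<Gamma> (fsub (inst U u) (BU t v m))"
        unfolding BU_inst[OF ou] using nd.andI[OF lt ih] m_def by simp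
    qed
    then have "nd True Ax2 \<Gamma> (And (FF t v) (ExL U (BU t v m)))" by (rule nd.andI[OF ft])
    then have "nd True Ax2 \<Gamma> (SS t v (Add (Pc (Num m)) (Pc (Num 1))))"
      by (rule nd_iffD2[OF d0c[OF ot Cons.prems(4) mpos]])
    then have "nd True Ax2 \<Gamma> (SS t v (Pc (Num (m + 1))))" by (rule ss_add[OF ot Cons.prems(4)])
    moreover have "int (length (t # ts')) = m + 1" by (simp add: m_def)
    ultimately show ?thesis by (simp only:) simp
  qed
qed

lemma FF_set_closed: "(\<forall>u\<in>set ts. oksorts X u) \<Longrightarrow> oksorts V v \<Longrightarrow> closedS (set (map (\<lambda>u. FF u v) ts))"
  using FF_props by (auto simp: closedS_def)

lemma chain_extract:
  "closedS C \<Longrightarrow> oksorts X t \<Longrightarrow> oksorts V v \<Longrightarrow> nd True Ax2 C (SS t v (Pc (Num (int m)))) \<Longrightarrow> m \<ge> 1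
   \<Longrightarrow> wf G \<Longrightarrow> fv G = {}
   \<Longrightarrow> (\<And>ts. sorted_wrt lexlt (t # ts) \<Longrightarrow> length ts + 1 = m \<Longrightarrow> (\<forall>u\<in>set ts. oksorts X u)
        \<Longrightarrow> nd True Ax2 (set (map (\<lambda>u. FF u v) (t # ts)) \<union> C) G)
   \<Longrightarrow> nd True Ax2 C G"
proof (induction m arbitrary: t C)
  case 0 then show ?case by simp
next
  case (Suc m)
  show ?case
  proof (cases "m = 0")
    case True
    have "nd True Ax2 C (FF t v)"
      using nd_iffD1[OF d0b[OF Suc.prems(2,3)]] Suc.prems(4) True by simp
    moreover have "nd True Ax2 (insert (FF t v) C) G"
      using Suc.prems(8)[of "[]"] True by simp
    ultimately show ?thesis using FF_props[OF Suc.prems(2,3)] by (simp add: nd_cut)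
  next
    case False
    define mi where "mi = int m"
    have mpos: "mi > 0" using False mi_def by simp
    have "int (Suc m) = mi + 1" using mi_def by simp
    then have "nd True Ax2 C (SS t v (Pc (Num (mi + 1))))" using Suc.prems(4) by metis
    then have "nd True Ax2 C (SS t v (Add (Pc (Num mi)) (Pc (Num 1))))" by (rule ss_add_rev[OF Suc.prems(2,3)])
    then have h: "nd True Ax2 C (And (FF t v) (ExL U (BU t v mi)))"
      by (rule nd_iffD1[OF d0c[OF Suc.prems(2,3) mpos]])
    have fFt: "nd True Ax2 C (FF t v)" using h by (rule nd.andE1)
    have ex: "nd True Ax2 C (ExL U (BU t v mi))" using h by (rule nd.andE2)
    show ?thesis
    proof (rule ExL_E[OF Suc.prems(1) ex U_props(2)])
      show "fv (BU t v mi) \<subseteq> set U" "wf (BU t v mi)" using BU_props[OF Suc.prems(3)] by auto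
      show "wf G" "fv G = {}" by (rule Suc.prems)+
      fix u assume "oksorts U u"
      then have ou: "oksorts X u" using oksorts_U by simp
      let ?H = "And (lexT (map Pc t) (map Pc u)) (SS u v (Pc (Num mi)))"
      have fH: "fv ?H = {}" "wf ?H" using lexT_props[of t u] SS_props[OF ou Suc.prems(3), of mi] by auto
      show "nd True Ax2 (insert (fsub (inst U u) (BU t v mi)) C) G"
        unfolding BU_inst[OF ou]
      proof (cases "lexlt t u")
        case False
        have "nd True Ax2 (insert ?H C) Bot"
        proof (rule std_bot)
          show "nd True Ax2 (insert ?H C) (lexT (map Pc t) (map Pc u))"
            by (rule nd.andE1[OF nd.hyp[of ?H]]) simp
        qed (use lexT_props[of t u] False in auto)
        then show "nd True Ax2 (insert ?H C) G" by (rule nd.botE) (rule Suc.prems)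
      next
        case True
        have cC: "closedS (insert ?H C)" using fH Suc.prems(1) by (simp add: closedS_insert)
        show "nd True Ax2 (insert ?H C) G"
        proof (rule Suc.IH[OF cC ou Suc.prems(3)])
          show "nd True Ax2 (insert ?H C) (SS u v (Pc (Num (int m))))"
            using nd.andE2[OF nd.hyp[of ?H "insert ?H C"]] mi_def by simp
          show "1 \<le> m" using False by simp
          show "wf G" "fv G = {}" by (rule Suc.prems)+
          fix ts assume ts: "sorted_wrt lexlt (u # ts)" "length ts + 1 = m" "\<forall>w\<in>set ts. oksorts X w"
          have s2: "sorted_wrt lexlt (t # u # ts)" using ts(1) True lexlt_trans by auto
          have g: "nd True Ax2 (set (map (\<lambda>w. FF w v) (t # u # ts)) \<union> C) G"
            by (rule Suc.prems(8)[OF s2]) (use ts ou in auto)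
          let ?Ctx = "set (map (\<lambda>w. FF w v) (u # ts)) \<union> insert ?H C"
          have cl: "closedS (set (map (\<lambda>w. FF w v) (t # u # ts)))"
            by (rule FF_set_closed) (use ts ou Suc.prems(2) Suc.prems(3) in auto)
          have g2: "nd True Ax2 (insert (FF t v) ?Ctx) G"
            by (rule nd_weaken[OF g]) (use fH in auto)
          have f2: "nd True Ax2 ?Ctx (FF t v)"
            by (rule nd_weaken[OF fFt]) (use fH cl in \<open>auto simp: closedS_def\<close>)
          show "nd True Ax2 ?Ctx G"
            by (rule nd_cut[OF g2 f2]) (use FF_props[OF Suc.prems(2,3)] in auto)
        qed
      qed
    qed
  qed
qed

definition AL :: "pc list \<Rightarrow> pc \<Rightarrow> fm" where "AL v r = Agg Atleast X V F (map Pc v @ [Pc r])"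
definition AM :: "pc list \<Rightarrow> pc \<Rightarrow> fm" where "AM v r = Agg Atmost X V F (map Pc v @ [Pc r])"

definition Ysn :: "nat \<Rightarrow> var list list" where "Ysn k = (SOME Ys. copies_ok X V F Ys k)"

lemma Ysn_ok: "copies_ok X V F (Ysn k) k"
proof -
  have fin: "finite (set X \<union> set V \<union> allvars F)" by (simp add: finite_allvars)
  have "\<exists>Ys. length Ys = k \<and> (\<forall>Y\<in>set Ys. map sortof Y = map sortof X)
    \<and> distinct (concat Ys) \<and> set (concat Ys) \<inter> (set X \<union> set V \<union> allvars F) = {}"
    by (rule fresh_copies[OF fin])
  then have "\<exists>Ys. copies_ok X V F Ys k" unfolding copies_ok_def .
  then show ?thesis unfolding Ysn_def by (rule someI_ex)
qed

lemma AL_props: "oksorts V v \<Longrightarrow> fv (AL v r) = {} \<and> wf (AL v r)"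
proof -
  assume a: "oksorts V v"
  have "list_all2 has_sort (map Pc v @ [Pc r]) (map sortof V @ [General])"
    using oksorts_la2[OF a] by (intro list_all2_appendI) auto
  then show ?thesis unfolding AL_def using okX by auto
qed

lemma AM_props: "oksorts V v \<Longrightarrow> fv (AM v r) = {} \<and> wf (AM v r)"
proof -
  assume a: "oksorts V v"
  have "list_all2 has_sort (map Pc v @ [Pc r]) (map sortof V @ [General])"
    using oksorts_la2[OF a] by (intro list_all2_appendI) auto
  then show ?thesis unfolding AM_def using okX by auto
qed

lemma dge: "oksorts V v \<Longrightarrow> nd True Ax2 \<Gamma> (Iff (AL v r) (fsub (inst V v) (exists_ge X F (Ysn (cnt_ge r)) r)))"
proof -
  assume a: "oksorts V v"
  let ?A = "AllL V (Iff (Agg Atleast X V F (map Var V @ [Pc r])) (exists_ge X F (Ysn (cnt_ge r)) r))"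
  have "?A \<in> Defs_ax" unfolding Defs_ax_def using okX(8) Ysn_ok by blast
  then have "nd True Ax2 \<Gamma> ?A" using Defs_Ax2 by (auto intro: nd.axiom)
  then have "nd True Ax2 \<Gamma> (fsub (inst V v) (Iff (Agg Atleast X V F (map Var V @ [Pc r])) (exists_ge X F (Ysn (cnt_ge r)) r)))"
    by (rule AllL_E) (use okX a in auto)
  moreover have "map (inst V v) V = map Pc v" by (rule map_inst) (use okX a in \<open>auto simp: oksorts_def\<close>)
  ultimately show ?thesis by (simp add: fsub_Iff AL_def comp_def)
qed

lemma dle: "oksorts V v \<Longrightarrow> nd True Ax2 \<Gamma> (Iff (AM v r) (fsub (inst V v) (exists_le X F (Ysn (cnt_le r)) r)))"
proof -
  assume a: "oksorts V v"
  let ?A = "AllL V (Iff (Agg Atmost X V F (map Var V @ [Pc r])) (exists_le X F (Ysn (cnt_le r)) r))"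
  have "?A \<in> Defs_ax" unfolding Defs_ax_def using okX(8) Ysn_ok by blast
  then have "nd True Ax2 \<Gamma> ?A" using Defs_Ax2 by (auto intro: nd.axiom)
  then have "nd True Ax2 \<Gamma> (fsub (inst V v) (Iff (Agg Atmost X V F (map Var V @ [Pc r])) (exists_le X F (Ysn (cnt_le r)) r)))"
    by (rule AllL_E) (use okX a in auto)
  moreover have "map (inst V v) V = map Pc v" by (rule map_inst) (use okX a in \<open>auto simp: oksorts_def\<close>)
  ultimately show ?thesis by (simp add: fsub_Iff AM_def comp_def)
qed

lemma inst_comp: "length v = length xs \<Longrightarrow> fsub (inst ys ps) (fsub (inst xs v) B) = fsub (inst (xs @ ys) (v @ ps)) B"
proof -
  assume l: "length v = length xs"
  have "fsub (inst ys ps) (fsub (inst xs v) B) = fsub (\<lambda>z. tsub (inst ys ps) (inst xs v z)) B"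
    by (rule fsub_comp[OF good_inst])
  also have "(\<lambda>z. tsub (inst ys ps) (inst xs v z)) = inst (xs @ ys) (v @ ps)"
  proof
    fix z show "tsub (inst ys ps) (inst xs v z) = inst (xs @ ys) (v @ ps) z"
    proof (cases "z \<in> set xs")
      case True
      then obtain p where "inst xs v z = Pc p" using inst_in[of v xs z] l by auto
      then show ?thesis using True by (simp add: inst_append l)
    next
      case False then show ?thesis by (simp add: inst_append l inst_notin)
    qed
  qed
  finally show ?thesis .
qed

lemma sfacts:
  assumes c: "copies_ok X V F Ys k" and ov: "oksorts V v" and op: "oksorts (concat Ys) ps" and i: "i < length Ys"
  shows "map (inst (V @ concat Ys) (v @ ps)) (Ys ! i) = map Pc (split_like Ys ps ! i)"
    "fsub (inst (V @ concat Ys) (v @ ps)) (rename X (Ys ! i) F) = FF (split_like Ys ps ! i) v"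
    "oksorts X (split_like Ys ps ! i)"
proof -
  let ?s = "inst (V @ concat Ys) (v @ ps)"
  let ?t = "split_like Ys ps ! i"
  have lv: "length v = length V" using ov by (simp add: oksorts_def)
  have lp: "length ps = length (concat Ys)" using op by (simp add: oksorts_def)
  have dc: "distinct (concat Ys)" and disj: "set (concat Ys) \<inter> (set X \<union> set V \<union> allvars F) = {}"
    and srt: "\<forall>Y\<in>set Ys. map sortof Y = map sortof X" using c by (auto simp: copies_ok_def)
  have Yi: "Ys ! i \<in> set Ys" using i by simp
  have sY: "map sortof (Ys ! i) = map sortof X" using srt Yi by blast
  have lY: "length (Ys ! i) = length X" using sY by (metis length_map)
  have svar: "\<And>z. z \<in> set (concat Ys) \<Longrightarrow> ?s z = inst (concat Ys) ps z"
    using disj by (auto simp: inst_append lv)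
  have "map (map (inst (concat Ys) ps)) Ys = map (map Pc) (split_like Ys ps)"
    by (rule map_inst_concat[OF dc lp])
  then have "map (inst (concat Ys) ps) (Ys ! i) = map Pc ?t"
    using i length_split_like[of Ys ps] by (metis nth_map)
  moreover have "map ?s (Ys ! i) = map (inst (concat Ys) ps) (Ys ! i)"
    using svar Yi by (auto intro!: map_cong)
  ultimately show m: "map ?s (Ys ! i) = map Pc ?t" by simp
  show ot: "oksorts X ?t"
    using oksorts_split_like[OF op i] oksorts_same[OF sY] by simp
  have lt: "length ?t = length X" using ot by (simp add: oksorts_def)
  have dY: "distinct (Ys ! i)" using dc Yi by (metis distinct_concat_iff)
  have disjY: "set (Ys ! i) \<inter> (set X \<union> allvars F) = {}" using disj Yi by auto
  have "fsub ?s (rename X (Ys ! i) F) = fsub (\<lambda>z. case map_of (zip X (Ys ! i)) z of Some y \<Rightarrow> ?s y | None \<Rightarrow> ?s z) F"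
    unfolding rename_def
    by (rule fsub_foldl_rename) (use okX(1) lY dY disjY in auto)
  also have "... = FF ?t v" unfolding FF_def
  proof (rule fsub_cong)
    fix z assume z: "z \<in> fv F"
    then have zXV: "z \<in> set X \<or> z \<in> set V" using okX(3) by auto
    show "(case map_of (zip X (Ys ! i)) z of Some y \<Rightarrow> ?s y | None \<Rightarrow> ?s z) = inst (X @ V) (?t @ v) z"
    proof (cases "z \<in> set X")
      case True
      then obtain j where j: "j < length X" "z = X ! j" by (metis in_set_conv_nth)
      have "map_of (zip X (Ys ! i)) z = Some (Ys ! i ! j)"
        using j lY okX(1) by (simp add: map_of_zip_nth)
      moreover have "?s (Ys ! i ! j) = Pc (?t ! j)" using m j lY lt by (metis nth_map)
      moreover have "inst (X @ V) (?t @ v) z = Pc (?t ! j)"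
      proof -
        have "inst (X @ V) (?t @ v) ((X @ V) ! j) = Pc ((?t @ v) ! j)"
          by (rule inst_nth) (use okX(1) lt lv j in auto)
        then show ?thesis using j lt by (simp add: nth_append)
      qed
      ultimately show ?thesis by simp
    next
      case False
      then have zV: "z \<in> set V" using zXV by simp
      have "map_of (zip X (Ys ! i)) z = None" using False lY by simp
      moreover have "?s z = inst V v z" using zV by (simp add: inst_append lv)
      moreover have "inst (X @ V) (?t @ v) z = inst V v z" using False by (simp add: inst_append lt)
      ultimately show ?thesis by simp
    qed
  qed
  finally show "fsub ?s (rename X (Ys ! i) F) = FF ?t v" .
qed

definition RB :: "pc list \<Rightarrow> pc \<Rightarrow> fm" where
  "RB v r = And (Agg Start X V F (map Var X @ map Pc v @ [Var N])) (Cmp Ge (Var N) (Pc r))"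

definition RM :: "pc list \<Rightarrow> pc \<Rightarrow> fm" where
  "RM v r = Imp (Agg Start X V F (map Var X @ map Pc v @ [Var N])) (Cmp Le (Var N) (Pc r))"

lemma XN_vals: "oksorts X t \<Longrightarrow> map (inst (X @ [N]) (t @ [p])) X = map Pc t \<and> inst (X @ [N]) (t @ [p]) N = Pc p"
proof -
  assume a: "oksorts X t"
  have lt: "length t = length X" using a by (simp add: oksorts_def)
  have d: "distinct (X @ [N])" using okX by auto
  have "map (inst (X @ [N]) (t @ [p])) X = map Pc t" by (rule map_inst_app1[OF d lt])
  moreover have "inst (X @ [N]) (t @ [p]) N = Pc p"
  proof -
    have "N \<notin> set X" using okX(7) by simp
    then have "inst (X @ [N]) (t @ [p]) N = inst [N] [p] N" by (simp add: inst_append lt)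
    then show ?thesis by (simp add: inst_def)
  qed
  ultimately show ?thesis by simp
qed

lemma RB_inst: "oksorts X t \<Longrightarrow> fsub (inst (X @ [N]) (t @ [p])) (RB v r) = And (SS t v (Pc p)) (Cmp Ge (Pc p) (Pc r))"
  using XN_vals[of t p] by (simp add: RB_def SS_def comp_def)

lemma RM_inst: "oksorts X t \<Longrightarrow> fsub (inst (X @ [N]) (t @ [p])) (RM v r) = Imp (SS t v (Pc p)) (Cmp Le (Pc p) (Pc r))"
  using XN_vals[of t p] by (simp add: RM_def SS_def comp_def)

lemma Start_la2: "oksorts V v \<Longrightarrow> list_all2 has_sort (map Var X @ map Pc v @ [Var N]) (map sortof (X @ V) @ [Integer])"
proof -
  assume a: "oksorts V v"
  have "list_all2 has_sort (map Var X) (map sortof X)" by (auto simp: list_all2_conv_all_nth has_sort_Var)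
  moreover have "list_all2 has_sort (map Pc v @ [Var N]) (map sortof V @ [Integer])"
    using oksorts_la2[OF a] okX(6) by (intro list_all2_appendI) auto
  ultimately show ?thesis by (simp add: list_all2_appendI)
qed

lemma RB_props: "oksorts V v \<Longrightarrow> wf (RB v r) \<and> fv (RB v r) \<subseteq> set (X @ [N])"
  using Start_la2[of v] okX unfolding RB_def by auto

lemma RM_props: "oksorts V v \<Longrightarrow> wf (RM v r) \<and> fv (RM v r) \<subseteq> set (X @ [N])"
  using Start_la2[of v] okX unfolding RM_def by auto

lemma oksorts_XN: "oksorts (X @ [N]) ps \<Longrightarrow> \<exists>t k. ps = t @ [Num k] \<and> oksorts X t"
proof -
  assume a: "oksorts (X @ [N]) ps"
  have s: "oksorts X (take (length X) ps)" "oksorts [N] (drop (length X) ps)" using oksorts_split_app[OF a] by auto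
  then obtain q where q: "drop (length X) ps = [q]" by (cases "drop (length X) ps") (auto simp: oksorts_def)
  then have "q \<in> dom_of Integer" using s(2) okX(6) by (auto simp: oksorts_def)
  then obtain k where qk: "q = Num k" by auto
  have "ps = take (length X) ps @ [Num k]" using append_take_drop_id[of "length X" ps] q qk by simp
  then show ?thesis using s(1) by blast
qed

lemma oksorts_XN_intro: "oksorts X t \<Longrightarrow> oksorts (X @ [N]) (t @ [Num k])"
  by (rule oksorts_append) (auto simp: oksorts_def okX)

definition t0 :: "pc list" where "t0 = map (\<lambda>_. Num 0) X"

lemma t0_ok: "oksorts X t0"
proof -
  have "Num 0 \<in> dom_of s" for s by (cases s) auto
  then show ?thesis by (simp add: oksorts_def t0_def)
qed

definition Bge :: "var list list \<Rightarrow> fm" where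
  "Bge Ys = And (Conj (map (\<lambda>Y. rename X Y F) Ys)) (Conj (map (\<lambda>(Y, Z). tup_ne Y Z) (pairs Ys)))"

definition Ble :: "var list list \<Rightarrow> fm" where
  "Ble Ys = Imp (Conj (map (\<lambda>Y. rename X Y F) Ys)) (Disj (map (\<lambda>(Y, Z). tup_eq Y Z) (pairs Ys)))"

lemma wf_foldl_rename: "(\<forall>(x, y)\<in>set ps. sortof y = sortof x) \<Longrightarrow> wf G \<Longrightarrow> wf (foldl (\<lambda>G (x, y). subst x (Var y) G) G ps)"
proof (induction ps arbitrary: G)
  case Nil then show ?case by simp
next
  case (Cons p ps)
  obtain x y where p: "p = (x, y)" by (cases p)
  have "has_sort (Var y) (sortof x)" using Cons.prems(1) p has_sort_Var[of y] by auto
  then have "wf (subst x (Var y) G)" using Cons.prems(2) by (rule wf_subst)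
  then show ?case using Cons.IH Cons.prems(1) p by simp
qed

lemma wf_rename: "map sortof W = map sortof X \<Longrightarrow> wf (rename X W F)"
proof -
  assume a: "map sortof W = map sortof X"
  have "\<forall>(x, y)\<in>set (zip X W). sortof y = sortof x"
  proof (intro ballI)
    fix p assume "p \<in> set (zip X W)"
    then obtain j where j: "j < length X" "j < length W" "p = (X ! j, W ! j)" by (auto simp: set_zip)
    have "map sortof W ! j = map sortof X ! j" using a by simp
    then have "sortof (W ! j) = sortof (X ! j)" using j by simp
    then show "case p of (x, y) \<Rightarrow> sortof y = sortof x" using j(3) by simp
  qed
  then show ?thesis unfolding rename_def using okX(2) by (rule wf_foldl_rename)
qed

lemma wf_tup: "wf (tup_ne W Z) \<and> wf (tup_eq W Z)"
  unfolding tup_ne_def tup_eq_def by (auto intro!: wf_Disj wf_Conj)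

lemma wf_Bge: "copies_ok X V F Ys k \<Longrightarrow> wf (Bge Ys) \<and> wf (Ble Ys)"
proof -
  assume c: "copies_ok X V F Ys k"
  have "\<And>W. W \<in> set Ys \<Longrightarrow> wf (rename X W F)" using c wf_rename by (auto simp: copies_ok_def)
  then have "wf (Conj (map (\<lambda>Y. rename X Y F) Ys))" by (intro wf_Conj) auto
  moreover have "wf (Conj (map (\<lambda>(Y, Z). tup_ne Y Z) (pairs Ys)))" by (intro wf_Conj) (auto simp: wf_tup)
  moreover have "wf (Disj (map (\<lambda>(Y, Z). tup_eq Y Z) (pairs Ys)))" by (intro wf_Disj) (auto simp: wf_tup)
  ultimately show ?thesis by (simp add: Bge_def Ble_def)
qed

lemma ge_hyp:
  assumes c: "copies_ok X V F Ys k" and ov: "oksorts V v" and op: "oksorts (concat Ys) ps"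
    and h: "nd om Ax2 \<Gamma> (fsub (inst (concat Ys) ps) (fsub (inst V v) (Bge Ys)))"
  shows "\<And>i. i < k \<Longrightarrow> nd om Ax2 \<Gamma> (FF (split_like Ys ps ! i) v)"
    "\<And>i j. i < j \<Longrightarrow> j < k \<Longrightarrow> nd om Ax2 \<Gamma> (neTm (map Pc (split_like Ys ps ! i)) (map Pc (split_like Ys ps ! j)))"
proof -
  let ?s = "inst (V @ concat Ys) (v @ ps)"
  have lv: "length v = length V" using ov by (simp add: oksorts_def)
  have lk: "length Ys = k" using c by (simp add: copies_ok_def)
  have h2: "nd om Ax2 \<Gamma> (fsub ?s (Bge Ys))" using h by (simp add: inst_comp[OF lv])
  have e: "fsub ?s (Bge Ys) = And (Conj (map (\<lambda>Y. fsub ?s (rename X Y F)) Ys))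
      (Conj (map (\<lambda>p. fsub ?s (case p of (Y, Z) \<Rightarrow> tup_ne Y Z)) (pairs Ys)))"
    by (simp add: Bge_def fsub_Conj comp_def)
  have h3: "nd om Ax2 \<Gamma> (And (Conj (map (\<lambda>Y. fsub ?s (rename X Y F)) Ys))
      (Conj (map (\<lambda>p. fsub ?s (case p of (Y, Z) \<Rightarrow> tup_ne Y Z)) (pairs Ys))))" using h2 unfolding e .
  have c1: "nd om Ax2 \<Gamma> (Conj (map (\<lambda>Y. fsub ?s (rename X Y F)) Ys))" using h3 by (rule nd.andE1)
  have c2: "nd om Ax2 \<Gamma> (Conj (map (\<lambda>p. fsub ?s (case p of (Y, Z) \<Rightarrow> tup_ne Y Z)) (pairs Ys)))"
    using h3 by (rule nd.andE2)
  show "nd om Ax2 \<Gamma> (FF (split_like Ys ps ! i) v)" if i: "i < k" for i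
  proof -
    have "nd om Ax2 \<Gamma> (fsub ?s (rename X (Ys ! i) F))"
      by (rule nd_conjE[OF c1]) (use i lk in auto)
    then show ?thesis using sfacts(2)[OF c ov op, of i] i lk by simp
  qed
  show "nd om Ax2 \<Gamma> (neTm (map Pc (split_like Ys ps ! i)) (map Pc (split_like Ys ps ! j)))"
    if ij: "i < j" "j < k" for i j
  proof -
    have "(Ys ! i, Ys ! j) \<in> set (pairs Ys)" by (rule in_pairs) (use ij lk in auto)
    then have "fsub ?s (tup_ne (Ys ! i) (Ys ! j)) \<in> set (map (\<lambda>p. fsub ?s (case p of (Y, Z) \<Rightarrow> tup_ne Y Z)) (pairs Ys))"
      by (metis (no_types, lifting) case_prod_conv image_eqI list.set_map)
    then have "nd om Ax2 \<Gamma> (fsub ?s (tup_ne (Ys ! i) (Ys ! j)))"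
      by (rule nd_conjE[OF c2])
    then show ?thesis using sfacts(1)[OF c ov op, of i] sfacts(1)[OF c ov op, of j] ij lk
      by (simp add: fsub_tup_ne)
  qed
qed

lemma Bge_form: "fsub s (Bge Ys) = And (Conj (map (\<lambda>Y. fsub s (rename X Y F)) Ys))
      (Conj (map (\<lambda>p. fsub s (case p of (Y, Z) \<Rightarrow> tup_ne Y Z)) (pairs Ys)))"
  by (simp add: Bge_def fsub_Conj comp_def)

lemma Ble_form: "fsub s (Ble Ys) = Imp (Conj (map (\<lambda>Y. fsub s (rename X Y F)) Ys))
      (Disj (map (\<lambda>p. fsub s (case p of (Y, Z) \<Rightarrow> tup_eq Y Z)) (pairs Ys)))"
  by (simp add: Ble_def fsub_Conj fsub_Disj comp_def)

lemma tuples_concat: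
  assumes c: "copies_ok X V F Ys k" and lt: "length ts = k" and ot: "\<forall>t\<in>set ts. oksorts X t"
  shows "oksorts (concat Ys) (concat ts)" "split_like Ys (concat ts) = ts"
proof -
  have lk: "length Ys = k" and srt: "\<forall>Y\<in>set Ys. map sortof Y = map sortof X" using c by (auto simp: copies_ok_def)
  have oi: "oksorts (Ys ! i) (ts ! i)" if i: "i < length Ys" for i
  proof -
    have "Ys ! i \<in> set Ys" using i by simp
    then have m: "map sortof (Ys ! i) = map sortof X" using srt by blast
    have "ts ! i \<in> set ts" using i lt lk by simp
    then have "oksorts X (ts ! i)" using ot by blast
    then show ?thesis using oksorts_same[OF m] by simp
  qed
  show "oksorts (concat Ys) (concat ts)"
  proof (rule oksorts_concat)
    show "length ts = length Ys" using lt lk by simp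
    fix i assume "i < length Ys" then show "oksorts (Ys ! i) (ts ! i)" by (rule oi)
  qed
  have "map length ts = map length Ys"
  proof (rule nth_equalityI)
    show "length (map length ts) = length (map length Ys)" using lt lk by simp
    fix i assume "i < length (map length ts)"
    then have i: "i < length Ys" using lt lk by simp
    then show "map length ts ! i = map length Ys ! i" using oi[OF i] lt lk by (simp add: oksorts_def)
  qed
  then show "split_like Ys (concat ts) = ts" by (rule split_like_concat)
qed

lemma set_map_pairs: "A \<in> set (map f (pairs Ys)) \<Longrightarrow> \<exists>i j. i < j \<and> j < length Ys \<and> A = f (Ys ! i, Ys ! j)"
proof -
  assume "A \<in> set (map f (pairs Ys))"
  then obtain p where p: "p \<in> set (pairs Ys)" "A = f p" by auto
  obtain i j where "i < j" "j < length Ys" "p = (Ys ! i, Ys ! j)" using pairs_in[OF p(1)] by blast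
  then show ?thesis using p(2) by blast
qed

lemma ge_intro:
  assumes c: "copies_ok X V F Ys k" and ov: "oksorts V v" and lt: "length ts = k" and ot: "\<forall>t\<in>set ts. oksorts X t"
   and ff: "\<And>i. i < k \<Longrightarrow> nd True Ax2 \<Gamma> (FF (ts ! i) v)" and dist: "distinct ts"
  shows "nd True Ax2 \<Gamma> (ExL (concat Ys) (fsub (inst V v) (Bge Ys)))"
proof (rule ExL_I)
  show "wf (fsub (inst V v) (Bge Ys))" using wf_fsub[OF sgood_inst[OF ov]] wf_Bge[OF c] by simp
  show "distinct (concat Ys)" using c by (simp add: copies_ok_def)
  have op: "oksorts (concat Ys) (concat ts)" and sp: "split_like Ys (concat ts) = ts"
    using tuples_concat[OF c lt ot] by auto
  show "oksorts (concat Ys) (concat ts)" by (rule op)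
  let ?s = "inst (V @ concat Ys) (v @ concat ts)"
  have lv: "length v = length V" using ov by (simp add: oksorts_def)
  have lk: "length Ys = k" using c by (simp add: copies_ok_def)
  have "nd True Ax2 \<Gamma> (fsub ?s (Bge Ys))"
    unfolding Bge_form
  proof (rule nd.andI)
    show "nd True Ax2 \<Gamma> (Conj (map (\<lambda>Y. fsub ?s (rename X Y F)) Ys))"
    proof (rule nd_conjI)
      fix A assume "A \<in> set (map (\<lambda>Y. fsub ?s (rename X Y F)) Ys)"
      then obtain W where W: "W \<in> set Ys" "A = fsub ?s (rename X W F)" by auto
      then obtain i where i0: "i < length Ys" "Ys ! i = W" by (meson in_set_conv_nth)
      then have i: "i < length Ys" "A = fsub ?s (rename X (Ys ! i) F)" using W by auto
      then show "nd True Ax2 \<Gamma> A" using sfacts(2)[OF c ov op i(1)] sp ff lk by simp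
    qed
    show "nd True Ax2 \<Gamma> (Conj (map (\<lambda>p. fsub ?s (case p of (Y, Z) \<Rightarrow> tup_ne Y Z)) (pairs Ys)))"
    proof (rule nd_conjI)
      fix A assume "A \<in> set (map (\<lambda>p. fsub ?s (case p of (Y, Z) \<Rightarrow> tup_ne Y Z)) (pairs Ys))"
      from set_map_pairs[OF this] obtain i j where ij: "i < j" "j < length Ys" "A = fsub ?s (tup_ne (Ys ! i) (Ys ! j))"
        by auto
      have "A = neTm (map Pc (ts ! i)) (map Pc (ts ! j))"
        using ij sfacts(1)[OF c ov op, of i] sfacts(1)[OF c ov op, of j] sp by (simp add: fsub_tup_ne)
      moreover have "length (ts ! i) = length (ts ! j)" using ot ij lt lk by (auto simp: oksorts_def)
      moreover have "ts ! i \<noteq> ts ! j" using dist ij lt lk by (simp add: nth_eq_iff_index_eq)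
      ultimately show "nd True Ax2 \<Gamma> A" using neTm_props[of "ts ! i" "ts ! j"] by (simp add: std_ax2)
    qed
  qed
  then show "nd True Ax2 \<Gamma> (fsub (inst (concat Ys) (concat ts)) (fsub (inst V v) (Bge Ys)))"
    by (simp only: inst_comp[OF lv])
qed

lemma le_use:
  assumes c: "copies_ok X V F Ys k" and ov: "oksorts V v" and lt: "length ts = k" and ot: "\<forall>t\<in>set ts. oksorts X t"
   and ff: "\<And>i. i < k \<Longrightarrow> nd True Ax2 \<Gamma> (FF (ts ! i) v)" and dist: "distinct ts"
   and E: "nd True Ax2 \<Gamma> (AllL (concat Ys) (fsub (inst V v) (Ble Ys)))"
  shows "nd True Ax2 \<Gamma> Bot"
proof -
  have op: "oksorts (concat Ys) (concat ts)" and sp: "split_like Ys (concat ts) = ts"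
    using tuples_concat[OF c lt ot] by auto
  let ?s = "inst (V @ concat Ys) (v @ concat ts)"
  have lv: "length v = length V" using ov by (simp add: oksorts_def)
  have lk: "length Ys = k" using c by (simp add: copies_ok_def)
  have dc: "distinct (concat Ys)" using c by (simp add: copies_ok_def)
  have "nd True Ax2 \<Gamma> (fsub (inst (concat Ys) (concat ts)) (fsub (inst V v) (Ble Ys)))"
    by (rule AllL_E[OF E dc op])
  then have "nd True Ax2 \<Gamma> (fsub ?s (Ble Ys))" by (simp only: inst_comp[OF lv])
  then have I: "nd True Ax2 \<Gamma> (Imp (Conj (map (\<lambda>Y. fsub ?s (rename X Y F)) Ys))
      (Disj (map (\<lambda>p. fsub ?s (case p of (Y, Z) \<Rightarrow> tup_eq Y Z)) (pairs Ys))))"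
    unfolding Ble_form .
  have C: "nd True Ax2 \<Gamma> (Conj (map (\<lambda>Y. fsub ?s (rename X Y F)) Ys))"
  proof (rule nd_conjI)
    fix A assume "A \<in> set (map (\<lambda>Y. fsub ?s (rename X Y F)) Ys)"
    then obtain W where W: "W \<in> set Ys" "A = fsub ?s (rename X W F)" by auto
    then obtain i where i0: "i < length Ys" "Ys ! i = W" by (meson in_set_conv_nth)
    then have i: "i < length Ys" "A = fsub ?s (rename X (Ys ! i) F)" using W by auto
    then show "nd True Ax2 \<Gamma> A" using sfacts(2)[OF c ov op i(1)] sp ff lk by simp
  qed
  have D: "nd True Ax2 \<Gamma> (Disj (map (\<lambda>p. fsub ?s (case p of (Y, Z) \<Rightarrow> tup_eq Y Z)) (pairs Ys)))"
    by (rule nd.impE[OF I C])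
  have EQ: "\<exists>i j. i < j \<and> j < length Ys \<and> A = eqTm (map Pc (ts ! i)) (map Pc (ts ! j))"
    if "A \<in> set (map (\<lambda>p. fsub ?s (case p of (Y, Z) \<Rightarrow> tup_eq Y Z)) (pairs Ys))" for A
  proof -
    from set_map_pairs[OF that] obtain i j where ij: "i < j" "j < length Ys" "A = fsub ?s (tup_eq (Ys ! i) (Ys ! j))"
      by auto
    then show ?thesis using sfacts(1)[OF c ov op, of i] sfacts(1)[OF c ov op, of j] sp
      by (intro HOL.exI[of _ i] HOL.exI[of _ j]) (simp add: fsub_tup_eq)
  qed
  show ?thesis
  proof (rule nd_disjE_bot[OF D])
    fix A assume A: "A \<in> set (map (\<lambda>p. fsub ?s (case p of (Y, Z) \<Rightarrow> tup_eq Y Z)) (pairs Ys))"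
    obtain i j where ij: "i < j" "j < length Ys" "A = eqTm (map Pc (ts ! i)) (map Pc (ts ! j))"
      using EQ[OF A] by blast
    have l: "length (ts ! i) = length (ts ! j)" using ot ij lt lk by (auto simp: oksorts_def)
    have ne: "ts ! i \<noteq> ts ! j" using dist ij lt lk by (simp add: nth_eq_iff_index_eq)
    show "nd True Ax2 (insert A \<Gamma>) Bot"
      by (rule std_bot[of A]) (use eqTm_props[OF l] ij(3) ne in \<open>auto intro: nd.hyp\<close>)
    show "fv A = {}" using eqTm_props[OF l] ij(3) by simp
  qed
qed

lemma fv_rename: "length W = length X \<Longrightarrow> distinct W \<Longrightarrow> set W \<inter> (set X \<union> allvars F) = {}
  \<Longrightarrow> fv (rename X W F) \<subseteq> set W \<union> set V"
proof -
  assume l: "length W = length X" and dW: "distinct W" and dj: "set W \<inter> (set X \<union> allvars F) = {}"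
  have "rename X W F = fsub Var (rename X W F)" by (simp add: fsub_Var)
  also have "... = fsub (\<lambda>z. case map_of (zip X W) z of Some y \<Rightarrow> Var y | None \<Rightarrow> Var z) F"
    unfolding rename_def
    by (rule fsub_foldl_rename) (use okX(1) l dW dj in auto)
  finally have e: "rename X W F = fsub (\<lambda>z. case map_of (zip X W) z of Some y \<Rightarrow> Var y | None \<Rightarrow> Var z) F" .
  have "fv (rename X W F) \<subseteq> (\<Union>z\<in>fv F. fvt (case map_of (zip X W) z of Some y \<Rightarrow> Var y | None \<Rightarrow> Var z))"
    unfolding e by (rule fv_fsub)
  also have "... \<subseteq> set W \<union> set V"
  proof
    fix w assume "w \<in> (\<Union>z\<in>fv F. fvt (case map_of (zip X W) z of Some y \<Rightarrow> Var y | None \<Rightarrow> Var z))"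
    then obtain z where z: "z \<in> fv F" "w \<in> fvt (case map_of (zip X W) z of Some y \<Rightarrow> Var y | None \<Rightarrow> Var z)" by blast
    show "w \<in> set W \<union> set V"
    proof (cases "map_of (zip X W) z")
      case None
      then have "z \<notin> set X" using l by simp
      then show ?thesis using z None okX(3) by auto
    next
      case (Some y)
      then have "(z, y) \<in> set (zip X W)" by (rule map_of_SomeD)
      then have "y \<in> set W" by (rule set_zip_rightD)
      then show ?thesis using z Some by auto
    qed
  qed
  finally show ?thesis .
qed

lemma fv_tup: "fv (tup_ne W Z) \<subseteq> set W \<union> set Z \<and> fv (tup_eq W Z) \<subseteq> set W \<union> set Z"
proof -
  have a: "fv (Disj Fs) \<subseteq> (\<Union>A\<in>set Fs. fv A)" for Fs by (induction Fs) (auto simp: Disj_def)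
  have b: "fv (Conj Fs) \<subseteq> (\<Union>A\<in>set Fs. fv A)" for Fs by (induction Fs) (auto simp: Conj_def Top_def)
  show ?thesis unfolding tup_ne_def tup_eq_def using a b by (fastforce dest: set_zip_leftD set_zip_rightD)
qed

lemma fv_Bge: "copies_ok X V F Ys k \<Longrightarrow> fv (Bge Ys) \<subseteq> set (concat Ys) \<union> set V \<and> fv (Ble Ys) \<subseteq> set (concat Ys) \<union> set V"
proof -
  assume c: "copies_ok X V F Ys k"
  have a: "fv (Disj Fs) \<subseteq> (\<Union>A\<in>set Fs. fv A)" for Fs by (induction Fs) (auto simp: Disj_def)
  have b: "fv (Conj Fs) \<subseteq> (\<Union>A\<in>set Fs. fv A)" for Fs by (induction Fs) (auto simp: Conj_def Top_def)
  have r: "fv (rename X W F) \<subseteq> set (concat Ys) \<union> set V" if "W \<in> set Ys" for W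
  proof -
    have "map sortof W = map sortof X" using c that by (auto simp: copies_ok_def)
    then have l: "length W = length X" by (metis length_map)
    have dW: "distinct W" using c that by (auto simp: copies_ok_def distinct_concat_iff)
    have dj: "set W \<inter> (set X \<union> allvars F) = {}" using c that by (auto simp: copies_ok_def)
    show ?thesis using fv_rename[OF l dW dj] that by auto
  qed
  have t: "fv (tup_ne W Z) \<subseteq> set (concat Ys) \<and> fv (tup_eq W Z) \<subseteq> set (concat Ys)" if wz: "(W, Z) \<in> set (pairs Ys)" for W Z
  proof -
    obtain i j where "i < j" "j < length Ys" "(W, Z) = (Ys ! i, Ys ! j)" using pairs_in[OF wz] by blast
    then have "W \<in> set Ys" "Z \<in> set Ys" by auto
    then show ?thesis using fv_tup[of W Z] by auto
  qed
  have 1: "fv (Conj (map (\<lambda>Y. rename X Y F) Ys)) \<subseteq> set (concat Ys) \<union> set V"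
    using b[of "map (\<lambda>Y. rename X Y F) Ys"] r by auto
  have 2: "fv (Conj (map (\<lambda>(Y, Z). tup_ne Y Z) (pairs Ys))) \<subseteq> set (concat Ys)"
    using b[of "map (\<lambda>(Y, Z). tup_ne Y Z) (pairs Ys)"] t by fastforce
  have 3: "fv (Disj (map (\<lambda>(Y, Z). tup_eq Y Z) (pairs Ys))) \<subseteq> set (concat Ys)"
    using a[of "map (\<lambda>(Y, Z). tup_eq Y Z) (pairs Ys)"] t by fastforce
  show ?thesis using 1 2 3 by (auto simp: Bge_def Ble_def)
qed

lemma fv_inst_V: "copies_ok X V F Ys k \<Longrightarrow> oksorts V v \<Longrightarrow> fv B \<subseteq> set (concat Ys) \<union> set V
  \<Longrightarrow> fv (fsub (inst V v) B) \<subseteq> set (concat Ys)"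
proof -
  assume a: "oksorts V v" "fv B \<subseteq> set (concat Ys) \<union> set V"
  have lv: "length v = length V" using a by (simp add: oksorts_def)
  have "fv (fsub (inst V v) B) \<subseteq> (\<Union>z\<in>fv B. fvt (inst V v z))" by (rule fv_fsub)
  also have "... \<subseteq> set (concat Ys)"
  proof
    fix w assume "w \<in> (\<Union>z\<in>fv B. fvt (inst V v z))"
    then obtain z where z: "z \<in> fv B" "w \<in> fvt (inst V v z)" by blast
    show "w \<in> set (concat Ys)"
    proof (cases "z \<in> set V")
      case True
      then obtain p where "inst V v z = Pc p" using inst_in[OF lv] by blast
      then show ?thesis using z by simp
    next
      case False
      then show ?thesis using z a(2) inst_notin[OF False] by auto
    qed
  qed
  finally show ?thesis .
qed

lemma not_distinct_pair: "\<not> distinct xs \<Longrightarrow> \<exists>i j. i < j \<and> j < length xs \<and> xs ! i = xs ! j"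
proof -
  assume "\<not> distinct xs"
  then obtain i j where ij: "i < length xs" "j < length xs" "i \<noteq> j" "xs ! i = xs ! j"
    by (auto simp: distinct_conv_nth)
  show ?thesis
  proof (cases "i < j")
    case True then show ?thesis using ij by blast
  next
    case False then have "j < i" using ij by simp
    then show ?thesis using ij by (intro HOL.exI[of _ j] HOL.exI[of _ i]) auto
  qed
qed

lemma exI_RB: "oksorts X t \<Longrightarrow> oksorts V v \<Longrightarrow> nd True Ax2 \<Gamma> (SS t v (Pc (Num k)))
  \<Longrightarrow> holds (\<lambda>_. Num 0) (Cmp Ge (Pc (Num k)) (Pc r)) \<Longrightarrow> nd True Ax2 \<Gamma> (ExL (X @ [N]) (RB v r))"
proof -
  assume a: "oksorts X t" "oksorts V v" "nd True Ax2 \<Gamma> (SS t v (Pc (Num k)))" "holds (\<lambda>_. Num 0) (Cmp Ge (Pc (Num k)) (Pc r))"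
  show ?thesis
  proof (rule ExL_I)
    show "wf (RB v r)" using RB_props[OF a(2)] by simp
    show "distinct (X @ [N])" using okX by auto
    show "oksorts (X @ [N]) (t @ [Num k])" by (rule oksorts_XN_intro[OF a(1)])
    have "nd True Ax2 \<Gamma> (Cmp Ge (Pc (Num k)) (Pc r))" by (rule std_ax2) (use a(4) in auto)
    then show "nd True Ax2 \<Gamma> (fsub (inst (X @ [N]) (t @ [Num k])) (RB v r))"
      unfolding RB_inst[OF a(1)] by (rule nd.andI[OF a(3)])
  qed
qed

lemma ge_unfold: "0 < n \<Longrightarrow> exists_ge X F Ys (Num n) = ExL (concat Ys) (Bge Ys)"
  by (simp add: Bge_def)

lemma le_unfold: "0 \<le> n \<Longrightarrow> exists_le X F Ys (Num n) = AllL (concat Ys) (Ble Ys)"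
  by (simp add: Ble_def)

lemma fix_V: "copies_ok X V F Ys k \<Longrightarrow> z \<in> set (concat Ys) \<Longrightarrow> inst V v z = Var z"
  by (rule inst_notin) (auto simp: copies_ok_def)

lemma RB_closed: "oksorts V v \<Longrightarrow> wf (ExL (X @ [N]) (RB v r)) \<and> fv (ExL (X @ [N]) (RB v r)) = {}"
  using RB_props[of v r] by (auto simp: wf_ExL fv_ExL)

lemma dirA1:
  assumes ov: "oksorts V v"
  shows "nd True Ax2 {AL v r} (ExL (X @ [N]) (RB v r))"
proof -
  let ?C = "{AL v r}"
  let ?G = "ExL (X @ [N]) (RB v r)"
  have cC: "closedS ?C" using AL_props[OF ov] by (simp add: closedS_def)
  have wG: "wf ?G" and fG: "fv ?G = {}" using RB_closed[OF ov] by auto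
  have E: "nd True Ax2 ?C (fsub (inst V v) (exists_ge X F (Ysn (cnt_ge r)) r))"
    by (rule nd_iffD1[OF dge[OF ov] nd.hyp]) simp
  have base: "nd True Ax2 \<Gamma> ?G" if "holds (\<lambda>_. Num 0) (Cmp Ge (Pc (Num 0)) (Pc r))" for \<Gamma>
    by (rule exI_RB[OF t0_ok ov d0a[OF t0_ok ov]]) (use that in simp_all)
  show ?thesis
  proof (cases r)
    case Inf then show ?thesis by (intro base) simp
  next
    case (Sym c)
    then have "nd True Ax2 ?C Bot" using E by simp
    then show ?thesis by (rule nd.botE[OF _ wG])
  next
    case Sup
    then have "nd True Ax2 ?C Bot" using E by simp
    then show ?thesis by (rule nd.botE[OF _ wG])
  next
    case (Num n)
    show ?thesis
    proof (cases "n \<le> 0")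
      case True then show ?thesis using Num by (intro base) auto
    next
      case False
      let ?k = "nat n"
      let ?Ys = "Ysn ?k"
      have c: "copies_ok X V F ?Ys ?k" by (rule Ysn_ok)
      have cg: "cnt_ge r = ?k" using Num by simp
      have E2: "nd True Ax2 ?C (ExL (concat ?Ys) (fsub (inst V v) (Bge ?Ys)))"
      proof -
        have u: "exists_ge X F ?Ys r = ExL (concat ?Ys) (Bge ?Ys)" using Num False ge_unfold[of n ?Ys] by simp
        have "fsub (inst V v) (exists_ge X F ?Ys r) = ExL (concat ?Ys) (fsub (inst V v) (Bge ?Ys))"
          unfolding u by (rule fsub_ExL_fix) (rule fix_V[OF c])
        then show ?thesis using E cg by simp
      qed
      have lk: "length ?Ys = ?k" using c by (simp add: copies_ok_def)
      show ?thesis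
      proof (rule ExL_E[OF cC E2])
        show "distinct (concat ?Ys)" using c by (simp add: copies_ok_def)
        show "fv (fsub (inst V v) (Bge ?Ys)) \<subseteq> set (concat ?Ys)"
          by (rule fv_inst_V[OF c ov]) (use fv_Bge[OF c] in auto)
        show "wf (fsub (inst V v) (Bge ?Ys))" using wf_fsub[OF sgood_inst[OF ov]] wf_Bge[OF c] by simp
        show "wf ?G" "fv ?G = {}" by (rule wG, rule fG)
        fix ps assume op: "oksorts (concat ?Ys) ps"
        let ?H = "fsub (inst (concat ?Ys) ps) (fsub (inst V v) (Bge ?Ys))"
        let ?C2 = "insert ?H ?C"
        let ?ts = "split_like ?Ys ps"
        have hH: "nd True Ax2 ?C2 ?H" by (rule nd.hyp) simp
        have ff: "\<And>i. i < ?k \<Longrightarrow> nd True Ax2 ?C2 (FF (?ts ! i) v)" by (rule ge_hyp(1)[OF c ov op hH])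
        have ne: "\<And>i j. i < j \<Longrightarrow> j < ?k \<Longrightarrow> nd True Ax2 ?C2 (neTm (map Pc (?ts ! i)) (map Pc (?ts ! j)))"
          by (rule ge_hyp(2)[OF c ov op hH])
        have lts: "length ?ts = ?k" using lk by (simp add: length_split_like)
        have ots: "\<And>i. i < ?k \<Longrightarrow> oksorts X (?ts ! i)" using sfacts(3)[OF c ov op] lk by simp
        have lens: "\<forall>u\<in>set ?ts. length u = length X"
          using ots lts by (auto simp: in_set_conv_nth oksorts_def)
        show "nd True Ax2 ?C2 ?G"
        proof (cases "distinct ?ts")
          case False
          obtain i j where ij: "i < j" "j < length ?ts" "?ts ! i = ?ts ! j" using not_distinct_pair[OF False] by blast
          have l: "length (?ts ! i) = length (?ts ! j)" using ots ij lts by (auto simp: oksorts_def)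
          have "nd True Ax2 ?C2 Bot"
            by (rule std_bot[OF _ _ _ _ ne[of i j]]) (use neTm_props[OF l] ij lts in auto)
          then show ?thesis by (rule nd.botE[OF _ wG])
        next
          case True
          let ?ss = "isort ?ts"
          have sp: "sorted_wrt lexlt ?ss \<and> set ?ss = set ?ts" by (rule isort_props[OF True lens])
          have ls: "length ?ss = ?k" using isort_len[OF True lens] lts by simp
          have ne0: "?ss \<noteq> []" using ls False by auto
          have oss: "\<forall>t\<in>set ?ss. oksorts X t" using sp ots lts by (auto simp: in_set_conv_nth)
          have fss: "\<forall>t\<in>set ?ss. nd True Ax2 ?C2 (FF t v)" using sp ff lts by (auto simp: in_set_conv_nth)
          have "nd True Ax2 ?C2 (SS (hd ?ss) v (Pc (Num (int (length ?ss)))))"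
            by (rule chain_build) (use sp ne0 oss ov fss in auto)
          then have S: "nd True Ax2 ?C2 (SS (hd ?ss) v (Pc (Num n)))" using ls False by simp
          have oh: "oksorts X (hd ?ss)" using oss ne0 by simp
          show ?thesis by (rule exI_RB[OF oh ov S]) (use Num in simp)
        qed
      qed
    qed
  qed
qed

lemma fsub_Top: "fsub s Top = Top" by (simp add: Top_def)

lemma dirA2:
  assumes ov: "oksorts V v"
  shows "nd True Ax2 {ExL (X @ [N]) (RB v r)} (AL v r)"
proof -
  let ?R = "ExL (X @ [N]) (RB v r)"
  let ?C = "{?R}"
  have cC: "closedS ?C" using RB_closed[OF ov] by (simp add: closedS_def)
  have wG: "wf (AL v r)" and fG: "fv (AL v r) = {}" using AL_props[OF ov] by auto
  have top: "nd True Ax2 \<Gamma> (AL v r)" if "exists_ge X F (Ysn (cnt_ge r)) r = Top" for \<Gamma>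
    by (rule nd_iffD2[OF dge[OF ov]]) (simp add: that fsub_Top nd_top)
  have hR: "nd True Ax2 ?C ?R" by (rule nd.hyp) simp
  have main: "nd True Ax2 ?C (AL v r)" if notop: "\<And>k. holds (\<lambda>_. Num 0) (Cmp Ge (Pc (Num k)) (Pc r))
      \<Longrightarrow> (\<exists>n. r = Num n \<and> 0 < n \<and> n \<le> k)"
  proof (rule ExL_E[OF cC hR])
    show "distinct (X @ [N])" using okX by auto
    show "fv (RB v r) \<subseteq> set (X @ [N])" "wf (RB v r)" using RB_props[OF ov] by auto
    show "wf (AL v r)" "fv (AL v r) = {}" by (rule wG, rule fG)
    fix ps assume "oksorts (X @ [N]) ps"
    then obtain t k where ps: "ps = t @ [Num k]" and ot: "oksorts X t" using oksorts_XN by blast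
    let ?H = "And (SS t v (Pc (Num k))) (Cmp Ge (Pc (Num k)) (Pc r))"
    let ?C2 = "insert ?H ?C"
    have hH: "nd True Ax2 ?C2 ?H" by (rule nd.hyp) simp
    have cC2: "closedS ?C2" using cC SS_props[OF ot ov, of k] by (simp add: closedS_insert)
    have "nd True Ax2 ?C2 (AL v r)"
    proof (cases "holds (\<lambda>_. Num 0) (Cmp Ge (Pc (Num k)) (Pc r))")
      case False
      have "nd True Ax2 ?C2 Bot"
        by (rule std_bot[OF _ _ _ False nd.andE2[OF hH]]) auto
      then show ?thesis by (rule nd.botE[OF _ wG])
    next
      case True
      obtain n where n: "r = Num n" "0 < n" "n \<le> k" using notop[OF True] by blast
      let ?k = "nat n"
      let ?Ys = "Ysn ?k"
      have c: "copies_ok X V F ?Ys ?k" by (rule Ysn_ok)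
      have cg: "cnt_ge r = ?k" using n by simp
      have u: "exists_ge X F ?Ys r = ExL (concat ?Ys) (Bge ?Ys)" using n ge_unfold[of n ?Ys] by simp
      have eq: "fsub (inst V v) (exists_ge X F ?Ys r) = ExL (concat ?Ys) (fsub (inst V v) (Bge ?Ys))"
        unfolding u by (rule fsub_ExL_fix) (rule fix_V[OF c])
      have S: "nd True Ax2 ?C2 (SS t v (Pc (Num (int (nat k)))))" using nd.andE1[OF hH] n by simp
      show ?thesis
      proof (rule chain_extract[OF cC2 ot ov S])
        show "1 \<le> nat k" using n by simp
        show "wf (AL v r)" "fv (AL v r) = {}" by (rule wG, rule fG)
        fix ts assume ts: "sorted_wrt lexlt (t # ts)" "length ts + 1 = nat k" "\<forall>u\<in>set ts. oksorts X u"
        let ?C3 = "set (map (\<lambda>u. FF u v) (t # ts)) \<union> ?C2"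
        let ?us = "take ?k (t # ts)"
        have lus: "length ?us = ?k" using ts(2) n by simp
        have dus: "distinct ?us" using sorted_distinct_lex[OF ts(1)] by simp
        have ous: "\<forall>u\<in>set ?us. oksorts X u"
        proof
          fix u assume "u \<in> set ?us"
          then have "u \<in> set (t # ts)" by (rule in_set_takeD)
          then show "oksorts X u" using ts(3) ot by auto
        qed
        have fus: "nd True Ax2 ?C3 (FF (?us ! i) v)" if i: "i < ?k" for i
        proof (rule nd.hyp)
          have "?us ! i \<in> set (t # ts)" using i lus by (metis in_set_takeD nth_mem)
          then show "FF (?us ! i) v \<in> ?C3" by auto
        qed
        have "nd True Ax2 ?C3 (ExL (concat ?Ys) (fsub (inst V v) (Bge ?Ys)))"
          by (rule ge_intro[OF c ov lus ous fus dus])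
        then have "nd True Ax2 ?C3 (fsub (inst V v) (exists_ge X F (Ysn (cnt_ge r)) r))"
          using eq cg by simp
        then show "nd True Ax2 ?C3 (AL v r)" by (rule nd_iffD2[OF dge[OF ov]])
      qed
    qed
    then show "nd True Ax2 (insert (fsub (inst (X @ [N]) ps) (RB v r)) ?C) (AL v r)"
      unfolding ps RB_inst[OF ot] .
  qed
  show ?thesis
  proof (cases r)
    case Inf then show ?thesis by (intro top) simp
  next
    case (Num n)
    show ?thesis
    proof (cases "n \<le> 0")
      case True then show ?thesis using Num by (intro top) simp
    next
      case False
      show ?thesis
      proof (rule main)
        fix k assume "holds (\<lambda>_. Num 0) (Cmp Ge (Pc (Num k)) (Pc r))"
        then show "\<exists>n. r = Num n \<and> 0 < n \<and> n \<le> k" using Num False by auto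
      qed
    qed
  next
    case (Sym c)
    show ?thesis by (rule main) (use Sym in auto)
  next
    case Sup
    show ?thesis by (rule main) (use Sup in auto)
  qed
qed

lemma RM_closed: "oksorts V v \<Longrightarrow> wf (AllL (X @ [N]) (RM v r)) \<and> fv (AllL (X @ [N]) (RM v r)) = {}"
  using RM_props[of v r] by (auto simp: wf_AllL fv_AllL)

lemma dirM1:
  assumes ov: "oksorts V v"
  shows "nd True Ax2 {AM v r} (AllL (X @ [N]) (RM v r))"
proof -
  let ?C = "{AM v r}"
  let ?G = "AllL (X @ [N]) (RM v r)"
  have cC: "closedS ?C" using AM_props[OF ov] by (simp add: closedS_def)
  have wG: "wf ?G" and fG: "fv ?G = {}" using RM_closed[OF ov] by auto
  have E: "nd True Ax2 ?C (fsub (inst V v) (exists_le X F (Ysn (cnt_le r)) r))"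
    by (rule nd_iffD1[OF dle[OF ov] nd.hyp]) simp
  have main: "nd True Ax2 ?C ?G" if notop: "\<And>k. \<not> holds (\<lambda>_. Num 0) (Cmp Le (Pc (Num k)) (Pc r))
      \<Longrightarrow> (\<exists>n. r = Num n \<and> 0 \<le> n \<and> n < k)"
  proof (rule AllL_I)
    show "wf (RM v r)" using RM_props[OF ov] by simp
    show "distinct (X @ [N])" using okX by auto
    fix ps assume "oksorts (X @ [N]) ps"
    then obtain t k where ps: "ps = t @ [Num k]" and ot: "oksorts X t" using oksorts_XN by blast
    let ?S = "SS t v (Pc (Num k))"
    let ?L = "Cmp Le (Pc (Num k)) (Pc r)"
    let ?C2 = "insert ?S ?C"
    have cC2: "closedS ?C2" using cC SS_props[OF ot ov, of k] by (simp add: closedS_insert)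
    have "nd True Ax2 ?C2 ?L"
    proof (cases "holds (\<lambda>_. Num 0) ?L")
      case True then show ?thesis by (intro std_ax2) auto
    next
      case False
      obtain n where n: "r = Num n" "0 \<le> n" "n < k" using notop[OF False] by blast
      let ?k = "nat (n + 1)"
      let ?Ys = "Ysn ?k"
      have c: "copies_ok X V F ?Ys ?k" by (rule Ysn_ok)
      have cl: "cnt_le r = ?k" using n by simp
      have u: "exists_le X F ?Ys r = AllL (concat ?Ys) (Ble ?Ys)" using n le_unfold[of n ?Ys] by simp
      have eq: "fsub (inst V v) (exists_le X F ?Ys r) = AllL (concat ?Ys) (fsub (inst V v) (Ble ?Ys))"
        unfolding u by (rule fsub_AllL_fix) (rule fix_V[OF c])
      have E2: "nd True Ax2 ?C (AllL (concat ?Ys) (fsub (inst V v) (Ble ?Ys)))" using E eq cl by simp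
      have S: "nd True Ax2 ?C2 (SS t v (Pc (Num (int (nat k)))))" using n by (simp add: nd.hyp)
      show ?thesis
      proof (rule chain_extract[OF cC2 ot ov S])
        show "1 \<le> nat k" using n by simp
        show "wf ?L" "fv ?L = {}" by auto
        fix ts assume ts: "sorted_wrt lexlt (t # ts)" "length ts + 1 = nat k" "\<forall>u\<in>set ts. oksorts X u"
        let ?C3 = "set (map (\<lambda>u. FF u v) (t # ts)) \<union> ?C2"
        let ?us = "take ?k (t # ts)"
        have lus: "length ?us = ?k" using ts(2) n by simp
        have dus: "distinct ?us" using sorted_distinct_lex[OF ts(1)] by simp
        have ous: "\<forall>u\<in>set ?us. oksorts X u"
        proof
          fix u assume "u \<in> set ?us"
          then have "u \<in> set (t # ts)" by (rule in_set_takeD)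
          then show "oksorts X u" using ts(3) ot by auto
        qed
        have fus: "nd True Ax2 ?C3 (FF (?us ! i) v)" if i: "i < ?k" for i
        proof (rule nd.hyp)
          have "?us ! i \<in> set (t # ts)" using i lus by (metis in_set_takeD nth_mem)
          then show "FF (?us ! i) v \<in> ?C3" by auto
        qed
        have cl3: "closedS (set (map (\<lambda>u. FF u v) (t # ts)))"
          by (rule FF_set_closed) (use ts(3) ot ov in auto)
        have E3: "nd True Ax2 ?C3 (AllL (concat ?Ys) (fsub (inst V v) (Ble ?Ys)))"
          by (rule nd_weaken[OF E2]) (use cl3 cC2 in \<open>auto simp: closedS_def\<close>)
        have "nd True Ax2 ?C3 Bot" by (rule le_use[OF c ov lus ous fus dus E3])
        then show "nd True Ax2 ?C3 ?L" by (rule nd.botE) simp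
      qed
    qed
    then have "nd True Ax2 ?C (Imp ?S ?L)" by (rule nd.impI) (use SS_props[OF ot ov] in simp)
    then show "nd True Ax2 ?C (fsub (inst (X @ [N]) ps) (RM v r))"
      unfolding ps RM_inst[OF ot] .
  qed
  show ?thesis
  proof (cases r)
    case Inf
    then have "nd True Ax2 ?C Bot" using E by simp
    then show ?thesis by (rule nd.botE[OF _ wG])
  next
    case (Num n)
    show ?thesis
    proof (cases "n < 0")
      case True
      then have "nd True Ax2 ?C Bot" using E Num by simp
      then show ?thesis by (rule nd.botE[OF _ wG])
    next
      case False
      show ?thesis
      proof (rule main)
        fix k assume "\<not> holds (\<lambda>_. Num 0) (Cmp Le (Pc (Num k)) (Pc r))"
        then show "\<exists>n. r = Num n \<and> 0 \<le> n \<and> n < k" using Num False by auto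
      qed
    qed
  next
    case (Sym c)
    show ?thesis by (rule main) (use Sym in auto)
  next
    case Sup
    show ?thesis by (rule main) (use Sup in auto)
  qed
qed

lemma dirM2:
  assumes ov: "oksorts V v"
  shows "nd True Ax2 {AllL (X @ [N]) (RM v r)} (AM v r)"
proof -
  let ?R = "AllL (X @ [N]) (RM v r)"
  let ?C = "{?R}"
  have cC: "closedS ?C" using RM_closed[OF ov] by (simp add: closedS_def)
  have wG: "wf (AM v r)" and fG: "fv (AM v r) = {}" using AM_props[OF ov] by auto
  have hR: "nd True Ax2 \<Gamma> ?R" if "?R \<in> \<Gamma>" for \<Gamma> by (rule nd.hyp[OF that])
  have inst_R: "nd True Ax2 \<Gamma> (Imp (SS t v (Pc (Num k))) (Cmp Le (Pc (Num k)) (Pc r)))"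
    if "?R \<in> \<Gamma>" "oksorts X t" for \<Gamma> t k
  proof -
    have "nd True Ax2 \<Gamma> (fsub (inst (X @ [N]) (t @ [Num k])) (RM v r))"
      by (rule AllL_E[OF hR[OF that(1)]]) (use okX oksorts_XN_intro[OF that(2)] in auto)
    then show ?thesis unfolding RM_inst[OF that(2)] .
  qed
  have bad: "nd True Ax2 \<Gamma> Bot" if "?R \<in> \<Gamma>" "oksorts X t" "nd True Ax2 \<Gamma> (SS t v (Pc (Num k)))"
     "\<not> holds (\<lambda>_. Num 0) (Cmp Le (Pc (Num k)) (Pc r))" for \<Gamma> t k
    by (rule std_bot[OF _ _ _ that(4) nd.impE[OF inst_R[OF that(1,2)] that(3)]]) auto
  show ?thesis
  proof (cases "\<exists>n. r = Num n \<and> 0 \<le> n")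
    case False
    show ?thesis
    proof (cases "\<exists>c. r = Sym c \<or> r = Sup")
      case True
      then have "exists_le X F (Ysn (cnt_le r)) r = Top" by auto
      then show ?thesis by (intro nd_iffD2[OF dle[OF ov]]) (simp add: fsub_Top nd_top)
    next
      case nt: False
      have "nd True Ax2 ?C Bot"
      proof (rule bad[OF _ t0_ok d0a[OF t0_ok ov]])
        show "?R \<in> ?C" by simp
        show "0 \<le> (0::int)" by simp
        show "\<not> holds (\<lambda>_. Num 0) (Cmp Le (Pc (Num 0)) (Pc r))"
          using False nt by (cases r) auto
      qed
      then show ?thesis by (rule nd.botE[OF _ wG])
    qed
  next
    case True
    then obtain n where n: "r = Num n" "0 \<le> n" by blast
    let ?k = "nat (n + 1)"
    let ?Ys = "Ysn ?k"
    have c: "copies_ok X V F ?Ys ?k" by (rule Ysn_ok)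
    have cl: "cnt_le r = ?k" using n by simp
    have u: "exists_le X F ?Ys r = AllL (concat ?Ys) (Ble ?Ys)" using n le_unfold[of n ?Ys] by simp
    have eq: "fsub (inst V v) (exists_le X F ?Ys r) = AllL (concat ?Ys) (fsub (inst V v) (Ble ?Ys))"
      unfolding u by (rule fsub_AllL_fix) (rule fix_V[OF c])
    have lk: "length ?Ys = ?k" using c by (simp add: copies_ok_def)
    have lv: "length v = length V" using ov by (simp add: oksorts_def)
    have "nd True Ax2 ?C (AllL (concat ?Ys) (fsub (inst V v) (Ble ?Ys)))"
    proof (rule AllL_I)
      show "wf (fsub (inst V v) (Ble ?Ys))" using wf_fsub[OF sgood_inst[OF ov]] wf_Bge[OF c] by simp
      show "distinct (concat ?Ys)" using c by (simp add: copies_ok_def)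
      fix ps assume op: "oksorts (concat ?Ys) ps"
      let ?s = "inst (V @ concat ?Ys) (v @ ps)"
      let ?ts = "split_like ?Ys ps"
      let ?CJ = "Conj (map (\<lambda>Y. fsub ?s (rename X Y F)) ?Ys)"
      let ?DJ = "Disj (map (\<lambda>p. fsub ?s (case p of (Y, Z) \<Rightarrow> tup_eq Y Z)) (pairs ?Ys))"
      let ?C2 = "insert ?CJ ?C"
      have sg: "sgood ?s" by (rule sgood_inst[OF oksorts_append[OF ov op]])
      have wb: "wf (fsub ?s (Ble ?Ys))" using wf_fsub[OF sg] wf_Bge[OF c] by simp
      then have wCJ: "wf ?CJ" and wDJ: "wf ?DJ" unfolding Ble_form by auto
      have wDs: "\<And>B. B \<in> set (map (\<lambda>p. fsub ?s (case p of (Y, Z) \<Rightarrow> tup_eq Y Z)) (pairs ?Ys)) \<Longrightarrow> wf B"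
        using wf_fsub[OF sg] wf_tup by auto
      have hCJ: "nd True Ax2 ?C2 ?CJ" by (rule nd.hyp) simp
      have lts: "length ?ts = ?k" using lk by (simp add: length_split_like)
      have ots: "\<And>i. i < ?k \<Longrightarrow> oksorts X (?ts ! i)" using sfacts(3)[OF c ov op] lk by simp
      have lens: "\<forall>u\<in>set ?ts. length u = length X"
        using ots lts by (auto simp: in_set_conv_nth oksorts_def)
      have ff: "nd True Ax2 ?C2 (FF (?ts ! i) v)" if i: "i < ?k" for i
      proof -
        have "fsub ?s (rename X (?Ys ! i) F) \<in> set (map (\<lambda>Y. fsub ?s (rename X Y F)) ?Ys)"
          using i lk by simp
        then have "nd True Ax2 ?C2 (fsub ?s (rename X (?Ys ! i) F))" by (rule nd_conjE[OF hCJ])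
        then show ?thesis using sfacts(2)[OF c ov op, of i] i lk by simp
      qed
      have "nd True Ax2 ?C2 ?DJ"
      proof (cases "distinct ?ts")
        case False
        obtain i j where ij: "i < j" "j < length ?ts" "?ts ! i = ?ts ! j" using not_distinct_pair[OF False] by blast
        have l: "length (?ts ! i) = length (?ts ! j)" using ots ij lts by (auto simp: oksorts_def)
        have pin: "(?Ys ! i, ?Ys ! j) \<in> set (pairs ?Ys)" by (rule in_pairs) (use ij lts lk in auto)
        have mem: "fsub ?s (tup_eq (?Ys ! i) (?Ys ! j)) \<in> set (map (\<lambda>p. fsub ?s (case p of (Y, Z) \<Rightarrow> tup_eq Y Z)) (pairs ?Ys))"
          using pin by (metis (no_types, lifting) case_prod_conv image_eqI list.set_map)
        have "fsub ?s (tup_eq (?Ys ! i) (?Ys ! j)) = eqTm (map Pc (?ts ! i)) (map Pc (?ts ! j))"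
          using sfacts(1)[OF c ov op, of i] sfacts(1)[OF c ov op, of j] ij lts lk by (simp add: fsub_tup_eq)
        moreover have "nd True Ax2 ?C2 (eqTm (map Pc (?ts ! i)) (map Pc (?ts ! j)))"
          using eqTm_props[OF l] ij(3) by (simp add: std_ax2)
        ultimately have "nd True Ax2 ?C2 (fsub ?s (tup_eq (?Ys ! i) (?Ys ! j)))" by simp
        then show ?thesis by (rule nd_disjI[OF mem _ wDs])
      next
        case True
        let ?ss = "isort ?ts"
        have sp: "sorted_wrt lexlt ?ss \<and> set ?ss = set ?ts" by (rule isort_props[OF True lens])
        have ls: "length ?ss = ?k" using isort_len[OF True lens] lts by simp
        have ne0: "?ss \<noteq> []" using ls n by auto
        have oss: "\<forall>t\<in>set ?ss. oksorts X t" using sp ots lts by (auto simp: in_set_conv_nth)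
        have fss: "\<forall>t\<in>set ?ss. nd True Ax2 ?C2 (FF t v)" using sp ff lts by (auto simp: in_set_conv_nth)
        have "nd True Ax2 ?C2 (SS (hd ?ss) v (Pc (Num (int (length ?ss)))))"
          by (rule chain_build) (use sp ne0 oss ov fss in auto)
        then have S: "nd True Ax2 ?C2 (SS (hd ?ss) v (Pc (Num (n + 1))))" using ls n by simp
        have oh: "oksorts X (hd ?ss)" using oss ne0 by simp
        have "nd True Ax2 ?C2 Bot" by (rule bad[OF _ oh S]) (use n in auto)
        then show ?thesis by (rule nd.botE[OF _ wDJ])
      qed
      then have "nd True Ax2 ?C (Imp ?CJ ?DJ)" by (rule nd.impI[OF _ wCJ])
      then have "nd True Ax2 ?C (fsub ?s (Ble ?Ys))" unfolding Ble_form .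
      then show "nd True Ax2 ?C (fsub (inst (concat ?Ys) ps) (fsub (inst V v) (Ble ?Ys)))"
        by (simp only: inst_comp[OF lv])
    qed
    then have "nd True Ax2 ?C (fsub (inst V v) (exists_le X F (Ysn (cnt_le r)) r))" using eq cl by simp
    then show ?thesis by (rule nd_iffD2[OF dle[OF ov]])
  qed
qed

definition D1A :: fm where
  "D1A = AllL (V @ [Y]) (Iff (Agg Atleast X V F (map Var (V @ [Y])))
            (ExL (X @ [N]) (And (StartA X V F X (Var N)) (Cmp Ge (Var N) (Var Y)))))"

definition D1M :: fm where
  "D1M = AllL (V @ [Y]) (Iff (Agg Atmost X V F (map Var (V @ [Y])))
            (AllL (X @ [N]) (Imp (StartA X V F X (Var N)) (Cmp Le (Var N) (Var Y)))))"

lemma la2_Var: "list_all2 has_sort (map Var xs) (map sortof xs)"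
  by (auto simp: list_all2_conv_all_nth has_sort_Var)

lemma D1_body_props:
  "wf (Iff (Agg Atleast X V F (map Var (V @ [Y]))) (ExL (X @ [N]) (And (StartA X V F X (Var N)) (Cmp Ge (Var N) (Var Y)))))
   \<and> wf (Iff (Agg Atmost X V F (map Var (V @ [Y]))) (AllL (X @ [N]) (Imp (StartA X V F X (Var N)) (Cmp Le (Var N) (Var Y)))))
   \<and> fv D1A = {} \<and> fv D1M = {}"
proof -
  have a1: "list_all2 has_sort (map Var V @ [Var Y]) (map sortof V @ [General])"
    using la2_Var[of V] by (intro list_all2_appendI) auto
  have a2: "list_all2 has_sort (map Var X @ map Var V @ [Var N]) (map sortof (X @ V) @ [Integer])"
    using la2_Var[of X] la2_Var[of V] okX(6) by (auto intro!: list_all2_appendI)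
  show ?thesis using a1 a2 okX
    by (auto simp: Iff_def StartA_def D1A_def D1M_def wf_ExL wf_AllL fv_ExL fv_AllL)
qed

lemma VY_split: "oksorts (V @ [Y]) ps \<Longrightarrow> \<exists>v r. ps = v @ [r] \<and> oksorts V v"
proof -
  assume a: "oksorts (V @ [Y]) ps"
  have s: "oksorts V (take (length V) ps)" "oksorts [Y] (drop (length V) ps)" using oksorts_split_app[OF a] by auto
  then obtain q where q: "drop (length V) ps = [q]" by (cases "drop (length V) ps") (auto simp: oksorts_def)
  have "ps = take (length V) ps @ [q]" using append_take_drop_id[of "length V" ps] q by simp
  then show ?thesis using s(1) by blast
qed

lemma VY_vals: "oksorts V v \<Longrightarrow> map (inst (V @ [Y]) (v @ [r])) V = map Pc v \<and> inst (V @ [Y]) (v @ [r]) Y = Pc r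
  \<and> (\<forall>z\<in>set (X @ [N]). inst (V @ [Y]) (v @ [r]) z = Var z)"
proof -
  assume a: "oksorts V v"
  have lv: "length v = length V" using a by (simp add: oksorts_def)
  have d: "distinct (V @ [Y])" using okX by auto
  have 1: "map (inst (V @ [Y]) (v @ [r])) V = map Pc v" by (rule map_inst_app1[OF d lv])
  have "Y \<notin> set V" using okX by simp
  then have "inst (V @ [Y]) (v @ [r]) Y = inst [Y] [r] Y" by (simp add: inst_append lv)
  then have 2: "inst (V @ [Y]) (v @ [r]) Y = Pc r" by (simp add: inst_def)
  have 3: "\<forall>z\<in>set (X @ [N]). inst (V @ [Y]) (v @ [r]) z = Var z"
    using okX by (auto intro!: inst_notin)
  show ?thesis using 1 2 3 by simp
qed

lemma D1A_deriv: "nd True Ax2 {} D1A"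
  unfolding D1A_def
proof (rule AllL_I)
  show "wf (Iff (Agg Atleast X V F (map Var (V @ [Y]))) (ExL (X @ [N]) (And (StartA X V F X (Var N)) (Cmp Ge (Var N) (Var Y)))))"
    using D1_body_props by simp
  show "distinct (V @ [Y])" using okX by auto
  fix ps assume "oksorts (V @ [Y]) ps"
  then obtain v r where ps: "ps = v @ [r]" and ov: "oksorts V v" using VY_split by blast
  let ?s = "inst (V @ [Y]) (v @ [r])"
  have vals: "map ?s V = map Pc v" "?s Y = Pc r" "\<And>z. z \<in> set (X @ [N]) \<Longrightarrow> ?s z = Var z"
    using VY_vals[OF ov] by auto
  have mX: "map ?s X = map Var X" using vals(3) by (induction X) auto
  have e1: "fsub ?s (ExL (X @ [N]) (And (StartA X V F X (Var N)) (Cmp Ge (Var N) (Var Y)))) = ExL (X @ [N]) (RB v r)"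
  proof -
    have "fsub ?s (ExL (X @ [N]) (And (StartA X V F X (Var N)) (Cmp Ge (Var N) (Var Y))))
      = ExL (X @ [N]) (fsub ?s (And (StartA X V F X (Var N)) (Cmp Ge (Var N) (Var Y))))"
      by (rule fsub_ExL_fix) (rule vals(3))
    also have "... = ExL (X @ [N]) (RB v r)"
      using vals(3)[of N] by (simp add: RB_def StartA_def comp_def mX vals(1,2))
    finally show ?thesis .
  qed
  have e2: "fsub ?s (Agg Atleast X V F (map Var (V @ [Y]))) = AL v r"
    by (simp add: AL_def comp_def vals(1,2))
  have "nd True Ax2 {} (Iff (AL v r) (ExL (X @ [N]) (RB v r)))"
  proof (rule nd_iffI)
    show "nd True Ax2 (insert (AL v r) {}) (ExL (X @ [N]) (RB v r))" using dirA1[OF ov] by simp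
    show "nd True Ax2 (insert (ExL (X @ [N]) (RB v r)) {}) (AL v r)" using dirA2[OF ov] by simp
    show "wf (AL v r)" using AL_props[OF ov] by simp
    show "wf (ExL (X @ [N]) (RB v r))" using RB_closed[OF ov] by simp
  qed
  then show "nd True Ax2 {} (fsub (inst (V @ [Y]) ps) (Iff (Agg Atleast X V F (map Var (V @ [Y])))
       (ExL (X @ [N]) (And (StartA X V F X (Var N)) (Cmp Ge (Var N) (Var Y))))))"
    unfolding ps fsub_Iff e1 e2 .
qed

lemma D1M_deriv: "nd True Ax2 {} D1M"
  unfolding D1M_def
proof (rule AllL_I)
  show "wf (Iff (Agg Atmost X V F (map Var (V @ [Y]))) (AllL (X @ [N]) (Imp (StartA X V F X (Var N)) (Cmp Le (Var N) (Var Y)))))"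
    using D1_body_props by simp
  show "distinct (V @ [Y])" using okX by auto
  fix ps assume "oksorts (V @ [Y]) ps"
  then obtain v r where ps: "ps = v @ [r]" and ov: "oksorts V v" using VY_split by blast
  let ?s = "inst (V @ [Y]) (v @ [r])"
  have vals: "map ?s V = map Pc v" "?s Y = Pc r" "\<And>z. z \<in> set (X @ [N]) \<Longrightarrow> ?s z = Var z"
    using VY_vals[OF ov] by auto
  have mX: "map ?s X = map Var X" using vals(3) by (induction X) auto
  have e1: "fsub ?s (AllL (X @ [N]) (Imp (StartA X V F X (Var N)) (Cmp Le (Var N) (Var Y)))) = AllL (X @ [N]) (RM v r)"
  proof -
    have "fsub ?s (AllL (X @ [N]) (Imp (StartA X V F X (Var N)) (Cmp Le (Var N) (Var Y))))
      = AllL (X @ [N]) (fsub ?s (Imp (StartA X V F X (Var N)) (Cmp Le (Var N) (Var Y))))"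
      by (rule fsub_AllL_fix) (rule vals(3))
    also have "... = AllL (X @ [N]) (RM v r)"
      using vals(3)[of N] by (simp add: RM_def StartA_def comp_def mX vals(1,2))
    finally show ?thesis .
  qed
  have e2: "fsub ?s (Agg Atmost X V F (map Var (V @ [Y]))) = AM v r"
    by (simp add: AM_def comp_def vals(1,2))
  have "nd True Ax2 {} (Iff (AM v r) (AllL (X @ [N]) (RM v r)))"
  proof (rule nd_iffI)
    show "nd True Ax2 (insert (AM v r) {}) (AllL (X @ [N]) (RM v r))" using dirM1[OF ov] by simp
    show "nd True Ax2 (insert (AllL (X @ [N]) (RM v r)) {}) (AM v r)" using dirM2[OF ov] by simp
    show "wf (AM v r)" using AM_props[OF ov] by simp
    show "wf (AllL (X @ [N]) (RM v r))" using RM_closed[OF ov] by simp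
  qed
  then show "nd True Ax2 {} (fsub (inst (V @ [Y]) ps) (Iff (Agg Atmost X V F (map Var (V @ [Y])))
       (AllL (X @ [N]) (Imp (StartA X V F X (Var N)) (Cmp Le (Var N) (Var Y))))))"
    unfolding ps fsub_Iff e1 e2 .
qed

end


lemma D1_closed: "b \<in> D1 \<Longrightarrow> fv b = {} \<and> wf b"
proof -
  assume "b \<in> D1"
  then obtain X V F Y N where ok: "D1_ok X V F Y N"
    and b: "b = d1.D1A X V F Y N \<or> b = d1.D1M X V F Y N"
    unfolding D1_def d1.D1A_def[OF d1.intro] d1.D1M_def[OF d1.intro] by blast
  interpret d1 X V F Y N by (rule d1.intro[OF ok])
  show ?thesis using b D1_body_props by (auto simp: D1A_def D1M_def wf_AllL)
qed

lemma D1_deriv: "b \<in> D1 \<Longrightarrow> nd True (HTax \<union> Std \<union> Defs_ax \<union> D0) {} b"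
proof -
  assume "b \<in> D1"
  then obtain X V F Y N where ok: "D1_ok X V F Y N"
    and b: "b = d1.D1A X V F Y N \<or> b = d1.D1M X V F Y N"
    unfolding D1_def d1.D1A_def[OF d1.intro] d1.D1M_def[OF d1.intro] by blast
  interpret d1 X V F Y N by (rule d1.intro[OF ok])
  show ?thesis using b D1A_deriv D1M_deriv unfolding Ax2_def by auto
qed



lemma std_ax: "Std \<subseteq> Ax \<Longrightarrow> wf A \<Longrightarrow> fv A = {} \<Longrightarrow> arith_only A \<Longrightarrow> holds (\<lambda>_. Num 0) A
  \<Longrightarrow> nd om Ax \<Gamma> A"
  by (rule nd.axiom) (auto simp: Std_def)

lemma std_neg: "Std \<subseteq> Ax \<Longrightarrow> wf A \<Longrightarrow> fv A = {} \<Longrightarrow> arith_only A \<Longrightarrow> \<not> holds (\<lambda>_. Num 0) A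
  \<Longrightarrow> nd om Ax \<Gamma> A \<Longrightarrow> nd om Ax \<Gamma> Bot"
proof -
  assume a: "Std \<subseteq> Ax" "wf A" "fv A = {}" "arith_only A" "\<not> holds (\<lambda>_. Num 0) A" "nd om Ax \<Gamma> A"
  have "nd om Ax \<Gamma> (Imp A Bot)" by (rule std_ax) (use a in auto)
  then show ?thesis using a(6) by (rule nd.impE)
qed

lemma ind_deriv:
  assumes S: "Std \<subseteq> Ax" and A: "A \<in> Ind"
  shows "nd True Ax \<Gamma> A"
proof -
  obtain N F where NF: "A = Imp (And (subst N (Pc (Num 0)) F)
                   (All N (Imp (And (Cmp Ge (Var N) (Pc (Num 0))) F)
                               (subst N (Add (Var N) (Pc (Num 1))) F))))
              (All N (Imp (Cmp Ge (Var N) (Pc (Num 0))) F))" "sortof N = Integer" "wf F"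
    using A unfolding Ind_def by blast
  define H where "H = And (subst N (Pc (Num 0)) F)
                   (All N (Imp (And (Cmp Ge (Var N) (Pc (Num 0))) F)
                               (subst N (Add (Var N) (Pc (Num 1))) F)))"
  have hsN: "\<And>n. has_sort (Pc (Num n)) (sortof N)" using NF(2) by simp
  have hsA: "has_sort (Add (Var N) (Pc (Num 1))) (sortof N)" using NF(2) by simp
  have wH: "wf H" unfolding H_def using NF(3) hsN hsA by (auto intro!: wf_subst)
  have step: "nd True Ax (insert H \<Gamma>) (subst N (Pc (Num (int k))) F)" for k :: nat
  proof (induction k)
    case 0
    have "nd True Ax (insert H \<Gamma>) H" by (rule nd.hyp) simp
    then have "nd True Ax (insert H \<Gamma>) (subst N (Pc (Num 0)) F)" unfolding H_def by (rule nd.andE1)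
    then show ?case by simp
  next
    case (Suc k)
    have "nd True Ax (insert H \<Gamma>) H" by (rule nd.hyp) simp
    then have "nd True Ax (insert H \<Gamma>) (All N (Imp (And (Cmp Ge (Var N) (Pc (Num 0))) F)
                               (subst N (Add (Var N) (Pc (Num 1))) F)))"
      unfolding H_def by (rule nd.andE2)
    then have "nd True Ax (insert H \<Gamma>) (subst N (Pc (Num (int k))) (Imp (And (Cmp Ge (Var N) (Pc (Num 0))) F)
                               (subst N (Add (Var N) (Pc (Num 1))) F)))"
      by (rule nd.allE) (rule hsN, rule free_for_closed, simp)
    then have i: "nd True Ax (insert H \<Gamma>) (Imp (And (Cmp Ge (Pc (Num (int k))) (Pc (Num 0))) (subst N (Pc (Num (int k))) F))
                  (subst N (Add (Pc (Num (int k))) (Pc (Num 1))) F))"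
      by (simp add: subst_subst)
    have g: "nd True Ax (insert H \<Gamma>) (Cmp Ge (Pc (Num (int k))) (Pc (Num 0)))"
      by (rule std_ax[OF S]) auto
    have r: "nd True Ax (insert H \<Gamma>) (subst N (Add (Pc (Num (int k))) (Pc (Num 1))) F)"
      by (rule nd.impE[OF i nd.andI[OF g Suc.IH]])
    have e: "nd True Ax (insert H \<Gamma>) (Cmp Eq (Add (Pc (Num (int k))) (Pc (Num 1))) (Pc (Num (int (Suc k)))))"
      by (rule std_ax[OF S]) auto
    have "nd True Ax (insert H \<Gamma>) (subst N (Pc (Num (int (Suc k)))) F)"
      by (rule nd.eqE[OF e r]) (use NF(2) in \<open>simp_all add: free_for_closed\<close>)
    then show ?case .
  qed
  have "nd True Ax (insert H \<Gamma>) (All N (Imp (Cmp Ge (Var N) (Pc (Num 0))) F))"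
  proof (rule nd.omega)
    show "wf (Imp (Cmp Ge (Var N) (Pc (Num 0))) F)" using NF(3) by simp
    fix p assume "p \<in> dom_of (sortof N)"
    then obtain n where p: "p = Num n" using NF(2) by auto
    have "nd True Ax (insert H \<Gamma>) (Imp (Cmp Ge (Pc (Num n)) (Pc (Num 0))) (subst N (Pc (Num n)) F))"
    proof (rule nd.impI)
      show "wf (Cmp Ge (Pc (Num n)) (Pc (Num 0)))" by simp
      show "nd True Ax (insert (Cmp Ge (Pc (Num n)) (Pc (Num 0))) (insert H \<Gamma>)) (subst N (Pc (Num n)) F)"
      proof (cases "n \<ge> 0")
        case True
        then obtain k where "n = int k" by (metis nonneg_eq_int)
        then show ?thesis using nd_weaken1[OF step[of k], of "Cmp Ge (Pc (Num n)) (Pc (Num 0))"] by simp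
      next
        case False
        have "nd True Ax (insert (Cmp Ge (Pc (Num n)) (Pc (Num 0))) (insert H \<Gamma>)) Bot"
          by (rule std_neg[OF S, of "Cmp Ge (Pc (Num n)) (Pc (Num 0))"]) (use False in \<open>simp_all add: nd.hyp\<close>)
        then show ?thesis by (rule nd.botE) (rule wf_subst[OF hsN NF(3)])
      qed
    qed
    then show "nd True Ax (insert H \<Gamma>) (subst N (Pc p) (Imp (Cmp Ge (Var N) (Pc (Num 0))) F))"
      using p by simp
  qed simp
  then show ?thesis unfolding NF(1) H_def[symmetric] by (rule nd.impI[OF _ wH])
qed

lemma nd_weaken_sets: "nd om A (\<Gamma> \<union> B1) F \<Longrightarrow> B1 \<subseteq> B2 \<Longrightarrow> closedS B2 \<Longrightarrow> nd om A (\<Gamma> \<union> B2) F"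
  by (erule nd_weaken) (auto simp: closedS_def)

lemma ex_helper: "nd om A (\<Gamma> \<union> BB) F \<Longrightarrow> BB \<subseteq> B \<Longrightarrow> finite BB \<Longrightarrow> \<exists>B'. B' \<subseteq> B \<and> finite B' \<and> nd om A (\<Gamma> \<union> B') F"
  by blast

lemma nd_extract:
  assumes "nd om Ax \<Gamma> F" "\<not> om" "Ax = A \<union> B" "closedS B"
  shows "\<exists>B'. B' \<subseteq> B \<and> finite B' \<and> nd om A (\<Gamma> \<union> B') F"
  using assms(1)
proof (induction rule: nd.induct)
  case (axiom F \<Gamma>)
  show ?case
  proof (cases "F \<in> A")
    case True
    then have "nd om A (\<Gamma> \<union> {}) F" by (rule nd.axiom)
    then show ?thesis by blast
  next
    case False then have "F \<in> B" using axiom assms(3) by auto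
    moreover have "nd om A (\<Gamma> \<union> {F}) F" by (rule nd.hyp) simp
    ultimately show ?thesis by blast
  qed
next
  case (hyp F \<Gamma>)
  then have "nd om A (\<Gamma> \<union> {}) F" by (intro nd.hyp) simp
  then show ?case by blast
next
  case (andI \<Gamma> F G)
  obtain B1 B2 where b: "B1 \<subseteq> B" "finite B1" "nd om A (\<Gamma> \<union> B1) F" "B2 \<subseteq> B" "finite B2" "nd om A (\<Gamma> \<union> B2) G"
    using andI.IH by blast
  have cB: "closedS (B1 \<union> B2)" using b assms(4) by (auto simp: closedS_def)
  have "nd om A (\<Gamma> \<union> (B1 \<union> B2)) F" "nd om A (\<Gamma> \<union> (B1 \<union> B2)) G"
    by (rule nd_weaken_sets[OF b(3) _ cB], blast) (rule nd_weaken_sets[OF b(6) _ cB], blast)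
  then have "nd om A (\<Gamma> \<union> (B1 \<union> B2)) (And F G)" by (rule nd.andI)
  then show ?case using b by (intro ex_helper[where BB="B1 \<union> B2"]) auto
next
  case (andE1 \<Gamma> F G)
  then obtain B1 where b: "B1 \<subseteq> B" "finite B1" "nd om A (\<Gamma> \<union> B1) (And F G)" by blast
  have "nd om A (\<Gamma> \<union> B1) F" using b(3)  by (rule nd.andE1)
  then show ?case using b by blast
next
  case (andE2 \<Gamma> F G)
  then obtain B1 where b: "B1 \<subseteq> B" "finite B1" "nd om A (\<Gamma> \<union> B1) (And F G)" by blast
  have "nd om A (\<Gamma> \<union> B1) G" using b(3)  by (rule nd.andE2)
  then show ?case using b by blast
next
  case (orI1 \<Gamma> F G)
  then obtain B1 where b: "B1 \<subseteq> B" "finite B1" "nd om A (\<Gamma> \<union> B1) F" by blast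
  have "nd om A (\<Gamma> \<union> B1) (Or F G)" using b(3) orI1.hyps(2) by (rule nd.orI1)
  then show ?case using b by blast
next
  case (orI2 \<Gamma> G F)
  then obtain B1 where b: "B1 \<subseteq> B" "finite B1" "nd om A (\<Gamma> \<union> B1) G" by blast
  have "nd om A (\<Gamma> \<union> B1) (Or F G)" using b(3) orI2.hyps(2) by (rule nd.orI2)
  then show ?case using b by blast
next
  case (orE \<Gamma> F G H)
  obtain B1 B2 B3 where b: "B1 \<subseteq> B" "finite B1" "nd om A (\<Gamma> \<union> B1) (Or F G)" "B2 \<subseteq> B" "finite B2"
     "nd om A (insert F \<Gamma> \<union> B2) H" "B3 \<subseteq> B" "finite B3" "nd om A (insert G \<Gamma> \<union> B3) H"
    using orE.IH by blast
  let ?B = "B1 \<union> B2 \<union> B3"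
  have cB: "closedS ?B" using b assms(4) by (auto simp: closedS_def)
  have e1: "nd om A (\<Gamma> \<union> ?B) (Or F G)" by (rule nd_weaken_sets[OF b(3) _ cB]) blast
  have "nd om A (insert F \<Gamma> \<union> ?B) H" by (rule nd_weaken_sets[OF b(6) _ cB]) blast
  then have e2: "nd om A (insert F (\<Gamma> \<union> ?B)) H" by simp
  have "nd om A (insert G \<Gamma> \<union> ?B) H" by (rule nd_weaken_sets[OF b(9) _ cB]) blast
  then have e3: "nd om A (insert G (\<Gamma> \<union> ?B)) H" by simp
  have "nd om A (\<Gamma> \<union> ?B) H" by (rule nd.orE[OF e1 e2 e3])
  then show ?case using b by (intro ex_helper[where BB="?B"]) auto
next
  case (impI F \<Gamma> G)
  obtain B1 where b: "B1 \<subseteq> B" "finite B1" "nd om A (insert F \<Gamma> \<union> B1) G" using impI.IH by blast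
  then have "nd om A (insert F (\<Gamma> \<union> B1)) G" by simp
  then have "nd om A (\<Gamma> \<union> B1) (Imp F G)" using impI.hyps(2) by (rule nd.impI)
  then show ?case using b by blast
next
  case (impE \<Gamma> F G)
  obtain B1 B2 where b: "B1 \<subseteq> B" "finite B1" "nd om A (\<Gamma> \<union> B1) (Imp F G)" "B2 \<subseteq> B" "finite B2" "nd om A (\<Gamma> \<union> B2) F"
    using impE.IH by blast
  have cB: "closedS (B1 \<union> B2)" using b assms(4) by (auto simp: closedS_def)
  have "nd om A (\<Gamma> \<union> (B1 \<union> B2)) (Imp F G)" "nd om A (\<Gamma> \<union> (B1 \<union> B2)) F"
    by (rule nd_weaken_sets[OF b(3) _ cB], blast) (rule nd_weaken_sets[OF b(6) _ cB], blast)
  then have "nd om A (\<Gamma> \<union> (B1 \<union> B2)) G" by (rule nd.impE)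
  then show ?case using b by (intro ex_helper[where BB="B1 \<union> B2"]) auto
next
  case (botE \<Gamma> F)
  then obtain B1 where b: "B1 \<subseteq> B" "finite B1" "nd om A (\<Gamma> \<union> B1) Bot" by blast
  have "nd om A (\<Gamma> \<union> B1) F" using b(3) botE.hyps(2) by (rule nd.botE)
  then show ?case using b by blast
next
  case (allI \<Gamma> F x)
  obtain B1 where b: "B1 \<subseteq> B" "finite B1" "nd om A (\<Gamma> \<union> B1) F" using allI.IH by blast
  have "x \<notin> (\<Union>G\<in>\<Gamma> \<union> B1. fv G)" using allI.hyps(2) b(1) assms(4) by (auto simp: closedS_def)
  then have "nd om A (\<Gamma> \<union> B1) (All x F)" by (rule nd.allI[OF b(3)])
  then show ?case using b by blast
next
  case (allE \<Gamma> x F t)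
  then obtain B1 where b: "B1 \<subseteq> B" "finite B1" "nd om A (\<Gamma> \<union> B1) (All x F)" by blast
  have "nd om A (\<Gamma> \<union> B1) (subst x t F)" using b(3) allE.hyps(2,3) by (rule nd.allE)
  then show ?case using b by blast
next
  case (exI \<Gamma> x t F)
  then obtain B1 where b: "B1 \<subseteq> B" "finite B1" "nd om A (\<Gamma> \<union> B1) (subst x t F)" by blast
  have "nd om A (\<Gamma> \<union> B1) (Ex x F)" using b(3) exI.hyps(2-4) by (rule nd.exI)
  then show ?case using b by blast
next
  case (exE \<Gamma> x F G)
  obtain B1 B2 where b: "B1 \<subseteq> B" "finite B1" "nd om A (\<Gamma> \<union> B1) (Ex x F)" "B2 \<subseteq> B" "finite B2"
     "nd om A (insert F \<Gamma> \<union> B2) G"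
    using exE.IH by blast
  let ?B = "B1 \<union> B2"
  have cB: "closedS ?B" using b assms(4) by (auto simp: closedS_def)
  have e1: "nd om A (\<Gamma> \<union> ?B) (Ex x F)" by (rule nd_weaken_sets[OF b(3) _ cB]) blast
  have "nd om A (insert F \<Gamma> \<union> ?B) G" by (rule nd_weaken_sets[OF b(6) _ cB]) blast
  then have e2: "nd om A (insert F (\<Gamma> \<union> ?B)) G" by simp
  have "x \<notin> (\<Union>H\<in>\<Gamma> \<union> ?B. fv H)" using exE.hyps(4) cB by (auto simp: closedS_def)
  then have "nd om A (\<Gamma> \<union> ?B) G" by (rule nd.exE[OF e1 e2 exE.hyps(3)])
  then show ?case using b by (intro ex_helper[where BB="?B"]) auto
next
  case (eqI t \<Gamma>)
  then have "nd om A (\<Gamma> \<union> {}) (Cmp Eq t t)" by (rule nd.eqI)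
  then show ?case by blast
next
  case (eqE \<Gamma> s t x F)
  obtain B1 B2 where b: "B1 \<subseteq> B" "finite B1" "nd om A (\<Gamma> \<union> B1) (Cmp Eq s t)" "B2 \<subseteq> B" "finite B2" "nd om A (\<Gamma> \<union> B2) (subst x s F)"
    using eqE.IH by blast
  have cB: "closedS (B1 \<union> B2)" using b assms(4) by (auto simp: closedS_def)
  have "nd om A (\<Gamma> \<union> (B1 \<union> B2)) (Cmp Eq s t)" "nd om A (\<Gamma> \<union> (B1 \<union> B2)) (subst x s F)"
    by (rule nd_weaken_sets[OF b(3) _ cB], blast) (rule nd_weaken_sets[OF b(6) _ cB], blast)
  then have "nd om A (\<Gamma> \<union> (B1 \<union> B2)) (subst x t F)" by (rule nd.eqE) (rule eqE.hyps)+
  then show ?case using b by (intro ex_helper[where BB="B1 \<union> B2"]) auto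
next
  case (omega F x \<Gamma>) then show ?case using assms(2) by simp
qed

lemma nd_transl:
  assumes "nd om Ax \<Gamma> F" "\<not> om" "Ax \<subseteq> A' \<union> I" "\<And>i \<Delta>. i \<in> I \<Longrightarrow> nd True A' \<Delta> i"
  shows "nd True A' \<Gamma> F"
  using assms(1)
proof (induction rule: nd.induct)
  case (axiom F \<Gamma>)
  show ?case
  proof (cases "F \<in> A'")
    case True then show ?thesis by (rule nd.axiom)
  next
    case False then have "F \<in> I" using axiom.hyps assms(3) by blast
    then show ?thesis by (rule assms(4))
  qed
next
  case (hyp F \<Gamma>) then show ?case by (rule nd.hyp)
next
  case (andI \<Gamma> F G) show ?case by (rule nd.andI[OF andI.IH])
next
  case (andE1 \<Gamma> F G) show ?case by (rule nd.andE1[OF andE1.IH])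
next
  case (andE2 \<Gamma> F G) show ?case by (rule nd.andE2[OF andE2.IH])
next
  case (orI1 \<Gamma> F G) show ?case by (rule nd.orI1[OF orI1.IH orI1.hyps(2)])
next
  case (orI2 \<Gamma> G F) show ?case by (rule nd.orI2[OF orI2.IH orI2.hyps(2)])
next
  case (orE \<Gamma> F G H) show ?case by (rule nd.orE[OF orE.IH])
next
  case (impI F \<Gamma> G) show ?case by (rule nd.impI[OF impI.IH impI.hyps(2)])
next
  case (impE \<Gamma> F G) show ?case by (rule nd.impE[OF impE.IH])
next
  case (botE \<Gamma> F) show ?case by (rule nd.botE[OF botE.IH botE.hyps(2)])
next
  case (allI \<Gamma> F x) show ?case by (rule nd.allI[OF allI.IH allI.hyps(2)])
next
  case (allE \<Gamma> x F t) show ?case by (rule nd.allE[OF allE.IH allE.hyps(2,3)])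
next
  case (exI \<Gamma> x t F) show ?case by (rule nd.exI[OF exI.IH exI.hyps(2-4)])
next
  case (exE \<Gamma> x F G) show ?case by (rule nd.exE[OF exE.IH exE.hyps(3,4)])
next
  case (eqI t \<Gamma>) show ?case by (rule nd.eqI[OF eqI.hyps])
next
  case (eqE \<Gamma> s t x F) show ?case by (rule nd.eqE[OF eqE.IH eqE.hyps(3-6)])
next
  case (omega F x \<Gamma>) then show ?case using assms(2) by simp
qed

lemma fin_cut:
  "finite B' \<Longrightarrow> (\<And>F. nd om Ax B' F \<Longrightarrow> (\<forall>b\<in>B'. nd om Ax {} b \<and> wf b) \<Longrightarrow> nd om Ax {} F)"
proof (induction B' rule: finite_induct)
  case empty then show ?case by simp
next
  case (insert b B')
  have w: "wf b" using insert.prems(2) by simp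
  have d: "nd om Ax {} b" using insert.prems(2) by simp
  have "nd om Ax B' (Imp b F)" by (rule nd.impI[OF insert.prems(1) w])
  then have "nd om Ax {} (Imp b F)" by (rule insert.IH) (use insert.prems(2) in blast)
  then show ?case by (rule nd.impE[OF _ d])
qed

theorem lemma8:
  assumes "sentence F" and "HT_sharp F"
  shows "HT_sharp2_omega_from D0 F"
proof -
  let ?A = "HTax \<union> Std \<union> Ind \<union> D0"
  let ?A2 = "HTax \<union> Std \<union> Defs_ax \<union> D0"
  have c: "closedS D1" using D1_closed by (auto simp: closedS_def)
  have h: "nd False (?A \<union> D1) {} F" using assms(2) unfolding HT_sharp_def .
  obtain B' where B': "B' \<subseteq> D1" "finite B'" "nd False ?A ({} \<union> B') F"
    using nd_extract[OF h _ refl c] by (metis sup_bot_left)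
  have h2: "nd False ?A B' F" using B'(3) by simp
  have i: "\<And>i \<Delta>. i \<in> Ind \<Longrightarrow> nd True ?A2 \<Delta> i"
    by (rule ind_deriv) auto
  have "nd True ?A2 B' F"
    by (rule nd_transl[OF h2 _ _ i]) auto
  moreover have "\<forall>b\<in>B'. nd True ?A2 {} b \<and> wf b"
    using B'(1) D1_closed D1_deriv by blast
  ultimately have "nd True ?A2 {} F"
    by (rule fin_cut[OF B'(2)])
  then show ?thesis unfolding HT_sharp2_omega_from_def .
qed


end
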